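(* Every oriented twisted link can be represented by a twisted braid whose closure is equivalent (isotopic) to the original link. That is, for every oriented twisted link diagram $D$ there exist $n\ge 1$ and a twisted braid diagram $\beta$ on $n$ strands such that the closure $\widehat{\beta}$ is equivalent to $D$ under planar isotopy and extended Reidemeister moves.
   Context: A twisted link diagram is a generic immersion of finitely many (oriented) circles in the plane whose double points are either classical crossings (with over/under information) or virtual crossings (drawn encircled, with no over/under information), and which may in addition carry finitely many bars, i.e. short segments drawn transversally across the curve at points that are not crossings. Two twisted link diagrams are equivalent (isotopic), i.e. represent the same twisted link, if they are related by planar isotopy and a finite sequence of extended Reidemeister moves: the classical Reidemeister moves R1, R2, R3; the virtual moves V1, V2, V3 (the analogues of R1, R2, R3 in which all crossings are virtual) and V4 (an arc containing only virtual crossings passes across a classical crossing); and the twisted moves T1 (a bar slides along an arc through a virtual crossing), T2 (two adjacent bars on the same arc cancel) and T3 (a classical crossing with one bar on each of its four incident arcs, near the crossing, is replaced by the configuration in which the two strands cross virtually, then classically, then virtually again, the strand that was over in the original crossing now being under; in braid notation below, $b_ib_{i+1}\sigma_ib_{i+1}b_i$ is replaced by $v_i\sigma_iv_i$). A twisted braid on $n$ strands is a braid diagram on $n$ strands, monotone (say, downward-oriented) between $n$ top points and $n$ bottom points, whose crossings may be classical or virtual and whose strands may carry bars. The closure of a twisted braid is the twisted link diagram obtained by joining each top endpoint to the corresponding bottom endpoint by simple arcs in the plane, introducing no new crossings or bars. *)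

theory Defs
  imports Main
begin

text \<open>
Combinatorial encoding of oriented twisted link diagrams in Morse (height-function)
position.  A diagram is read from top to bottom as a word of elementary pieces, each
acting on a horizontal row of points.  A row state is a list of booleans recording
the orientation of the strand through each point (True = pointing downward).

  Cap d i : a local maximum creating two new points at positions i, i+1
            (left one oriented d, right one oriented not d);
  Cup i   : a local minimum joining points i and i+1;
  X t i   : a classical crossing of the strands at positions i, i+1; if t then the
            strand entering from the top-left (position i) is the over strand;
  V i     : a virtual crossing of the strands at positions i, i+1;
  Bar i   : a bar on the strand at position i.
\<close>

datatype gen = Cap bool nat | Cup nat | X bool nat | V nat | Bar nat

fun step :: "bool list \<Rightarrow> gen \<Rightarrow> bool list option" where
  "step w (Cap d i) = (if i \<le> length w then Some (take i w @ [d, \<not> d] @ drop i w) else None)"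
| "step w (Cup i) = (if Suc i < length w \<and> w ! i \<noteq> w ! Suc i
                      then Some (take i w @ drop (Suc (Suc i)) w) else None)"
| "step w (X t i) = (if Suc i < length w
                      then Some (take i w @ [w ! Suc i, w ! i] @ drop (Suc (Suc i)) w) else None)"
| "step w (V i) = (if Suc i < length w
                      then Some (take i w @ [w ! Suc i, w ! i] @ drop (Suc (Suc i)) w) else None)"
| "step w (Bar i) = (if i < length w then Some w else None)"

fun run :: "bool list \<Rightarrow> gen list \<Rightarrow> bool list option" where
  "run w [] = Some w"
| "run w (g # gs) = (case step w g of None \<Rightarrow> None | Some w' \<Rightarrow> run w' gs)"

definition twisted_link_diagram :: "gen list \<Rightarrow> bool" where
  "twisted_link_diagram D \<longleftrightarrow> run [] D = Some []"

fun pos :: "gen \<Rightarrow> nat" where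
  "pos (Cap d i) = i" | "pos (Cup i) = i" | "pos (X t i) = i" | "pos (V i) = i" | "pos (Bar i) = i"

fun setpos :: "gen \<Rightarrow> nat \<Rightarrow> gen" where
  "setpos (Cap d i) j = Cap d j" | "setpos (Cup i) j = Cup j" | "setpos (X t i) j = X t j"
| "setpos (V i) j = V j" | "setpos (Bar i) j = Bar j"

fun top_ar :: "gen \<Rightarrow> nat" where
  "top_ar (Cap d i) = 0" | "top_ar (Cup i) = 2" | "top_ar (X t i) = 2" | "top_ar (V i) = 2"
| "top_ar (Bar i) = 1"

fun bot_ar :: "gen \<Rightarrow> nat" where
  "bot_ar (Cap d i) = 2" | "bot_ar (Cup i) = 0" | "bot_ar (X t i) = 2" | "bot_ar (V i) = 2"
| "bot_ar (Bar i) = 1"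

text \<open>Local moves: planar isotopy relations for Morse diagrams (interchange of distant
pieces, zigzag cancellation, sliding crossings and bars around extrema) and the extended
Reidemeister moves R1--R3, V1--V4, T1--T3.\<close>
inductive local_move :: "gen list \<Rightarrow> gen list \<Rightarrow> bool" where
  interchange: "pos g + top_ar g \<le> pos h \<Longrightarrow>
     local_move [g, setpos h (pos h + bot_ar g - top_ar g)] [h, g]"
| zig1: "local_move [Cap d (Suc i), Cup i] []"
| zig2: "local_move [Cap d i, Cup (Suc i)] []"
| pfX_cap: "local_move [Cap d i, X t (Suc i)] [Cap d (Suc i), X (\<not> t) i]"
| pfX_cup: "local_move [X t i, Cup (Suc i)] [X (\<not> t) (Suc i), Cup i]"
| pfV_cap: "local_move [Cap d i, V (Suc i)] [Cap d (Suc i), V i]"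
| pfV_cup: "local_move [V i, Cup (Suc i)] [V (Suc i), Cup i]"
| bar_cap: "local_move [Cap d i, Bar i] [Cap d i, Bar (Suc i)]"
| bar_cup: "local_move [Bar i, Cup i] [Bar (Suc i), Cup i]"
| R1a: "local_move [Cap d (Suc i), X t i, Cup i] []"
| R1b: "local_move [Cap d i, X t (Suc i), Cup (Suc i)] []"
| R1c: "local_move [Cap d i, X t i, Cup (Suc i)] []"
| R1d: "local_move [Cap d (Suc i), X t (Suc i), Cup i] []"
| R2: "local_move [X t i, X (\<not> t) i] []"
| R3: "\<not> (ab \<and> bc \<and> \<not> ac) \<Longrightarrow> \<not> (\<not> ab \<and> \<not> bc \<and> ac) \<Longrightarrow>
     local_move [X ab i, X ac (Suc i), X bc i] [X bc (Suc i), X ac i, X ab (Suc i)]"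
| V1a: "local_move [Cap d (Suc i), V i, Cup i] []"
| V1b: "local_move [Cap d i, V (Suc i), Cup (Suc i)] []"
| V1c: "local_move [Cap d i, V i, Cup (Suc i)] []"
| V1d: "local_move [Cap d (Suc i), V (Suc i), Cup i] []"
| V2: "local_move [V i, V i] []"
| V3: "local_move [V i, V (Suc i), V i] [V (Suc i), V i, V (Suc i)]"
| V4a: "local_move [V i, V (Suc i), X t i] [X t (Suc i), V i, V (Suc i)]"
| V4b: "local_move [V (Suc i), V i, X t (Suc i)] [X t i, V (Suc i), V i]"
| T1a: "local_move [Bar i, V i] [V i, Bar (Suc i)]"
| T1b: "local_move [Bar (Suc i), V i] [V i, Bar i]"
| T2: "local_move [Bar i, Bar i] []"
| T3: "local_move [Bar i, Bar (Suc i), X t i, Bar i, Bar (Suc i)] [V i, X t i, V i]"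

definition move_step :: "gen list \<Rightarrow> gen list \<Rightarrow> bool" where
  "move_step D E \<longleftrightarrow> twisted_link_diagram D \<and> twisted_link_diagram E \<and>
     (\<exists>u v l r. local_move l r \<and> D = u @ l @ v \<and> E = u @ r @ v)"

definition twisted_equiv :: "gen list \<Rightarrow> gen list \<Rightarrow> bool" where
  "twisted_equiv = (\<lambda>D E. move_step D E \<or> move_step E D)\<^sup>*\<^sup>*"

text \<open>Twisted braids on n strands (all strands oriented downward).\<close>
datatype bgen = BX bool nat | BV nat | BB nat

fun bgen_ok :: "nat \<Rightarrow> bgen \<Rightarrow> bool" where
  "bgen_ok n (BX t i) = (Suc i < n)" | "bgen_ok n (BV i) = (Suc i < n)" | "bgen_ok n (BB i) = (i < n)"

definition twisted_braid :: "nat \<Rightarrow> bgen list \<Rightarrow> bool" where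
  "twisted_braid n \<beta> \<longleftrightarrow> (\<forall>g \<in> set \<beta>. bgen_ok n g)"

fun bgen_to_gen :: "bgen \<Rightarrow> gen" where
  "bgen_to_gen (BX t i) = X t i" | "bgen_to_gen (BV i) = V i" | "bgen_to_gen (BB i) = Bar i"

text \<open>Closure: nested caps to the right, then the braid, then nested cups; top endpoint k
is joined to bottom endpoint k by an arc running to the right of the braid.\<close>
definition braid_closure :: "nat \<Rightarrow> bgen list \<Rightarrow> gen list" where
  "braid_closure n \<beta> = map (\<lambda>k. Cap True k) [0..<n] @ map bgen_to_gen \<beta> @ map Cup (rev [0..<n])"

end

theory Submission
  imports Defs
begin

lemma run_append: "run w (a @ b) = (case run w a of None \<Rightarrow> None | Some x \<Rightarrow> run x b)"
  by (induction a arbitrary: w) (auto split: option.splits)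

lemma run_append_Some: "run w a = Some x \<Longrightarrow> run w (a @ b) = run x b"
  by (simp add: run_append)

inductive E1 :: "bool list \<Rightarrow> gen list \<Rightarrow> gen list \<Rightarrow> bool" where
  E1I: "run w a = Some x \<Longrightarrow> local_move l r \<or> local_move r l \<Longrightarrow> run x l = Some y \<Longrightarrow> run x r = Some y
    \<Longrightarrow> E1 w (a @ l @ b) (a @ r @ b)"

definition E :: "bool list \<Rightarrow> gen list \<Rightarrow> gen list \<Rightarrow> bool" where
  "E w = (E1 w)\<^sup>*\<^sup>*"

lemma E_refl[simp]: "E w u u" by (simp add: E_def)

lemma E1_sym: "E1 w u v \<Longrightarrow> E1 w v u"
  by (induction rule: E1.induct) (metis E1I)

lemma E_sym: "E w u v \<Longrightarrow> E w v u"
  unfolding E_def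
  by (induction rule: rtranclp_induct) (auto intro: converse_rtranclp_into_rtranclp E1_sym)

lemma E_trans[trans]: "E w u v \<Longrightarrow> E w v z \<Longrightarrow> E w u z"
  unfolding E_def by simp

lemma E1_run: "E1 w u v \<Longrightarrow> run w u = run w v"
  by (induction rule: E1.induct) (simp add: run_append)

lemma E_run: "E w u v \<Longrightarrow> run w u = run w v"
  unfolding E_def by (induction rule: rtranclp_induct) (auto dest: E1_run)

lemma E1_cong: "E1 x u v \<Longrightarrow> run w a = Some x \<Longrightarrow> E1 w (a @ u @ b) (a @ v @ b)"
proof (induction rule: E1.induct)
  case (E1I x' c z l r y d)
  have "run w (a @ c) = Some z" using E1I by (simp add: run_append)
  then have "E1 w ((a @ c) @ l @ (d @ b)) ((a @ c) @ r @ (d @ b))"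
    using E1I by (intro E1.E1I) auto
  then show ?case by simp
qed

lemma E_cong: "E x u v \<Longrightarrow> run w a = Some x \<Longrightarrow> E w (a @ u @ b) (a @ v @ b)"
  unfolding E_def
proof (induction rule: rtranclp_induct)
  case (step y z)
  then show ?case by (meson E1_cong rtranclp.simps)
qed simp

lemma E_cong_left: "E x u v \<Longrightarrow> run w a = Some x \<Longrightarrow> E w (a @ u) (a @ v)"
  using E_cong[of x u v w a "[]"] by simp

lemma E_cong_right: "E w u v \<Longrightarrow> E w (u @ b) (v @ b)"
  using E_cong[of w u v w "[]" b] by simp

lemma E_move: "local_move l r \<or> local_move r l \<Longrightarrow> run x l = Some y \<Longrightarrow> run x r = Some y \<Longrightarrow> E x l r"
  unfolding E_def using E1I[of x "[]" x l r y "[]"] by auto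

lemma E_to_twisted: "E [] u v \<Longrightarrow> run [] u = Some [] \<Longrightarrow> twisted_equiv u v"
  unfolding E_def twisted_equiv_def
proof (induction rule: rtranclp_induct)
  case base
  then show ?case by simp
next
  case (step y z)
  have ry: "run [] y = Some []" using step E_run[of "[]" u y] by (simp add: E_def)
  from step(2) have "move_step y z \<or> move_step z y"
  proof cases
    case (E1I a x l r y' b)
    have rz: "run [] z = Some []" using E1_run[OF step(2)] ry by simp
    show ?thesis using E1I ry rz unfolding move_step_def twisted_link_diagram_def by blast
  qed
  then show ?case using step by (simp add: rtranclp.rtrancl_into_rtrancl)
qed

fun okg :: "gen \<Rightarrow> bool list \<Rightarrow> bool" where
  "okg (Cup i) s = (s ! 0 \<noteq> s ! 1)" | "okg _ s = True"

fun outg :: "gen \<Rightarrow> bool list \<Rightarrow> bool list" where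
  "outg (Cap d i) s = [d, \<not> d]" | "outg (Cup i) s = []" | "outg (X t i) s = [s ! 1, s ! 0]"
| "outg (V i) s = [s ! 1, s ! 0]" | "outg (Bar i) s = s"

lemma length_outg: "length s = top_ar g \<Longrightarrow> length (outg g s) = bot_ar g"
  by (cases g) auto

lemma step_app: "length A = pos g \<Longrightarrow> length S = top_ar g \<Longrightarrow>
  step (A @ S @ B) g = (if okg g S then Some (A @ outg g S @ B) else None)"
proof (cases g)
  case (Cup i)
  assume "length A = pos g" "length S = top_ar g"
  then obtain a b where "S = [a, b]" using Cup
    by (cases S rule: list.exhaust; cases "tl S"; auto)
  then show ?thesis using Cup \<open>length A = pos g\<close> by (auto simp: nth_append)
next
  case (X t i)
  assume "length A = pos g" "length S = top_ar g"
  then obtain a b where "S = [a, b]" using X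
    by (cases S rule: list.exhaust; cases "tl S"; auto)
  then show ?thesis using X \<open>length A = pos g\<close> by (auto simp: nth_append)
next
  case (V i)
  assume "length A = pos g" "length S = top_ar g"
  then obtain a b where "S = [a, b]" using V
    by (cases S rule: list.exhaust; cases "tl S"; auto)
  then show ?thesis using V \<open>length A = pos g\<close> by (auto simp: nth_append)
next
  case (Bar i)
  assume "length A = pos g" "length S = top_ar g"
  then obtain a where "S = [a]" using Bar
    by (cases S rule: list.exhaust; auto)
  then show ?thesis using Bar \<open>length A = pos g\<close> by (auto simp: nth_append)
next
  case (Cap d i)
  assume "length A = pos g" "length S = top_ar g"
  then show ?thesis using Cap by auto
qed

lemma step_short: "length w < pos g + top_ar g \<Longrightarrow> step w g = None"
  by (cases g) auto

lemma step_length: "step x g = Some y \<Longrightarrow> length y + top_ar g = length x + bot_ar g"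
  by (cases g) (auto split: if_splits)

lemma pos_setpos[simp]: "pos (setpos g j) = j" by (cases g) auto
lemma top_setpos[simp]: "top_ar (setpos g j) = top_ar g" by (cases g) auto
lemma bot_setpos[simp]: "bot_ar (setpos g j) = bot_ar g" by (cases g) auto
lemma okg_setpos[simp]: "okg (setpos g j) = okg g" by (cases g) (auto intro!: ext)
lemma outg_setpos[simp]: "outg (setpos g j) = outg g" by (cases g) (auto intro!: ext)
lemma setpos_setpos[simp]: "setpos (setpos g j) k = setpos g k" by (cases g) auto
lemma setpos_pos[simp]: "setpos g (pos g) = g" by (cases g) auto

lemma interchange_run:
  assumes "pos g + top_ar g \<le> pos h"
  shows "run x [g, setpos h (pos h + bot_ar g - top_ar g)] = run x [h, g]"
proof (cases "pos h + top_ar h \<le> length x")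
  case True
  define A where "A = take (pos g) x"
  define S where "S = take (top_ar g) (drop (pos g) x)"
  define M where "M = take (pos h - pos g - top_ar g) (drop (pos g + top_ar g) x)"
  define T where "T = take (top_ar h) (drop (pos h) x)"
  define C where "C = drop (pos h + top_ar h) x"
  have x: "x = A @ S @ M @ T @ C" unfolding A_def S_def M_def T_def C_def using assms True
    by (metis (no_types, lifting) add.commute append_take_drop_id diff_diff_left drop_drop le_add_diff_inverse le_trans)
  have lA: "length A = pos g" unfolding A_def using assms True by auto
  have lS: "length S = top_ar g" unfolding S_def using assms True by auto
  have lM: "length M = pos h - pos g - top_ar g" unfolding M_def using assms True by auto
  have lT: "length T = top_ar h" unfolding T_def using assms True by auto
  have 1: "step x h = (if okg h T then Some (A @ S @ M @ outg h T @ C) else None)"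
    using step_app[of "A @ S @ M" h T C] x lA lS lM lT assms by auto
  have 2: "step (A @ S @ M @ outg h T @ C) g = (if okg g S then Some (A @ outg g S @ M @ outg h T @ C) else None)"
    using step_app[of A g S] lA lS by auto
  have 3: "step x g = (if okg g S then Some (A @ outg g S @ M @ T @ C) else None)"
    using step_app[of A g S] lA lS x by auto
  have lo: "length (outg g S) = bot_ar g" using length_outg lS by auto
  have 4: "step (A @ outg g S @ M @ T @ C) (setpos h (pos h + bot_ar g - top_ar g))
     = (if okg h T then Some (A @ outg g S @ M @ outg h T @ C) else None)"
    using step_app[of "A @ outg g S @ M" "setpos h (pos h + bot_ar g - top_ar g)" T C] lA lo lM lT assms
    by auto
  show ?thesis using 1 2 3 4 by auto
next
  case False
  then have "step x h = None" by (simp add: step_short)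
  moreover have "step x g = None \<or> (\<exists>y. step x g = Some y \<and> length y + top_ar g = length x + bot_ar g)"
    using step_length by (cases "step x g") auto
  ultimately show ?thesis using False assms
    by (auto simp: step_short split: option.splits)
qed

lemma E_interchange:
  assumes "pos g + top_ar g \<le> pos h" "run x [h, g] = Some y"
  shows "E x [h, g] [g, setpos h (pos h + bot_ar g - top_ar g)]"
  using assms interchange_run[OF assms(1)] by (intro E_move) (auto intro: local_move.interchange)

lemma split1: "i < length x \<Longrightarrow> \<exists>A a B. x = A @ a # B \<and> length A = i"
  by (rule exI[of _ "take i x"], rule exI[of _ "x ! i"], rule exI[of _ "drop (Suc i) x"])
     (simp add: Cons_nth_drop_Suc)

lemma split2: "Suc i < length x \<Longrightarrow> \<exists>A a b B. x = A @ a # b # B \<and> length A = i"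
  by (rule exI[of _ "take i x"], rule exI[of _ "x ! i"], rule exI[of _ "x ! Suc i"], rule exI[of _ "drop (Suc (Suc i)) x"])
     (simp add: Cons_nth_drop_Suc)

lemma split3: "Suc (Suc i) < length x \<Longrightarrow> \<exists>A a b c B. x = A @ a # b # c # B \<and> length A = i"
  by (rule exI[of _ "take i x"], rule exI[of _ "x ! i"], rule exI[of _ "x ! Suc i"], rule exI[of _ "x ! Suc (Suc i)"],
      rule exI[of _ "drop (Suc (Suc (Suc i))) x"])
     (simp add: Cons_nth_drop_Suc)

lemma split0: "i \<le> length x \<Longrightarrow> \<exists>A B. x = A @ B \<and> length A = i"
  by (rule exI[of _ "take i x"], rule exI[of _ "drop i x"]) simp

definition shn :: "nat \<Rightarrow> gen \<Rightarrow> gen" where "shn n g = setpos g (pos g + n)"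

lemma shn_simps[simp]: "shn n (Cap d i) = Cap d (i + n)" "shn n (Cup i) = Cup (i + n)" "shn n (X t i) = X t (i + n)"
  "shn n (V i) = V (i + n)" "shn n (Bar i) = Bar (i + n)"
  by (auto simp: shn_def)

lemma step_shn: "length A = n \<Longrightarrow> step (A @ w) (shn n g) = map_option ((@) A) (step w g)"
  by (cases g) (auto simp: nth_append)

lemma run_shn: "length A = n \<Longrightarrow> run (A @ w) (map (shn n) u) = map_option ((@) A) (run w u)"
  by (induction u arbitrary: w) (auto simp: step_shn split: option.splits)

lemma pos_shn[simp]: "pos (shn n g) = pos g + n" by (simp add: shn_def)
lemma top_shn[simp]: "top_ar (shn n g) = top_ar g" by (simp add: shn_def)
lemma bot_shn[simp]: "bot_ar (shn n g) = bot_ar g" by (simp add: shn_def)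
lemma shn_setpos[simp]: "shn n (setpos g j) = setpos g (j + n)" by (simp add: shn_def)

lemma local_move_shn: "local_move l r \<Longrightarrow> local_move (map (shn n) l) (map (shn n) r)"
proof (induction rule: local_move.induct)
  case (interchange g h)
  have e: "pos h + bot_ar g - top_ar g + n = pos (shn n h) + bot_ar (shn n g) - top_ar (shn n g)"
    using interchange by simp
  have "local_move [shn n g, setpos (shn n h) (pos (shn n h) + bot_ar (shn n g) - top_ar (shn n g))] [shn n h, shn n g]"
    using interchange by (intro local_move.interchange) simp
  then show ?case by (simp only: list.map shn_setpos e) (simp add: shn_def)
next
  case (R3 ab bc ac i)
  then show ?case using local_move.R3[of ab bc ac "i + n"] by simp
qed (auto intro: local_move.intros)

lemma E1_shn: "E1 w u v \<Longrightarrow> length A = n \<Longrightarrow> E1 (A @ w) (map (shn n) u) (map (shn n) v)"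
proof (induction rule: E1.induct)
  case (E1I w a x l r y b)
  have "E1 (A @ w) (map (shn n) a @ map (shn n) l @ map (shn n) b) (map (shn n) a @ map (shn n) r @ map (shn n) b)"
    using E1I by (intro E1.E1I[where x = "A @ x" and y = "A @ y"]) (auto simp: run_shn local_move_shn)
  then show ?case by simp
qed

lemma E_shn: "E w u v \<Longrightarrow> length A = n \<Longrightarrow> E (A @ w) (map (shn n) u) (map (shn n) v)"
  unfolding E_def
proof (induction rule: rtranclp_induct)
  case (step y z)
  then show ?case by (meson E1_shn rtranclp.simps)
qed simp

lemma step_ext: "step w g = Some y \<Longrightarrow> step (w @ z) g = Some (y @ z)"
  by (cases g) (auto simp: nth_append split: if_splits)

lemma run_ext: "run w u = Some y \<Longrightarrow> run (w @ z) u = Some (y @ z)"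
  by (induction u arbitrary: w) (auto simp: step_ext split: option.splits)

lemma E1_ext: "E1 w u v \<Longrightarrow> E1 (w @ z) u v"
proof (induction rule: E1.induct)
  case (E1I w a x l r y b)
  then show ?case by (intro E1.E1I[where x = "x @ z" and y = "y @ z"]) (auto simp: run_ext)
qed

lemma E_ext: "E w u v \<Longrightarrow> E (w @ z) u v"
  unfolding E_def
proof (induction rule: rtranclp_induct)
  case (step y z')
  then show ?case by (meson E1_ext rtranclp.simps)
qed simp

lemma E_interchange':
  assumes "pos g + top_ar g \<le> pos h" "run x [h, g] \<noteq> None"
  shows "E x [h, g] [g, setpos h (pos h + bot_ar g - top_ar g)]"
  using assms E_interchange by blast

lemma E_interchange2:
  assumes "pos g + top_ar g \<le> pos h" "run x [g, setpos h (pos h + bot_ar g - top_ar g)] \<noteq> None"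
  shows "E x [g, setpos h (pos h + bot_ar g - top_ar g)] [h, g]"
  using assms E_interchange' E_sym interchange_run by metis

lemma E_V2: "Suc i < length x \<Longrightarrow> E x [V i, V i] []"
  by (drule split2) (auto intro!: E_move local_move.V2 simp: nth_append)

lemma E_V3: "Suc (Suc i) < length x \<Longrightarrow> E x [V i, V (Suc i), V i] [V (Suc i), V i, V (Suc i)]"
  by (drule split3) (auto intro!: E_move local_move.V3 simp: nth_append)

lemma E_V4a: "Suc (Suc i) < length x \<Longrightarrow> E x [V i, V (Suc i), X t i] [X t (Suc i), V i, V (Suc i)]"
  by (drule split3) (auto intro!: E_move local_move.V4a simp: nth_append)

lemma E_V4b: "Suc (Suc i) < length x \<Longrightarrow> E x [V (Suc i), V i, X t (Suc i)] [X t i, V (Suc i), V i]"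
  by (drule split3) (auto intro!: E_move local_move.V4b simp: nth_append)

lemma E_T1a: "Suc i < length x \<Longrightarrow> E x [Bar i, V i] [V i, Bar (Suc i)]"
  by (drule split2) (auto intro!: E_move local_move.T1a simp: nth_append)

lemma E_T1b: "Suc i < length x \<Longrightarrow> E x [Bar (Suc i), V i] [V i, Bar i]"
  by (drule split2) (auto intro!: E_move local_move.T1b simp: nth_append)

lemma E_pfVcap: "i < length x \<Longrightarrow> E x [Cap d i, V (Suc i)] [Cap d (Suc i), V i]"
  by (drule split1) (auto intro!: E_move local_move.pfV_cap simp: nth_append)

lemma E_pfXcap: "i < length x \<Longrightarrow> E x [Cap d i, X t (Suc i)] [Cap d (Suc i), X (\<not> t) i]"
  by (drule split1) (auto intro!: E_move local_move.pfX_cap simp: nth_append)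

lemma E_barcap: "i \<le> length x \<Longrightarrow> E x [Cap d i, Bar i] [Cap d i, Bar (Suc i)]"
  by (drule split0) (auto intro!: E_move local_move.bar_cap simp: nth_append)

lemma E_pfVcup: "run x [V i, Cup (Suc i)] \<noteq> None \<Longrightarrow> E x [V i, Cup (Suc i)] [V (Suc i), Cup i]"
  apply (cases "Suc (Suc i) < length x")
   apply (drule split3) apply (auto intro!: E_move local_move.pfV_cup simp: nth_append split: if_splits)
  done

lemma E_zig1: "i < length x \<Longrightarrow> x ! i \<noteq> d \<Longrightarrow> E x [Cap d (Suc i), Cup i] []"
  by (drule split1) (auto intro!: E_move local_move.zig1 simp: nth_append)

lemma E_zig2: "i < length x \<Longrightarrow> x ! i = d \<Longrightarrow> E x [Cap d i, Cup (Suc i)] []"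
  by (drule split1) (auto intro!: E_move local_move.zig2 simp: nth_append)

lemma E_V1c: "i < length x \<Longrightarrow> x ! i \<noteq> d \<Longrightarrow> E x [Cap d i, V i, Cup (Suc i)] []"
  by (drule split1) (auto intro!: E_move local_move.V1c simp: nth_append)

lemma E_V1a: "i < length x \<Longrightarrow> x ! i \<noteq> d \<Longrightarrow> E x [Cap d (Suc i), V i, Cup i] []"
  by (drule split1) (auto intro!: E_move local_move.V1a simp: nth_append)

lemma E_twcap:
  assumes "i \<le> length x"
  shows "E x [Cap (\<not> d) i] [Cap d i, V i]"
proof -
  obtain A B where x: "x = A @ B" "length A = i" using split0[OF assms] by blast
  have "E x [Cap (\<not> d) i] [Cap (\<not> d) i, Cap d i, V i, Cup (Suc i)]"
    using E_cong[OF E_sym[OF E_V1c[of i "A @ [\<not> d, d] @ B" d]], of x "[Cap (\<not> d) i]" "[]"] x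
    by (simp add: nth_append)
  also have "E x [Cap (\<not> d) i, Cap d i, V i, Cup (Suc i)] [Cap d i, Cap (\<not> d) (Suc (Suc i)), V i, Cup (Suc i)]"
    using E_cong[OF E_interchange'[of "Cap d i" "Cap (\<not> d) i" x], of x "[]" "[V i, Cup (Suc i)]"] x
    by (simp add: nth_append)
  also have "E x [Cap d i, Cap (\<not> d) (Suc (Suc i)), V i, Cup (Suc i)] [Cap d i, V i, Cap (\<not> d) (Suc (Suc i)), Cup (Suc i)]"
    using E_cong[OF E_interchange'[of "V i" "Cap (\<not> d) (Suc (Suc i))" "A @ [d, \<not> d] @ B"], of x "[Cap d i]" "[Cup (Suc i)]"] x
    by (simp add: nth_append)
  also have "E x [Cap d i, V i, Cap (\<not> d) (Suc (Suc i)), Cup (Suc i)] [Cap d i, V i]"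
    using E_cong[OF E_zig1[of "Suc i" "A @ [\<not> d, d] @ B" "\<not> d"], of x "[Cap d i, V i]" "[]"] x
    by (simp add: nth_append)
  finally show ?thesis .
qed

lemma E_twcup:
  assumes "run x [Cup i] \<noteq> None"
  shows "E x [Cup i] [V i, Cup i]"
proof -
  have "Suc i < length x" using assms by (auto split: if_splits)
  then obtain A a b B where x: "x = A @ a # b # B" "length A = i" using split2 by blast
  have ab: "a \<noteq> b" using assms x by (auto simp: nth_append split: if_splits)
  have "E x [Cup i] [Cap (\<not> a) (Suc i), V i, Cup i, Cup i]"
    using E_cong[OF E_sym[OF E_V1a[of i x "\<not> a"]], of x "[]" "[Cup i]"] x
    by (simp add: nth_append)
  also have "E x [Cap (\<not> a) (Suc i), V i, Cup i, Cup i] [Cap (\<not> a) (Suc i), V i, Cup (Suc (Suc i)), Cup i]"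
    using E_cong[OF E_interchange2[of "Cup i" "Cup (Suc (Suc i))" "A @ (\<not> a) # a # a # b # B"], of x "[Cap (\<not> a) (Suc i), V i]" "[]"] x ab
    by (simp add: nth_append)
  also have "E x [Cap (\<not> a) (Suc i), V i, Cup (Suc (Suc i)), Cup i] [Cap (\<not> a) (Suc i), Cup (Suc (Suc i)), V i, Cup i]"
    using E_cong[OF E_interchange2[of "V i" "Cup (Suc (Suc i))" "A @ a # (\<not> a) # a # b # B"], of x "[Cap (\<not> a) (Suc i)]" "[Cup i]"] x ab
    by (simp add: nth_append)
  also have "E x [Cap (\<not> a) (Suc i), Cup (Suc (Suc i)), V i, Cup i] [V i, Cup i]"
    using E_cong[OF E_zig2[of "Suc i" x "\<not> a"], of x "[]" "[V i, Cup i]"] x ab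
    by (simp add: nth_append)
  finally show ?thesis .
qed

definition Vs :: "nat list \<Rightarrow> gen list" where "Vs u = map V u"
definition valid :: "nat \<Rightarrow> nat list \<Rightarrow> bool" where "valid N u \<longleftrightarrow> (\<forall>i\<in>set u. Suc i < N)"

lemma Vs_simps[simp]: "Vs [] = []" "Vs (i # u) = V i # Vs u" "Vs (u @ v) = Vs u @ Vs v"
  by (auto simp: Vs_def)

lemma valid_simps[simp]: "valid N []" "valid N (i # u) \<longleftrightarrow> Suc i < N \<and> valid N u"
  "valid N (u @ v) \<longleftrightarrow> valid N u \<and> valid N v"
  by (auto simp: valid_def)

lemma valid_mono: "valid N u \<Longrightarrow> N \<le> M \<Longrightarrow> valid M u"
  by (auto simp: valid_def)

lemma valid_upt: "valid N [a..<b] \<longleftrightarrow> (a < b \<longrightarrow> b < N)"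
  apply (auto simp: valid_def) apply (drule bspec[of _ _ "b - 1"]) apply auto done

definition swp :: "nat \<Rightarrow> 'a list \<Rightarrow> 'a list" where
  "swp i w = take i w @ [w ! Suc i, w ! i] @ drop (Suc (Suc i)) w"

fun vapply :: "nat list \<Rightarrow> 'a list \<Rightarrow> 'a list" where
  "vapply [] w = w" | "vapply (i # u) w = vapply u (swp i w)"

lemma length_swp[simp]: "Suc i < length w \<Longrightarrow> length (swp i w) = length w"
  by (simp add: swp_def)

lemma length_vapply[simp]: "valid (length w) u \<Longrightarrow> length (vapply u w) = length w"
  by (induction u arbitrary: w) auto

lemma vapply_append: "vapply (u @ v) w = vapply v (vapply u w)"
  by (induction u arbitrary: w) auto

lemma step_V_swp: "Suc i < length w \<Longrightarrow> step w (V i) = Some (swp i w)"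
  by (simp add: swp_def)

lemma run_Vs: "valid (length w) u \<Longrightarrow> run w (Vs u) = Some (vapply u w)"
  by (induction u arbitrary: w) (auto simp: step_V_swp simp del: step.simps)

lemma swp_app: "length A = i \<Longrightarrow> swp i (A @ a # b # B) = A @ b # a # B"
  by (simp add: swp_def nth_append)

lemma swp_map: "Suc i < length w \<Longrightarrow> swp i (map f w) = map f (swp i w)"
  by (simp add: swp_def take_map drop_map)

lemma vapply_map: "valid (length w) u \<Longrightarrow> vapply u (map f w) = map f (vapply u w)"
  by (induction u arbitrary: w) (auto simp: swp_map)

lemma swp_prefix: "Suc i < length A \<Longrightarrow> swp i (A @ B) = swp i A @ B"
  by (simp add: swp_def nth_append)

lemma vapply_prefix: "valid (length A) u \<Longrightarrow> vapply u (A @ B) = vapply u A @ B"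
  by (induction u arbitrary: A) (auto simp: swp_prefix)

lemma swp_shift: "length A = n \<Longrightarrow> Suc i < length B \<Longrightarrow> swp (n + i) (A @ B) = A @ swp i B"
  by (simp add: swp_def nth_append)

lemma vapply_shift: "length A = n \<Longrightarrow> valid (length B) u \<Longrightarrow> vapply (map ((+) n) u) (A @ B) = A @ vapply u B"
  by (induction u arbitrary: B) (auto simp: swp_shift)

lemma set_swp: "Suc i < length w \<Longrightarrow> set (swp i w) = set w \<and> (distinct (swp i w) = distinct w)"
proof -
  assume "Suc i < length w"
  then obtain A a b B where "w = A @ a # b # B" "length A = i" using split2 by blast
  then show ?thesis by (auto simp: swp_app)
qed

lemma set_vapply: "valid (length w) u \<Longrightarrow> set (vapply u w) = set w \<and> (distinct (vapply u w) = distinct w)"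
  by (induction u arbitrary: w) (auto simp: set_swp)

inductive vstep :: "nat \<Rightarrow> nat list \<Rightarrow> nat list \<Rightarrow> bool" for N where
  vV2a: "Suc i < N \<Longrightarrow> vstep N (a @ [i, i] @ b) (a @ b)"
| vV2b: "Suc i < N \<Longrightarrow> vstep N (a @ b) (a @ [i, i] @ b)"
| vV3a: "Suc (Suc i) < N \<Longrightarrow> vstep N (a @ [i, Suc i, i] @ b) (a @ [Suc i, i, Suc i] @ b)"
| vV3b: "Suc (Suc i) < N \<Longrightarrow> vstep N (a @ [Suc i, i, Suc i] @ b) (a @ [i, Suc i, i] @ b)"
| vC: "Suc i < N \<Longrightarrow> Suc j < N \<Longrightarrow> Suc (Suc i) \<le> j \<or> Suc (Suc j) \<le> i \<Longrightarrow> vstep N (a @ [i, j] @ b) (a @ [j, i] @ b)"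

definition VE :: "nat \<Rightarrow> nat list \<Rightarrow> nat list \<Rightarrow> bool" where "VE N = (vstep N)\<^sup>*\<^sup>*"

lemma VE_refl[simp]: "VE N u u" by (simp add: VE_def)
lemma VE_trans[trans]: "VE N u v \<Longrightarrow> VE N v w \<Longrightarrow> VE N u w" by (simp add: VE_def)

lemma vstep_sym: "vstep N u v \<Longrightarrow> vstep N v u"
proof (induction rule: vstep.induct)
  case (vC i j a b)
  then show ?case using vstep.vC[of j N i a b] by auto
next
  case (vV2a i a b) then show ?case using vstep.vV2b[of i N a b] by simp
next
  case (vV2b i a b) then show ?case using vstep.vV2a[of i N a b] by simp
next
  case (vV3a i a b) then show ?case using vstep.vV3b[of i N a b] by simp
next
  case (vV3b i a b) then show ?case using vstep.vV3a[of i N a b] by simp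
qed

lemma VE_sym: "VE N u v \<Longrightarrow> VE N v u"
  unfolding VE_def
  by (induction rule: rtranclp_induct) (auto intro: converse_rtranclp_into_rtranclp vstep_sym)

lemma vstep_cong: "vstep N u v \<Longrightarrow> vstep N (c @ u @ d) (c @ v @ d)"
proof (induction rule: vstep.induct)
  case (vV2a i a b) then show ?case using vstep.vV2a[of i N "c @ a" "b @ d"] by simp
next
  case (vV2b i a b) then show ?case using vstep.vV2b[of i N "c @ a" "b @ d"] by simp
next
  case (vV3a i a b) then show ?case using vstep.vV3a[of i N "c @ a" "b @ d"] by simp
next
  case (vV3b i a b) then show ?case using vstep.vV3b[of i N "c @ a" "b @ d"] by simp
next
  case (vC i j a b) then show ?case using vstep.vC[of i N j "c @ a" "b @ d"] by simp
qed

lemma VE_cong: "VE N u v \<Longrightarrow> VE N (c @ u @ d) (c @ v @ d)"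
  unfolding VE_def
proof (induction rule: rtranclp_induct)
  case (step y z) then show ?case by (meson vstep_cong rtranclp.simps)
qed simp

lemma VE_cong_left: "VE N u v \<Longrightarrow> VE N (c @ u) (c @ v)"
  using VE_cong[of N u v c "[]"] by simp
lemma VE_cong_right: "VE N u v \<Longrightarrow> VE N (u @ d) (v @ d)"
  using VE_cong[of N u v "[]" d] by simp

lemmas vstep_intros' = vstep.intros[simplified]

lemma vstep_mono: "vstep N u v \<Longrightarrow> N \<le> M \<Longrightarrow> vstep M u v"
  by (induction rule: vstep.induct) (auto intro: vstep_intros')

lemma VE_mono: "VE N u v \<Longrightarrow> N \<le> M \<Longrightarrow> VE M u v"
  unfolding VE_def
proof (induction rule: rtranclp_induct)
  case (step y z) then show ?case by (meson vstep_mono rtranclp.simps)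
qed simp

lemma vstep_valid: "vstep N u v \<Longrightarrow> valid N u \<Longrightarrow> valid N v"
  by (induction rule: vstep.induct) auto

lemma VE_valid: "VE N u v \<Longrightarrow> valid N u \<Longrightarrow> valid N v"
  unfolding VE_def by (induction rule: rtranclp_induct) (auto dest: vstep_valid)

lemma vstep_E: "vstep N u v \<Longrightarrow> valid N u \<Longrightarrow> length x = N \<Longrightarrow> E x (Vs u) (Vs v)"
proof (induction rule: vstep.induct)
  case (vV2a i a b)
  have r: "run x (Vs a) = Some (vapply a x)" using vV2a by (simp add: run_Vs)
  have "E (vapply a x) [V i, V i] []" using vV2a by (intro E_V2) auto
  from E_cong[OF this r, of "Vs b"] show ?case by simp
next
  case (vV2b i a b)
  have r: "run x (Vs a) = Some (vapply a x)" using vV2b by (simp add: run_Vs)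
  have "E (vapply a x) [] [V i, V i]" using vV2b by (intro E_sym[OF E_V2]) auto
  from E_cong[OF this r, of "Vs b"] show ?case by simp
next
  case (vV3a i a b)
  have r: "run x (Vs a) = Some (vapply a x)" using vV3a by (simp add: run_Vs)
  have "E (vapply a x) [V i, V (Suc i), V i] [V (Suc i), V i, V (Suc i)]" using vV3a by (intro E_V3) auto
  from E_cong[OF this r, of "Vs b"] show ?case by simp
next
  case (vV3b i a b)
  have r: "run x (Vs a) = Some (vapply a x)" using vV3b by (simp add: run_Vs)
  have "E (vapply a x) [V (Suc i), V i, V (Suc i)] [V i, V (Suc i), V i]" using vV3b by (intro E_sym[OF E_V3]) auto
  from E_cong[OF this r, of "Vs b"] show ?case by simp
next
  case (vC i j a b)
  have r: "run x (Vs a) = Some (vapply a x)" using vC by (simp add: run_Vs)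
  have lx: "length (vapply a x) = N" using vC by simp
  have "E (vapply a x) [V i, V j] [V j, V i]"
  proof (cases "Suc (Suc i) \<le> j")
    case True
    have "E (vapply a x) [V i, setpos (V j) (pos (V j) + bot_ar (V i) - top_ar (V i))] [V j, V i]"
      using True vC lx by (intro E_interchange2) (auto simp: swp_def)
    then show ?thesis by simp
  next
    case False
    then have "Suc (Suc j) \<le> i" using vC by auto
    then have "E (vapply a x) [V i, V j] [V j, setpos (V i) (pos (V i) + bot_ar (V j) - top_ar (V j))]"
      using vC lx by (intro E_interchange') (auto simp: swp_def)
    then show ?thesis by simp
  qed
  from E_cong[OF this r, of "Vs b"] show ?case by simp
qed

lemma VE_E: "VE N u v \<Longrightarrow> valid N u \<Longrightarrow> length x = N \<Longrightarrow> E x (Vs u) (Vs v)"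
  unfolding VE_def
proof (induction rule: rtranclp_induct)
  case (step y z)
  have "valid N y" using step VE_valid[of N u y] by (simp add: VE_def)
  then show ?case using step vstep_E E_trans by blast
qed simp

lemma vapply_V2: "Suc i < length y \<Longrightarrow> vapply [i, i] y = y"
  by (drule split2) (auto simp: swp_app)

lemma vapply_V3: "Suc (Suc i) < length y \<Longrightarrow> vapply [i, Suc i, i] y = vapply [Suc i, i, Suc i] y"
proof -
  assume "Suc (Suc i) < length y"
  then obtain A a b c B where "y = A @ a # b # c # B" "length A = i" using split3 by blast
  then show ?thesis using swp_app[of "A @ [_]" "Suc i"] swp_app[of A i] by simp
qed

lemma vapply_C: "Suc i < length y \<Longrightarrow> Suc j < length y \<Longrightarrow> Suc (Suc i) \<le> j \<Longrightarrow> vapply [i, j] y = vapply [j, i] y"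
proof -
  assume a: "Suc i < length y" "Suc j < length y" "Suc (Suc i) \<le> j"
  then obtain A p q B where y: "y = A @ p # q # B" "length A = i" using split2 by blast
  then have "Suc (j - Suc (Suc i)) < length B" using a by auto
  then obtain C r s D where B: "B = C @ r # s # D" "length C = j - Suc (Suc i)" using split2 by blast
  have y2: "y = (A @ p # q # C) @ r # s # D" "length (A @ p # q # C) = j" using y B a by auto
  have 1: "swp j (A @ p # q # C @ r # s # D) = (A @ p # q # C) @ s # r # D" using swp_app[of "A @ p # q # C" j] y2 by simp
  have 2: "swp j (A @ q # p # C @ r # s # D) = (A @ q # p # C) @ s # r # D" using swp_app[of "A @ q # p # C" j] y2 by simp
  show ?thesis using y B 1 2 swp_app[of A i] by simp
qed

lemma vstep_vapply: "vstep N u v \<Longrightarrow> valid N u \<Longrightarrow> length x = N \<Longrightarrow> vapply u x = vapply v x"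
proof (induction rule: vstep.induct)
  case (vV2a i a b) then show ?case using vapply_V2[of i "vapply a x"] by (simp add: vapply_append)
next
  case (vV2b i a b) then show ?case using vapply_V2[of i "vapply a x"] by (simp add: vapply_append)
next
  case (vV3a i a b) then show ?case using vapply_V3[of i "vapply a x"] by (simp add: vapply_append)
next
  case (vV3b i a b) then show ?case using vapply_V3[of i "vapply a x"] by (simp add: vapply_append)
next
  case (vC i j a b) then show ?case using vapply_C[of i "vapply a x" j] vapply_C[of j "vapply a x" i]
    by (auto simp: vapply_append)
qed

lemma VE_vapply: "VE N u v \<Longrightarrow> valid N u \<Longrightarrow> length x = N \<Longrightarrow> vapply u x = vapply v x"
  unfolding VE_def
proof (induction rule: rtranclp_induct)
  case (step y z)
  have "valid N y" using step VE_valid[of N u y] by (simp add: VE_def)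
  then show ?case using step vstep_vapply by metis
qed simp

definition far :: "nat \<Rightarrow> nat \<Rightarrow> bool" where "far p q \<longleftrightarrow> Suc (Suc q) \<le> p \<or> Suc (Suc p) \<le> q"

lemma VE_comm1: "Suc j < N \<Longrightarrow> valid N P \<Longrightarrow> (\<forall>p\<in>set P. far p j) \<Longrightarrow> VE N (j # P) (P @ [j])"
proof (induction P)
  case (Cons p P)
  have "vstep N ([] @ [j, p] @ P) ([] @ [p, j] @ P)"
    using Cons by (intro vstep.vC) (auto simp: far_def)
  then have "VE N (j # p # P) (p # j # P)" by (simp add: VE_def)
  also have "VE N (p # j # P) (p # P @ [j])" using Cons VE_cong_left[of N "j # P" "P @ [j]" "[p]"] by simp
  finally show ?case by simp
qed simp

lemma VE_comm: "valid N P \<Longrightarrow> valid N Q \<Longrightarrow> (\<forall>p\<in>set P. \<forall>q\<in>set Q. far p q) \<Longrightarrow> VE N (Q @ P) (P @ Q)"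
proof (induction Q)
  case (Cons q Q)
  have "VE N (q # Q @ P) (q # P @ Q)" using Cons VE_cong_left[of N "Q @ P" "P @ Q" "[q]"] by simp
  also have "VE N (q # P @ Q) (P @ [q] @ Q)" using Cons VE_cong_right[OF VE_comm1[of q N P], of Q] by simp
  finally show ?case by simp
qed simp

lemma VE_V2: "Suc i < N \<Longrightarrow> VE N (a @ [i, i] @ b) (a @ b)"
  by (simp add: VE_def vstep.vV2a r_into_rtranclp del: append.simps)

lemma VE_V3: "Suc (Suc i) < N \<Longrightarrow> VE N (a @ [i, Suc i, i] @ b) (a @ [Suc i, i, Suc i] @ b)"
  by (simp add: VE_def vstep.vV3a r_into_rtranclp del: append.simps)

lemma key_id: "b < L \<Longrightarrow> L < N \<Longrightarrow> VE N ([b..<L] @ [b..<L-1] @ [L-1]) ([Suc b..<L] @ [b..<L-1])"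
proof (induction "L - Suc b" arbitrary: b)
  case 0
  then have b: "b = L - 1" by auto
  have u: "[b..<L] = [b]" "[b..<L-1] = []" "[Suc b..<L] = []" using 0 b by (auto simp: upt_conv_Cons)
  have "VE N ([] @ [L-1, L-1] @ []) ([] @ [])" using 0 by (intro VE_V2) auto
  then show ?case using b 0 u by simp
next
  case (Suc d)
  have bL: "Suc b < L" using Suc by auto
  have u1: "[b..<L] = b # Suc b # [Suc (Suc b)..<L]" using bL by (simp add: upt_conv_Cons)
  have u2: "[b..<L-1] = b # [Suc b..<L-1]" using bL by (simp add: upt_conv_Cons)
  have u3: "[Suc b..<L] = Suc b # [Suc (Suc b)..<L]" using bL by (simp add: upt_conv_Cons)
  have c: "VE N ([Suc (Suc b)..<L] @ [b]) ([b] @ [Suc (Suc b)..<L])"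
    using Suc bL by (intro VE_comm) (auto simp: valid_upt far_def valid_def)
  have "VE N ([b..<L] @ [b..<L-1] @ [L-1]) ([b, Suc b] @ ([Suc (Suc b)..<L] @ [b]) @ ([Suc b..<L-1] @ [L-1]))"
    unfolding u1 u2 by simp
  also have "VE N ([b, Suc b] @ ([Suc (Suc b)..<L] @ [b]) @ ([Suc b..<L-1] @ [L-1])) ([b, Suc b] @ ([b] @ [Suc (Suc b)..<L]) @ ([Suc b..<L-1] @ [L-1]))"
    using VE_cong[OF c] by blast
  also have "VE N ([b, Suc b] @ ([b] @ [Suc (Suc b)..<L]) @ ([Suc b..<L-1] @ [L-1])) ([] @ [b, Suc b, b] @ ([Suc (Suc b)..<L] @ [Suc b..<L-1] @ [L-1]))"
    by simp
  also have "VE N ([] @ [b, Suc b, b] @ ([Suc (Suc b)..<L] @ [Suc b..<L-1] @ [L-1])) ([] @ [Suc b, b, Suc b] @ ([Suc (Suc b)..<L] @ [Suc b..<L-1] @ [L-1]))"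
    using bL Suc by (intro VE_V3) auto
  also have "VE N ([] @ [Suc b, b, Suc b] @ ([Suc (Suc b)..<L] @ [Suc b..<L-1] @ [L-1])) ([Suc b, b] @ ([Suc b..<L] @ [Suc b..<L-1] @ [L-1]))"
    unfolding u3 by simp
  also have "VE N ([Suc b, b] @ ([Suc b..<L] @ [Suc b..<L-1] @ [L-1])) ([Suc b, b] @ ([Suc (Suc b)..<L] @ [Suc b..<L-1]))"
    using Suc bL by (intro VE_cong_left Suc.hyps) auto
  also have "VE N ([Suc b, b] @ ([Suc (Suc b)..<L] @ [Suc b..<L-1])) ([Suc b] @ ([b] @ [Suc (Suc b)..<L]) @ [Suc b..<L-1])"
    by simp
  also have "VE N ([Suc b] @ ([b] @ [Suc (Suc b)..<L]) @ [Suc b..<L-1]) ([Suc b] @ ([Suc (Suc b)..<L] @ [b]) @ [Suc b..<L-1])"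
    using VE_cong[OF VE_sym[OF c]] by blast
  also have "VE N ([Suc b] @ ([Suc (Suc b)..<L] @ [b]) @ [Suc b..<L-1]) ([Suc b..<L] @ [b..<L-1])"
    unfolding u2 u3 by simp
  finally show ?case .
qed

lemma case1_id: "a \<le> b \<Longrightarrow> b < L \<Longrightarrow> L < N \<Longrightarrow>
  VE N ([a..<L] @ [b..<L-1] @ [L-1]) ([Suc b..<L] @ [a..<L-1])"
proof -
  assume h: "a \<le> b" "b < L" "L < N"
  have s1: "[a..<L] = [a..<b] @ [b..<L]" using h by (metis le_trans less_imp_le_nat upt_add_eq_append le_add_diff_inverse)
  have s2: "[a..<L-1] = [a..<b] @ [b..<L-1]" using h
    by (metis Suc_diff_1 bot_nat_0.not_eq_extremum le_trans less_Suc_eq_le less_nat_zero_code upt_add_eq_append le_add_diff_inverse)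
  have "VE N ([a..<L] @ [b..<L-1] @ [L-1]) ([a..<b] @ ([b..<L] @ [b..<L-1] @ [L-1]))" by (simp add: s1)
  also have "VE N ([a..<b] @ ([b..<L] @ [b..<L-1] @ [L-1])) ([a..<b] @ ([Suc b..<L] @ [b..<L-1]))"
    using h by (intro VE_cong_left key_id) auto
  also have "VE N ([a..<b] @ ([Suc b..<L] @ [b..<L-1])) (([a..<b] @ [Suc b..<L]) @ [b..<L-1])" by simp
  also have "VE N (([a..<b] @ [Suc b..<L]) @ [b..<L-1]) (([Suc b..<L] @ [a..<b]) @ [b..<L-1])"
    using h by (intro VE_cong_right VE_comm) (auto simp: valid_upt far_def)
  also have "VE N (([Suc b..<L] @ [a..<b]) @ [b..<L-1]) ([Suc b..<L] @ [a..<L-1])" unfolding s2 by simp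
  finally show ?thesis .
qed

lemma case2_id: "c < j \<Longrightarrow> j \<le> L \<Longrightarrow> L < N \<Longrightarrow>
  VE N ([j..<L] @ [c..<L-1] @ [L-1]) ([c..<L] @ [j-1..<L-1])"
proof -
  assume h: "c < j" "j \<le> L" "L < N"
  have "VE N ([c..<L] @ [j-1..<L-1] @ [L-1]) ([Suc (j-1)..<L] @ [c..<L-1])"
    using h by (intro case1_id) auto
  then have 1: "VE N ([c..<L] @ [j-1..<L-1] @ [L-1]) ([j..<L] @ [c..<L-1])" using h by simp
  have "VE N ([j..<L] @ [c..<L-1] @ [L-1]) (([c..<L] @ [j-1..<L-1] @ [L-1]) @ [L-1])"
    using VE_cong_right[OF VE_sym[OF 1], of "[L-1]"] by simp
  also have "VE N (([c..<L] @ [j-1..<L-1] @ [L-1]) @ [L-1]) ([c..<L] @ [j-1..<L-1])"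
    using h VE_V2[of "L-1" N "[c..<L] @ [j-1..<L-1]" "[]"] by simp
  finally show ?thesis by simp
qed

fun idx :: "'a \<Rightarrow> 'a list \<Rightarrow> nat" where
  "idx x [] = 0" | "idx x (a # xs) = (if a = x then 0 else Suc (idx x xs))"

lemma idx_app: "y \<notin> set A \<Longrightarrow> idx y (A @ y # B) = length A"
  by (induction A) auto

primrec canF :: "nat \<Rightarrow> 'a list \<Rightarrow> 'a list \<Rightarrow> nat list" where
  "canF 0 xs ys = []"
| "canF (Suc n) xs ys = [idx (last ys) xs..<n] @ canF n (remove1 (last ys) xs) (butlast ys)"

lemma move_end: "vapply [length A..<length A + length B] (A @ y # B) = A @ B @ [y]"
proof (induction B arbitrary: A)
  case (Cons b B)
  have "[length A..<length A + length (b # B)] = length A # [length (A @ [b])..<length (A @ [b]) + length B]"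
    by (simp add: upt_conv_Cons del: upt_Suc)
  then show ?case using Cons[of "A @ [b]"] by (simp add: swp_app)
qed simp

lemma distinct_split: "distinct xs \<Longrightarrow> y \<in> set xs \<Longrightarrow> \<exists>A B. xs = A @ y # B \<and> y \<notin> set A \<and> y \<notin> set B"
proof -
  assume a: "distinct xs" "y \<in> set xs"
  then obtain A B where "xs = A @ y # B" using split_list by metis
  then show ?thesis using a by auto
qed

lemma canF_P1: "length xs = N \<Longrightarrow> distinct xs \<Longrightarrow> distinct ys \<Longrightarrow> set ys = set xs \<Longrightarrow>
  vapply (canF N xs ys) xs = ys \<and> valid N (canF N xs ys)"
proof (induction N arbitrary: xs ys)
  case 0 then show ?case by simp
next
  case (Suc n)
  have ly: "length ys = Suc n" using Suc distinct_card[of ys] distinct_card[of xs] by simp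
  then have ne: "ys \<noteq> []" by auto
  define y where "y = last ys"
  have ys: "ys = butlast ys @ [y]" using ne unfolding y_def by simp
  have "y \<in> set xs" using Suc(5) ne unfolding y_def by (metis last_in_set)
  then obtain A B where xs: "xs = A @ y # B" "y \<notin> set A" "y \<notin> set B" using distinct_split Suc(3) by metis
  have rem: "remove1 y xs = A @ B" using xs by (simp add: remove1_append)
  have "distinct (butlast ys @ [y])" using Suc(4) ys by simp
  then have dys: "distinct (butlast ys)" "y \<notin> set (butlast ys)" by auto
  have "set (butlast ys @ [y]) = set (A @ y # B)" using Suc(5) xs ys by simp
  then have sb: "set (butlast ys) = set (A @ B)" using dys xs by auto
  have IH: "vapply (canF n (A @ B) (butlast ys)) (A @ B) = butlast ys \<and> valid n (canF n (A @ B) (butlast ys))"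
    using Suc xs dys sb by (intro Suc.IH) auto
  have ln: "n = length A + length B" using Suc xs by simp
  have c: "canF (Suc n) xs ys = [length A..<length A + length B] @ canF n (A @ B) (butlast ys)"
    using xs rem ln idx_app[of y A B] by (simp add: y_def[symmetric])
  have "vapply (canF (Suc n) xs ys) xs = vapply (canF n (A @ B) (butlast ys)) ((A @ B) @ [y])"
    using c xs by (simp add: vapply_append move_end)
  also have "\<dots> = butlast ys @ [y]" using IH ln vapply_prefix[of "A @ B" _ "[y]"] by simp
  finally have 1: "vapply (canF (Suc n) xs ys) xs = ys" using ys by simp
  have 2: "valid (Suc n) (canF (Suc n) xs ys)" using c IH ln by (auto simp: valid_upt intro: valid_mono)
  show ?case using 1 2 by simp
qed

lemma canF_id: "length xs = N \<Longrightarrow> distinct xs \<Longrightarrow> canF N xs xs = []"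
proof (induction N arbitrary: xs)
  case (Suc n)
  then have ne: "xs \<noteq> []" by auto
  define y where "y = last xs"
  have xs: "xs = butlast xs @ [y]" using ne unfolding y_def by simp
  have "distinct (butlast xs @ [y])" using Suc(3) xs by simp
  then have d: "y \<notin> set (butlast xs)" "distinct (butlast xs)" by auto
  have lb: "length (butlast xs) = n" using Suc by simp
  have "idx y xs = n" using idx_app[of y "butlast xs" "[]"] xs d lb by metis
  moreover have "remove1 y xs = butlast xs" using xs d by (metis remove1_append remove1.simps(2) append_Nil2 remove1_idem)
  ultimately show ?case using Suc d lb by (simp add: y_def[symmetric])
qed simp

lemma canF_split: "y \<notin> set A \<Longrightarrow> canF (Suc n) (A @ y # B) (ys @ [y]) = [length A..<n] @ canF n (A @ B) ys"
  by (simp add: idx_app remove1_append)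

declare canF.simps(2)[simp del]

lemma set_distinct_last: "distinct ys \<Longrightarrow> set ys = set xs \<Longrightarrow> distinct xs \<Longrightarrow> ys \<noteq> [] \<Longrightarrow>
   \<exists>A B ys'. ys = ys' @ [last ys] \<and> xs = A @ last ys # B \<and> last ys \<notin> set A \<and> last ys \<notin> set B
      \<and> distinct ys' \<and> set ys' = set (A @ B) \<and> distinct (A @ B) \<and> last ys \<notin> set ys'"
proof -
  assume a: "distinct ys" "set ys = set xs" "distinct xs" "ys \<noteq> []"
  define y where "y = last ys"
  have ys: "ys = butlast ys @ [y]" using a unfolding y_def by simp
  have "y \<in> set xs" using a unfolding y_def by (metis last_in_set)
  then obtain A B where xs: "xs = A @ y # B" "y \<notin> set A" "y \<notin> set B" using distinct_split a by metis
  have "distinct (butlast ys @ [y])" using a ys by simp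
  then have dys: "distinct (butlast ys)" "y \<notin> set (butlast ys)" by auto
  have "set (butlast ys @ [y]) = set (A @ y # B)" using a xs ys by simp
  then have sb: "set (butlast ys) = set (A @ B)" using dys xs by auto
  show ?thesis using ys xs dys sb a unfolding y_def[symmetric] by (intro exI[of _ A] exI[of _ B] exI[of _ "butlast ys"]) auto
qed

lemma split_unique: "x \<notin> set A \<Longrightarrow> x \<notin> set C \<Longrightarrow> A @ x # B = C @ x # D \<Longrightarrow> A = C \<and> B = D"
proof (induction A arbitrary: C)
  case Nil then show ?case by (cases C) auto
next
  case (Cons a A) then show ?case by (cases C) auto
qed

lemma canF_P2: "length xs = N \<Longrightarrow> distinct xs \<Longrightarrow> distinct ys \<Longrightarrow> set ys = set xs \<Longrightarrow> Suc i < N \<Longrightarrow>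
   VE N (canF N xs ys @ [i]) (canF N xs (swp i ys))"
proof (induction N arbitrary: xs ys i)
  case 0 then show ?case by simp
next
  case (Suc n)
  have ly: "length ys = Suc n" using Suc distinct_card[of ys] distinct_card[of xs] by simp
  then have ne: "ys \<noteq> []" by auto
  define y where "y = last ys"
  obtain A B ys' where d: "ys = ys' @ [y]" "xs = A @ y # B" "y \<notin> set A" "y \<notin> set B"
     "distinct ys'" "set ys' = set (A @ B)" "distinct (A @ B)" "y \<notin> set ys'"
    using set_distinct_last[OF Suc(4) Suc(5) Suc(3) ne] unfolding y_def by blast
  have lys': "length ys' = n" using ly d by simp
  have lAB: "length (A @ B) = n" using Suc d by simp
  have c1: "canF (Suc n) xs ys = [length A..<n] @ canF n (A @ B) ys'" using d(1,2,3) canF_split[of y A n B ys'] by simp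
  show ?case
  proof (cases "Suc i < n")
    case True
    have sw: "swp i ys = swp i ys' @ [y]" using d True lys' swp_prefix[of i ys' "[y]"] by simp
    have c2: "canF (Suc n) xs (swp i ys) = [length A..<n] @ canF n (A @ B) (swp i ys')" using d sw canF_split by simp
    have "VE n (canF n (A @ B) ys' @ [i]) (canF n (A @ B) (swp i ys'))"
      using d True lAB lys' by (intro Suc.IH) auto
    then have "VE (Suc n) (canF n (A @ B) ys' @ [i]) (canF n (A @ B) (swp i ys'))"
      by (rule VE_mono) simp
    from VE_cong_left[OF this, of "[length A..<n]"] show ?thesis using c1 c2 by simp
  next
    case False
    then have ni: "n = Suc i" using Suc by simp
    then have ne': "ys' \<noteq> []" using lys' by auto
    define z where "z = last ys'"
    obtain Z1 Z2 ys'' where d2: "ys' = ys'' @ [z]" "A @ B = Z1 @ z # Z2" "z \<notin> set Z1" "z \<notin> set Z2"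
       "distinct ys''" "set ys'' = set (Z1 @ Z2)" "distinct (Z1 @ Z2)" "z \<notin> set ys''"
      using set_distinct_last[OF d(5) d(6) d(7) ne'] unfolding z_def by blast
    have lys'': "length ys'' = i" using lys' d2 ni by simp
    have P1: "valid i (canF i (Z1 @ Z2) ys'')" using canF_P1[of "Z1 @ Z2" i ys''] d2 lAB ni by simp
    have zy: "z \<noteq> y" using d d2 by auto
    have ys2: "ys = ys'' @ [z, y]" using d d2 by simp
    have sw: "swp i ys = ys'' @ [y, z]" using ys2 lys'' swp_app[of ys'' i] by simp
    have c1': "canF n (A @ B) ys' = [length Z1..<i] @ canF i (Z1 @ Z2) ys''"
      using canF_split[of z Z1 i Z2 ys''] d2(3) unfolding ni d2(1) d2(2) by simp
    have comm: "VE (Suc n) (canF i (Z1 @ Z2) ys'' @ [i]) ([i] @ canF i (Z1 @ Z2) ys'')"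
      using P1 ni by (intro VE_comm) (auto simp: valid_def far_def)
    have L: "VE (Suc n) (canF (Suc n) xs ys @ [i]) ([length A..<n] @ [length Z1..<i] @ [i] @ canF i (Z1 @ Z2) ys'')"
      using VE_cong_left[OF comm, of "[length A..<n] @ [length Z1..<i]"] c1 c1' by simp
    show ?thesis
    proof (cases "z \<in> set A")
      case True
      then obtain A1 A2 where A: "A = A1 @ z # A2" by (metis split_list)
      have zA: "z \<notin> set A1" "z \<notin> set A2" using d(7) A by auto
      have "Z1 @ z # Z2 = A1 @ z # (A2 @ B)" using d2(2) A by simp
      from split_unique[OF d2(3) zA(1) this] have Z: "Z1 = A1" "Z2 = A2 @ B" by auto
      have xs2: "xs = A1 @ z # (A2 @ y # B)" using d A by simp
      have c2: "canF (Suc n) xs (swp i ys) = [length A1..<n] @ canF n (A1 @ A2 @ y # B) (ys'' @ [y])"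
        using canF_split[of z A1 n "A2 @ y # B" "ys'' @ [y]"] zA unfolding xs2 sw by simp
      have yA: "y \<notin> set (A1 @ A2)" using d(3) A by simp
      have c3: "canF n (A1 @ A2 @ y # B) (ys'' @ [y]) = [length A1 + length A2..<i] @ canF i (Z1 @ Z2) ys''"
        using canF_split[of y "A1 @ A2" i B ys''] yA unfolding ni Z by simp
      have "VE (Suc n) ([length A..<n] @ [length Z1..<n-1] @ [n-1]) ([length Z1..<n] @ [length A - 1..<n-1])"
        using A Z lAB by (intro case2_id) auto
      then have "VE (Suc n) (([length A..<n] @ [length Z1..<i] @ [i]) @ canF i (Z1 @ Z2) ys'') (([length Z1..<n] @ [length A - 1..<i]) @ canF i (Z1 @ Z2) ys'')"
        using ni by (intro VE_cong_right) simp
      then have I: "VE (Suc n) ([length A..<n] @ [length Z1..<i] @ [i] @ canF i (Z1 @ Z2) ys'') ([length Z1..<n] @ [length A - 1..<i] @ canF i (Z1 @ Z2) ys'')"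
        by simp
      have R: "canF (Suc n) xs (swp i ys) = [length Z1..<n] @ [length A - 1..<i] @ canF i (Z1 @ Z2) ys''"
        using c2 c3 A Z by simp
      show ?thesis using VE_trans[OF L I] R by simp
    next
      case False
      have "z \<in> set (A @ B)" using d2(2) by simp
      then have "z \<in> set B" using False by simp
      then obtain B1 B2 where B: "B = B1 @ z # B2" by (metis split_list)
      have zB: "z \<notin> set B1" "z \<notin> set B2" using d(7) B by auto
      have "Z1 @ z # Z2 = (A @ B1) @ z # B2" using d2(2) B by simp
      then have Z: "Z1 = A @ B1" "Z2 = B2" using split_unique[of z Z1 "A @ B1" Z2 B2] zB False d2(3) by auto
      have xs2: "xs = (A @ y # B1) @ z # B2" using d B by simp
      have zA': "z \<notin> set (A @ y # B1)" using False zB zy by auto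
      have c2: "canF (Suc n) xs (swp i ys) = [Suc (length A + length B1)..<n] @ canF n (A @ y # B1 @ B2) (ys'' @ [y])"
        using canF_split[of z "A @ y # B1" n B2 "ys'' @ [y]"] zA' unfolding xs2 sw by simp
      have c3: "canF n (A @ y # B1 @ B2) (ys'' @ [y]) = [length A..<i] @ canF i (Z1 @ Z2) ys''"
        using canF_split[of y A i "B1 @ B2" ys''] d(3) unfolding ni Z by simp
      have "VE (Suc n) ([length A..<n] @ [length Z1..<n-1] @ [n-1]) ([Suc (length Z1)..<n] @ [length A..<n-1])"
        using B Z lAB by (intro case1_id) auto
      then have "VE (Suc n) (([length A..<n] @ [length Z1..<i] @ [i]) @ canF i (Z1 @ Z2) ys'') (([Suc (length Z1)..<n] @ [length A..<i]) @ canF i (Z1 @ Z2) ys'')"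
        using ni by (intro VE_cong_right) simp
      then have I: "VE (Suc n) ([length A..<n] @ [length Z1..<i] @ [i] @ canF i (Z1 @ Z2) ys'') ([Suc (length Z1)..<n] @ [length A..<i] @ canF i (Z1 @ Z2) ys'')"
        by simp
      have R: "canF (Suc n) xs (swp i ys) = [Suc (length Z1)..<n] @ [length A..<i] @ canF i (Z1 @ Z2) ys''"
        using c2 c3 B Z by simp
      show ?thesis using VE_trans[OF L I] R by simp
    qed
  qed
qed

lemma canF_Q: "valid N u \<Longrightarrow> VE N u (canF N [0..<N] (vapply u [0..<N]))"
proof (induction u rule: rev_induct)
  case Nil then show ?case using canF_id[of "[0..<N]" N] by simp
next
  case (snoc i u)
  have v: "valid N u" "Suc i < N" using snoc by auto
  have "VE N (u @ [i]) (canF N [0..<N] (vapply u [0..<N]) @ [i])"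
    using snoc v by (intro VE_cong_right) auto
  also have "VE N (canF N [0..<N] (vapply u [0..<N]) @ [i]) (canF N [0..<N] (swp i (vapply u [0..<N])))"
    using v set_vapply[of "[0..<N]" u] by (intro canF_P2) auto
  finally show ?case by (simp add: vapply_append)
qed

theorem VPT: "valid N u \<Longrightarrow> valid N v \<Longrightarrow> vapply u [0..<N] = vapply v [0..<N] \<Longrightarrow> VE N u v"
  using canF_Q[of N u] canF_Q[of N v] VE_sym VE_trans by metis

lemma perm_word: "distinct ys \<Longrightarrow> set ys = set xs \<Longrightarrow> distinct xs \<Longrightarrow> length xs = N \<Longrightarrow>
   \<exists>u. valid N u \<and> vapply u xs = ys"
  using canF_P1[of xs N ys] by blast

definition RR :: "nat \<Rightarrow> bool list" where "RR k = replicate k True @ replicate k False"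

lemma length_RR[simp]: "length (RR k) = 2 * k" by (simp add: RR_def)

lemma map_upt_RR: "map (\<lambda>x. x < k) [0..<2*k] = RR k"
proof -
  have "[0..<2*k] = [0..<k] @ [k..<2*k]" using upt_add_eq_append[of 0 k k] by (simp add: mult_2)
  moreover have "map (\<lambda>x. x < k) [0..<k] = replicate k True" by (rule nth_equalityI) auto
  moreover have "map (\<lambda>x. x < k) [k..<2*k] = replicate k False" by (rule nth_equalityI) auto
  ultimately show ?thesis by (simp add: RR_def)
qed

lemma op_decomp:
  assumes "valid (2*k) u" "vapply u (RR k) = RR k"
  shows "\<exists>u1 u2. valid k u1 \<and> valid k u2 \<and> VE (2*k) u (u1 @ map ((+) k) u2)"
proof -
  define ys where "ys = vapply u [0..<2*k]"
  have dy: "distinct ys" "set ys = {0..<2*k}" using set_vapply[of "[0..<2*k]" u] assms unfolding ys_def by auto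
  have ly: "length ys = 2 * k" using assms unfolding ys_def by simp
  have m: "map (\<lambda>x. x < k) ys = RR k" using assms vapply_map[of "[0..<2*k]" u "\<lambda>x. x < k"] map_upt_RR
    unfolding ys_def by simp
  define ys1 where "ys1 = take k ys"
  define ys2 where "ys2 = drop k ys"
  have m1: "map (\<lambda>x. x < k) ys1 = replicate k True" using m unfolding ys1_def RR_def by (metis append_eq_conv_conj length_replicate take_map)
  have m2: "map (\<lambda>x. x < k) ys2 = replicate k False" using m unfolding ys2_def RR_def by (metis append_eq_conv_conj length_replicate drop_map)
  have s1: "\<forall>x\<in>set ys1. x < k" using m1 by (metis (mono_tags, lifting) in_set_replicate list.set_map imageI)
  have s2: "\<forall>x\<in>set ys2. \<not> x < k" using m2 by (metis (mono_tags, lifting) in_set_replicate list.set_map imageI)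
  have ys: "ys = ys1 @ ys2" unfolding ys1_def ys2_def by simp
  have d1: "distinct ys1" "distinct ys2" using dy ys by auto
  have l1: "length ys1 = k" "length ys2 = k" using ly unfolding ys1_def ys2_def by auto
  have sub1: "set ys1 \<subseteq> {0..<k}" using s1 by auto
  have sub2: "set ys2 \<subseteq> {k..<2*k}"
  proof
    fix x assume x: "x \<in> set ys2"
    then have "x \<in> set ys" using ys by simp
    then show "x \<in> {k..<2*k}" using dy s2 x by auto
  qed
  have e1: "set ys1 = {0..<k}" using sub1 d1 l1 by (metis card_atLeastLessThan card_subset_eq distinct_card finite_atLeastLessThan diff_zero)
  have e2: "set ys2 = {k..<2*k}" using sub2 d1 l1
    by (metis card_atLeastLessThan card_subset_eq distinct_card finite_atLeastLessThan mult_2 add_diff_cancel_left')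
  obtain u1 where u1: "valid k u1" "vapply u1 [0..<k] = ys1" using perm_word[of ys1 "[0..<k]" k] d1 e1 by auto
  obtain u2 where u2: "valid k u2" "vapply u2 [k..<2*k] = ys2" using perm_word[of ys2 "[k..<2*k]" k] d1 e2 by auto
  have split: "[0..<2*k] = [0..<k] @ [k..<2*k]" using upt_add_eq_append[of 0 k k] by (simp add: mult_2)
  have "vapply (u1 @ map ((+) k) u2) [0..<2*k] = vapply (map ((+) k) u2) (vapply u1 [0..<k] @ [k..<2*k])"
    using u1 by (simp add: vapply_append split vapply_prefix)
  also have "\<dots> = ys1 @ ys2" using u1 u2 l1 vapply_shift[of "vapply u1 [0..<k]" k "[k..<2*k]" u2] by simp
  finally have "vapply (u1 @ map ((+) k) u2) [0..<2*k] = vapply u [0..<2*k]" using ys unfolding ys_def by simp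
  moreover have "valid (2*k) (u1 @ map ((+) k) u2)" using u1 u2 by (auto simp: valid_def)
  ultimately have "VE (2*k) u (u1 @ map ((+) k) u2)" using assms by (intro VPT) auto
  then show ?thesis using u1 u2 by blast
qed

lemma run_Vs_cons: "Suc q < length x \<Longrightarrow> run x (V q # r) = run (swp q x) r"
  by (simp add: step_V_swp del: step.simps)

lemma comm_right:
  "(\<forall>q\<in>set w. pos g + top_ar g \<le> q) \<Longrightarrow> run x (Vs w @ [g]) \<noteq> None \<Longrightarrow>
   E x (Vs w @ [g]) (g # Vs (map (\<lambda>q. q + bot_ar g - top_ar g) w))"
proof (induction w arbitrary: x)
  case Nil then show ?case by simp
next
  case (Cons q w)
  have q: "Suc q < length x" using Cons.prems by (auto split: if_splits)
  have r: "run x [V q] = Some (swp q x)" using q by (simp add: step_V_swp del: step.simps)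
  have "E (swp q x) (Vs w @ [g]) (g # Vs (map (\<lambda>q. q + bot_ar g - top_ar g) w))"
    using Cons q by (intro Cons.IH) (auto simp: run_Vs_cons simp del: run.simps)
  then have 1: "E x (V q # Vs w @ [g]) (V q # g # Vs (map (\<lambda>q. q + bot_ar g - top_ar g) w))"
    using E_cong_left[OF _ r] by fastforce
  have rr: "run x [V q, g] \<noteq> None"
    using E_run[OF 1] Cons.prems q by (auto simp: run_append split: option.splits)
  have "E x [V q, g] [g, setpos (V q) (pos (V q) + bot_ar g - top_ar g)]"
    using Cons rr by (intro E_interchange') auto
  then have 2: "E x ([V q, g] @ Vs (map (\<lambda>q. q + bot_ar g - top_ar g) w)) ([g, V (q + bot_ar g - top_ar g)] @ Vs (map (\<lambda>q. q + bot_ar g - top_ar g) w))"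
    using E_cong_right by fastforce
  show ?case using E_trans[OF 1] 2 by simp
qed

lemma comm_left:
  "(\<forall>q\<in>set w. Suc (Suc q) \<le> pos g) \<Longrightarrow> run x (Vs w @ [g]) \<noteq> None \<Longrightarrow>
   E x (Vs w @ [g]) (g # Vs w)"
proof (induction w arbitrary: x)
  case Nil then show ?case by simp
next
  case (Cons q w)
  have q: "Suc q < length x" using Cons.prems by (auto split: if_splits)
  have r: "run x [V q] = Some (swp q x)" using q by (simp add: step_V_swp del: step.simps)
  have "E (swp q x) (Vs w @ [g]) (g # Vs w)"
    using Cons q by (intro Cons.IH) (auto simp: run_Vs_cons simp del: run.simps)
  then have 1: "E x (V q # Vs w @ [g]) (V q # g # Vs w)"
    using E_cong_left[OF _ r] by fastforce
  have rr: "run x [V q, g] \<noteq> None"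
    using E_run[OF 1] Cons.prems q by (auto simp: run_append split: option.splits)
  have "E x [V q, setpos g (pos g + bot_ar (V q) - top_ar (V q))] [g, V q]"
    using Cons rr by (intro E_interchange2) auto
  then have 2: "E x ([V q, g] @ Vs w) ([g, V q] @ Vs w)"
    using E_cong_right by fastforce
  show ?case using E_trans[OF 1] 2 by simp
qed

lemma VE_cancel: "valid N w \<Longrightarrow> VE N (w @ rev w) []"
proof (induction w)
  case (Cons a w)
  have "VE N (a # w @ rev w @ [a]) [a, a]" using VE_cong[OF Cons.IH, of "[a]" "[a]"] Cons by simp
  also have "VE N [a, a] []" using VE_V2[of a N "[]" "[]"] Cons by simp
  finally show ?case by simp
qed simp

lemma VE_cancel': "valid N w \<Longrightarrow> VE N (rev w @ w) []"
  using VE_cancel[of N "rev w"] by (simp add: valid_def)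

lemma valid_rev[simp]: "valid N (rev w) = valid N w" by (simp add: valid_def)

lemma E_cancel: "valid (length x) w \<Longrightarrow> E x (Vs (w @ rev w)) []"
  using VE_E[OF VE_cancel[of "length x" w], of x] by simp

lemma E_cancel': "valid (length x) w \<Longrightarrow> E x (Vs (rev w @ w)) []"
  using VE_E[OF VE_cancel'[of "length x" w], of x] by simp

lemma push_bar_V: "Suc p < length x \<Longrightarrow> j' < length x \<Longrightarrow> \<exists>j. j < length x \<and> E x [V p, Bar j'] [Bar j, V p]"
proof -
  assume a: "Suc p < length x" "j' < length x"
  consider "j' = p" | "j' = Suc p" | "j' < p" | "Suc (Suc p) \<le> j'" by linarith
  then show ?thesis
  proof cases
    case 1 then show ?thesis using E_sym[OF E_T1b[of p x]] a by (intro exI[of _ "Suc p"]) auto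
  next
    case 2 then show ?thesis using E_sym[OF E_T1a[of p x]] a by (intro exI[of _ p]) auto
  next
    case 3
    have "E x [V p, Bar j'] [Bar j', setpos (V p) (pos (V p) + bot_ar (Bar j') - top_ar (Bar j'))]"
      using 3 a by (intro E_interchange') (auto simp: swp_def)
    then show ?thesis using a by auto
  next
    case 4
    have "E x [V p, setpos (Bar j') (pos (Bar j') + bot_ar (V p) - top_ar (V p))] [Bar j', V p]"
      using 4 a by (intro E_interchange2) (auto simp: swp_def)
    then show ?thesis using a by auto
  qed
qed

lemma push_bar: "valid (length x) u \<Longrightarrow> i < length x \<Longrightarrow> \<exists>j. j < length x \<and> E x (Vs u @ [Bar i]) (Bar j # Vs u)"
proof (induction u arbitrary: x)
  case Nil then show ?case by auto
next
  case (Cons p u)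
  have q: "Suc p < length x" using Cons by simp
  have r: "run x [V p] = Some (swp p x)" using q by (simp add: step_V_swp del: step.simps)
  obtain j' where j': "j' < length x" "E (swp p x) (Vs u @ [Bar i]) (Bar j' # Vs u)"
    using Cons.IH[of "swp p x"] Cons.prems q by auto
  have 1: "E x (V p # Vs u @ [Bar i]) (V p # Bar j' # Vs u)" using E_cong_left[OF j'(2) r] by simp
  obtain j where j: "j < length x" "E x [V p, Bar j'] [Bar j, V p]" using push_bar_V q j' by blast
  have 2: "E x ([V p, Bar j'] @ Vs u) ([Bar j, V p] @ Vs u)" using E_cong_right[OF j(2)] by simp
  show ?case using E_trans[OF 1] 2 j by auto
qed

lemma push_cap_V: "Suc p < length x \<Longrightarrow> j' \<le> length x \<Longrightarrow>
  \<exists>j w. j \<le> length x \<and> valid (length x + 2) w \<and> E x [V p, Cap d j'] (Cap d j # Vs w)"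
proof -
  assume a: "Suc p < length x" "j' \<le> length x"
  consider "j' \<le> p" | "Suc (Suc p) \<le> j'" | "j' = Suc p" by linarith
  then show ?thesis
  proof cases
    case 1
    have "E x [V p, Cap d j'] [Cap d j', setpos (V p) (pos (V p) + bot_ar (Cap d j') - top_ar (Cap d j'))]"
      using 1 a by (intro E_interchange') (auto simp: swp_def)
    then show ?thesis using a 1 by (intro exI[of _ j'] exI[of _ "[Suc (Suc p)]"]) auto
  next
    case 2
    have "E x [V p, setpos (Cap d j') (pos (Cap d j') + bot_ar (V p) - top_ar (V p))] [Cap d j', V p]"
      using 2 a by (intro E_interchange2) (auto simp: swp_def)
    then show ?thesis using a 2 by (intro exI[of _ j'] exI[of _ "[p]"]) auto
  next
    case 3
    obtain A b c B where x: "x = A @ b # c # B" "length A = p" using split2 a by blast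
    have "E x [V p, Cap d (Suc p)] [V p, Cap d (Suc p), V p, V p]"
      using E_cong[OF E_sym[OF E_V2[of p "A @ c # d # (\<not> d) # b # B"]], of x "[V p, Cap d (Suc p)]" "[]"] x
      by (simp add: nth_append)
    also have "E x [V p, Cap d (Suc p), V p, V p] [V p, Cap d p, V (Suc p), V p]"
      using E_cong[OF E_sym[OF E_pfVcap[of p "A @ c # b # B" d]], of x "[V p]" "[V p]"] x
      by (simp add: nth_append)
    also have "E x [V p, Cap d p, V (Suc p), V p] [Cap d p, V (Suc (Suc p)), V (Suc p), V p]"
      using E_cong[OF E_interchange'[of "Cap d p" "V p" x], of x "[]" "[V (Suc p), V p]"] x
      by (simp add: nth_append)
    finally show ?thesis using a 3 by (intro exI[of _ p] exI[of _ "[Suc (Suc p), Suc p, p]"]) auto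
  qed
qed

lemma push_cap: "valid (length x) u \<Longrightarrow> i \<le> length x \<Longrightarrow>
  \<exists>j w. j \<le> length x \<and> valid (length x + 2) w \<and> E x (Vs u @ [Cap d i]) (Cap d j # Vs w)"
proof (induction u arbitrary: x)
  case Nil then show ?case by (intro exI[of _ i] exI[of _ "[]"]) auto
next
  case (Cons p u)
  have q: "Suc p < length x" using Cons by simp
  have r: "run x [V p] = Some (swp p x)" using q by (simp add: step_V_swp del: step.simps)
  obtain j' w' where j': "j' \<le> length x" "valid (length x + 2) w'" "E (swp p x) (Vs u @ [Cap d i]) (Cap d j' # Vs w')"
    using Cons.IH[of "swp p x"] Cons.prems q by auto
  have 1: "E x (V p # Vs u @ [Cap d i]) (V p # Cap d j' # Vs w')" using E_cong_left[OF j'(3) r] by simp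
  obtain j w0 where j: "j \<le> length x" "valid (length x + 2) w0" "E x [V p, Cap d j'] (Cap d j # Vs w0)"
    using push_cap_V q j' by blast
  have 2: "E x ([V p, Cap d j'] @ Vs w') ((Cap d j # Vs w0) @ Vs w')" using E_cong_right[OF j(3)] by simp
  show ?case using E_trans[OF 1] 2 j j' by (intro exI[of _ j] exI[of _ "w0 @ w'"]) auto
qed

lemma run_Cup1: "run x [Cup c] = Some y \<longleftrightarrow> (\<exists>A a b B. x = A @ a # b # B \<and> length A = c \<and> a \<noteq> b \<and> y = A @ B)"
proof
  assume a: "run x [Cup c] = Some y"
  then have "Suc c < length x" by (auto split: if_splits)
  then obtain A a b B where x: "x = A @ a # b # B" "length A = c" using split2 by blast
  then show "\<exists>A a b B. x = A @ a # b # B \<and> length A = c \<and> a \<noteq> b \<and> y = A @ B"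
    using a by (auto simp: nth_append split: if_splits)
qed (auto simp: nth_append)

lemma pull_cup_V: "run x [Cup c] = Some y \<Longrightarrow> Suc p < length y \<Longrightarrow>
  \<exists>c' w. valid (length x) w \<and> E x [Cup c, V p] (Vs w @ [Cup c'])"
proof -
  assume a: "run x [Cup c] = Some y" "Suc p < length y"
  obtain A0 a0 b0 B0 where x0: "x = A0 @ a0 # b0 # B0" "length A0 = c" "a0 \<noteq> b0" "y = A0 @ B0"
    using a run_Cup1 by metis
  have lx: "length x = length y + 2" "Suc c < length x" using x0 by auto
  consider "Suc (Suc p) \<le> c" | "c \<le> p" | "c = Suc p" by linarith
  then show ?thesis
  proof cases
    case 1
    have "E x [Cup c, V p] [V p, setpos (Cup c) (pos (Cup c) + bot_ar (V p) - top_ar (V p))]"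
      using 1 a x0 by (intro E_interchange') (auto simp: nth_append)
    then show ?thesis using lx 1 by (intro exI[of _ c] exI[of _ "[p]"]) auto
  next
    case 2
    have "E x [Cup c, setpos (V (Suc (Suc p))) (pos (V (Suc (Suc p))) + bot_ar (Cup c) - top_ar (Cup c))] [V (Suc (Suc p)), Cup c]"
      using 2 a x0 by (intro E_interchange2) (auto simp: nth_append)
    then show ?thesis using lx a 2 by (intro exI[of _ c] exI[of _ "[Suc (Suc p)]"]) auto
  next
    case 3
    obtain A e b f B where x: "x = A @ e # b # f # B" "length A = p" using split3 lx 3 by (metis Suc_lessD)
    have bf: "b \<noteq> f" using a x 3 by (auto simp: nth_append split: if_splits)
    have "B \<noteq> []" using lx x 3 a by auto
    then obtain g B' where B: "B = g # B'" by (cases B) auto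
    have "E x [V p, V (Suc p), V (Suc (Suc p)), Cup p] [V p, V (Suc p), Cup p, V p]"
      using E_cong[OF E_interchange'[of "Cup p" "V (Suc (Suc p))" "A @ b # f # e # B"], of x "[V p, V (Suc p)]" "[]"] x bf B
      by (simp add: nth_append)
    also have "E x [V p, V (Suc p), Cup p, V p] [V p, V p, Cup (Suc p), V p]"
      using E_cong[OF E_sym[OF E_pfVcup[where i=p and x="A @ b # e # f # B"]], of x "[V p]" "[V p]"] x bf B
      by (simp add: nth_append)
    also have "E x [V p, V p, Cup (Suc p), V p] [Cup (Suc p), V p]"
      using E_cong[OF E_V2[of p x], of x "[]" "[Cup (Suc p), V p]"] x
      by (simp add: nth_append)
    finally have F: "E x [V p, V (Suc p), V (Suc (Suc p)), Cup p] [Cup (Suc p), V p]" .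
    show ?thesis using 3 lx a E_sym[OF F] by (intro exI[of _ p] exI[of _ "[p, Suc p, Suc (Suc p)]"]) auto
  qed
qed

lemma pull_cup: "run x [Cup c] = Some y \<Longrightarrow> valid (length y) u \<Longrightarrow>
  \<exists>c' w. valid (length x) w \<and> E x (Cup c # Vs u) (Vs w @ [Cup c'])"
proof (induction u arbitrary: x c y)
  case Nil then show ?case by (intro exI[of _ c] exI[of _ "[]"]) auto
next
  case (Cons p u)
  have p: "Suc p < length y" using Cons by simp
  obtain c' w0 where w0: "valid (length x) w0" "E x [Cup c, V p] (Vs w0 @ [Cup c'])" using pull_cup_V[OF Cons.prems(1) p] by blast
  have "run x ([Cup c] @ [V p]) = Some (swp p y)" using run_append_Some[OF Cons.prems(1), of "[V p]"] p
    by (simp add: step_V_swp del: step.simps)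
  then have r0: "run x (Vs w0 @ [Cup c']) = Some (swp p y)" using E_run[OF w0(2)] by simp
  have rx0: "run x (Vs w0) = Some (vapply w0 x)" using w0 run_Vs by blast
  have rc: "run (vapply w0 x) [Cup c'] = Some (swp p y)" using r0 rx0 by (simp add: run_append)
  obtain c'' w1 where w1: "valid (length (vapply w0 x)) w1" "E (vapply w0 x) (Cup c' # Vs u) (Vs w1 @ [Cup c''])"
    using Cons.IH[OF rc] Cons.prems p by auto
  have 1: "E x ([Cup c, V p] @ Vs u) ((Vs w0 @ [Cup c']) @ Vs u)" using E_cong_right[OF w0(2)] by blast
  have 2: "E x (Vs w0 @ (Cup c' # Vs u)) (Vs w0 @ (Vs w1 @ [Cup c'']))" using E_cong_left[OF w1(2) rx0] by blast
  show ?case using E_trans[OF 1] 2 w0 w1 by (intro exI[of _ c''] exI[of _ "w0 @ w1"]) auto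
qed

lemma cap_right: "j < length x \<Longrightarrow> E x [Cap e j] [Cap e (Suc j), V j, V (Suc j)]"
proof -
  assume a: "j < length x"
  obtain A b B where x: "x = A @ b # B" "length A = j" using split1 a by blast
  have "E x [Cap e j] [Cap e j, V (Suc j), V (Suc j)]"
    using E_cong[OF E_sym[OF E_V2[of "Suc j" "A @ e # (\<not> e) # b # B"]], of x "[Cap e j]" "[]"] x
    by (simp add: nth_append)
  also have "E x [Cap e j, V (Suc j), V (Suc j)] [Cap e (Suc j), V j, V (Suc j)]"
    using E_cong[OF E_pfVcap[of j x e], of x "[]" "[V (Suc j)]"] x by simp
  finally show ?thesis .
qed

lemma cap_left: "j < length x \<Longrightarrow> E x [Cap e (Suc j)] [Cap e j, V (Suc j), V j]"
proof -
  assume a: "j < length x"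
  obtain A b B where x: "x = A @ b # B" "length A = j" using split1 a by blast
  have "E x [Cap e (Suc j)] [Cap e (Suc j), V j, V j]"
    using E_cong[OF E_sym[OF E_V2[of j "A @ b # e # (\<not> e) # B"]], of x "[Cap e (Suc j)]" "[]"] x
    by (simp add: nth_append)
  also have "E x [Cap e (Suc j), V j, V j] [Cap e j, V (Suc j), V j]"
    using E_cong[OF E_sym[OF E_pfVcap[of j x e]], of x "[]" "[V j]"] x by simp
  finally show ?thesis .
qed

lemma cap_move_up: "j + d \<le> length x \<Longrightarrow> \<exists>\<gamma>. valid (length x + 2) \<gamma> \<and> E x [Cap e j] (Cap e (j + d) # Vs \<gamma>)"
proof (induction d)
  case 0 then show ?case by (intro exI[of _ "[]"]) auto
next
  case (Suc d)
  obtain \<gamma> where g: "valid (length x + 2) \<gamma>" "E x [Cap e j] (Cap e (j + d) # Vs \<gamma>)" using Suc.IH Suc.prems by auto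
  have "E x ([Cap e (j + d)] @ Vs \<gamma>) ([Cap e (Suc (j + d)), V (j + d), V (Suc (j + d))] @ Vs \<gamma>)"
    using Suc.prems by (intro E_cong_right cap_right) auto
  from E_trans[OF g(2) this[simplified]] have 2: "E x [Cap e j] (Cap e (j + Suc d) # Vs ([j + d, Suc (j + d)] @ \<gamma>))" by simp
  have 3: "valid (length x + 2) ([j + d, Suc (j + d)] @ \<gamma>)" using g(1) Suc.prems by simp
  show ?case using 2 3 by blast
qed

lemma cap_move_down: "j + d \<le> length x \<Longrightarrow> \<exists>\<gamma>. valid (length x + 2) \<gamma> \<and> E x [Cap e (j + d)] (Cap e j # Vs \<gamma>)"
proof (induction d)
  case 0 then show ?case by (intro exI[of _ "[]"]) auto
next
  case (Suc d)
  obtain \<gamma> where g: "valid (length x + 2) \<gamma>" "E x [Cap e (j + d)] (Cap e j # Vs \<gamma>)" using Suc.IH Suc.prems by auto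
  have 1: "E x [Cap e (Suc (j + d))] [Cap e (j + d), V (Suc (j + d)), V (j + d)]"
    using Suc.prems by (intro cap_left) auto
  have "E x ([Cap e (j + d)] @ [V (Suc (j + d)), V (j + d)]) ((Cap e j # Vs \<gamma>) @ [V (Suc (j + d)), V (j + d)])"
    using g by (intro E_cong_right) auto
  from E_trans[OF 1 this[simplified]] have 2: "E x [Cap e (j + Suc d)] (Cap e j # Vs (\<gamma> @ [Suc (j + d), j + d]))" by simp
  have 3: "valid (length x + 2) (\<gamma> @ [Suc (j + d), j + d])" using g(1) Suc.prems by simp
  show ?case using 2 3 by blast
qed

lemma cap_move: "j \<le> length x \<Longrightarrow> k \<le> length x \<Longrightarrow> \<exists>\<gamma>. valid (length x + 2) \<gamma> \<and> E x [Cap e j] (Cap e k # Vs \<gamma>)"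
proof (cases "j \<le> k")
  case True
  assume "k \<le> length x"
  then show ?thesis using cap_move_up[of j "k - j" x e] True by simp
next
  case False
  assume "j \<le> length x"
  then show ?thesis using cap_move_down[of k "j - k" x e] False by simp
qed

lemma cap_norm: "j \<le> length x \<Longrightarrow> k \<le> length x \<Longrightarrow> \<exists>\<gamma>. valid (length x + 2) \<gamma> \<and> E x [Cap d j] (Cap True k # Vs \<gamma>)"
proof (cases d)
  case True
  assume "j \<le> length x" "k \<le> length x"
  then show ?thesis using cap_move[where e=d and j=j and k=k and x=x] True by simp
next
  case False
  assume a: "j \<le> length x" "k \<le> length x"
  have 1: "E x [Cap d j] [Cap True j, V j]" using E_twcap[of j x True] a False by simp
  obtain \<gamma> where g: "valid (length x + 2) \<gamma>" "E x [Cap True j] (Cap True k # Vs \<gamma>)" using cap_move[where e=True and j=j and k=k and x=x] a by auto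
  have "E x ([Cap True j] @ [V j]) ((Cap True k # Vs \<gamma>) @ [V j])" using g by (intro E_cong_right) auto
  from E_trans[OF 1] this have 2: "E x [Cap d j] (Cap True k # Vs (\<gamma> @ [j]))" by simp
  have 3: "valid (length x + 2) (\<gamma> @ [j])" using g(1) a by simp
  show ?thesis using 2 3 by blast
qed

lemma cup_right: "run x [Cup i] \<noteq> None \<Longrightarrow> Suc (Suc i) < length x \<Longrightarrow> E x [Cup i] [V (Suc i), V i, Cup (Suc i)]"
proof -
  assume a: "run x [Cup i] \<noteq> None" "Suc (Suc i) < length x"
  obtain A p q r B where x: "x = A @ p # q # r # B" "length A = i" using split3 a by blast
  have pq: "p \<noteq> q" using a x by (auto simp: nth_append split: if_splits)
  have "E x [Cup i] [V (Suc i), V (Suc i), Cup i]"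
    using E_cong[OF E_sym[OF E_V2[of "Suc i" x]], of x "[]" "[Cup i]"] x by simp
  also have "E x [V (Suc i), V (Suc i), Cup i] [V (Suc i), V i, Cup (Suc i)]"
    using E_cong[OF E_sym[OF E_pfVcup[where i=i and x="A @ p # r # q # B"]], of x "[V (Suc i)]" "[]"] x pq
    by (simp add: nth_append)
  finally show ?thesis .
qed

lemma cup_left: "run x [Cup (Suc i)] \<noteq> None \<Longrightarrow> E x [Cup (Suc i)] [V i, V (Suc i), Cup i]"
proof -
  assume a: "run x [Cup (Suc i)] \<noteq> None"
  have "Suc (Suc i) < length x" using a by (auto split: if_splits)
  then obtain A p q r B where x: "x = A @ p # q # r # B" "length A = i" using split3 by blast
  have qr: "q \<noteq> r" using a x by (auto simp: nth_append split: if_splits)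
  have "E x [Cup (Suc i)] [V i, V i, Cup (Suc i)]"
    using E_cong[OF E_sym[OF E_V2[of i x]], of x "[]" "[Cup (Suc i)]"] x by simp
  also have "E x [V i, V i, Cup (Suc i)] [V i, V (Suc i), Cup i]"
    using E_cong[OF E_pfVcup[where i=i and x="A @ q # p # r # B"], of x "[V i]" "[]"] x qr
    by (simp add: nth_append)
  finally show ?thesis .
qed

lemma cup_move_up: "Suc (i + d) < length x \<Longrightarrow> run x [Cup i] \<noteq> None \<Longrightarrow>
   \<exists>\<gamma>. valid (length x) \<gamma> \<and> E x [Cup i] (Vs \<gamma> @ [Cup (i + d)])"
proof (induction d)
  case 0 then show ?case by (intro exI[of _ "[]"]) auto
next
  case (Suc d)
  obtain \<gamma> where g: "valid (length x) \<gamma>" "E x [Cup i] (Vs \<gamma> @ [Cup (i + d)])" using Suc.IH Suc.prems by auto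
  have rg: "run x (Vs \<gamma>) = Some (vapply \<gamma> x)" using g run_Vs by blast
  have "run x (Vs \<gamma> @ [Cup (i + d)]) \<noteq> None" using E_run[OF g(2)] Suc.prems by simp
  then have rc: "run (vapply \<gamma> x) [Cup (i + d)] \<noteq> None" using run_append_Some[OF rg, of "[Cup (i + d)]"] by simp
  have "E (vapply \<gamma> x) [Cup (i + d)] [V (Suc (i + d)), V (i + d), Cup (Suc (i + d))]"
    using Suc.prems g rc by (intro cup_right) auto
  from E_cong_left[OF this rg] have "E x (Vs \<gamma> @ [Cup (i + d)]) (Vs (\<gamma> @ [Suc (i + d), i + d]) @ [Cup (i + Suc d)])" by simp
  from E_trans[OF g(2) this] have 2: "E x [Cup i] (Vs (\<gamma> @ [Suc (i + d), i + d]) @ [Cup (i + Suc d)])" .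
  have 3: "valid (length x) (\<gamma> @ [Suc (i + d), i + d])" using g(1) Suc.prems by simp
  show ?case using 2 3 by blast
qed

lemma cup_move_down: "Suc (i + d) < length x \<Longrightarrow> run x [Cup (i + d)] \<noteq> None \<Longrightarrow>
   \<exists>\<gamma>. valid (length x) \<gamma> \<and> E x [Cup (i + d)] (Vs \<gamma> @ [Cup i])"
proof (induction d arbitrary: x)
  case 0 then show ?case by (intro exI[of _ "[]"]) auto
next
  case (Suc d)
  have 1: "E x [Cup (Suc (i + d))] [V (i + d), V (Suc (i + d)), Cup (i + d)]" using Suc.prems by (intro cup_left) auto
  have rg: "run x (Vs [i + d, Suc (i + d)]) = Some (vapply [i + d, Suc (i + d)] x)" using Suc.prems by (intro run_Vs) auto
  have "run x (Vs [i + d, Suc (i + d)] @ [Cup (i + d)]) \<noteq> None" using E_run[OF 1] Suc.prems by simp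
  then have rc: "run (vapply [i + d, Suc (i + d)] x) [Cup (i + d)] \<noteq> None" using run_append_Some[OF rg, of "[Cup (i + d)]"] by simp
  obtain \<gamma> where g: "valid (length x) \<gamma>" "E (vapply [i + d, Suc (i + d)] x) [Cup (i + d)] (Vs \<gamma> @ [Cup i])"
  proof -
    have lv: "length (vapply [i + d, Suc (i + d)] x) = length x" using Suc.prems by (intro length_vapply) auto
    show ?thesis using Suc.IH[of "vapply [i + d, Suc (i + d)] x"] Suc.prems rc lv that by auto
  qed
  from E_cong_left[OF g(2) rg] have "E x (Vs [i + d, Suc (i + d)] @ [Cup (i + d)]) (Vs ([i + d, Suc (i + d)] @ \<gamma>) @ [Cup i])" by simp
  from E_trans[OF 1] this have 2: "E x [Cup (i + Suc d)] (Vs ([i + d, Suc (i + d)] @ \<gamma>) @ [Cup i])" by simp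
  have 3: "valid (length x) ([i + d, Suc (i + d)] @ \<gamma>)" using g(1) Suc.prems by simp
  show ?case using 2 3 by blast
qed

lemma cup_move: "run x [Cup i] \<noteq> None \<Longrightarrow> Suc j < length x \<Longrightarrow>
   \<exists>\<gamma>. valid (length x) \<gamma> \<and> E x [Cup i] (Vs \<gamma> @ [Cup j])"
proof (cases "i \<le> j")
  case True
  assume "run x [Cup i] \<noteq> None" "Suc j < length x"
  then show ?thesis using cup_move_up[of i "j - i" x] True by simp
next
  case False
  assume a: "run x [Cup i] \<noteq> None" "Suc j < length x"
  then have "Suc i < length x" by (auto split: if_splits)
  then show ?thesis using cup_move_down[of j "i - j" x] False a by simp
qed

lemma step_Some_pos: "step u g = Some u1 \<Longrightarrow> pos g + top_ar g \<le> length u"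
  by (cases g) (auto split: if_splits)

lemma cap_end: "run u W = Some u' \<Longrightarrow> E (u @ z) (Cap d (length u) # W) (W @ [Cap d (length u')])"
proof (induction W arbitrary: u)
  case Nil then show ?case by simp
next
  case (Cons g W)
  obtain u1 where u1: "step u g = Some u1" "run u1 W = Some u'" using Cons.prems by (auto split: option.splits)
  have pg: "pos g + top_ar g \<le> length u" using step_Some_pos u1 by blast
  have l1: "length u1 + top_ar g = length u + bot_ar g" using step_length u1 by blast
  have r1: "run (u @ [d, \<not> d] @ z) [g] = Some (u1 @ [d, \<not> d] @ z)" using step_ext[OF u1(1)] by simp
  have "E (u @ z) [Cap d (length u), g] [g, setpos (Cap d (length u)) (pos (Cap d (length u)) + bot_ar g - top_ar g)]"
    using pg r1 by (intro E_interchange') (auto simp: nth_append)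
  moreover have l2: "length u + bot_ar g - top_ar g = length u1" using l1 pg by linarith
  ultimately have 1: "E (u @ z) [Cap d (length u), g] [g, Cap d (length u1)]" by simp
  have 2: "E (u @ z) ([g] @ (Cap d (length u1) # W)) ([g] @ (W @ [Cap d (length u')]))"
  proof -
    have "run (u @ z) [g] = Some (u1 @ z)" using step_ext[OF u1(1)] by simp
    from E_cong_left[OF Cons.IH[OF u1(2)] this] show ?thesis .
  qed
  have "E (u @ z) ([Cap d (length u), g] @ W) ([g, Cap d (length u1)] @ W)" using E_cong_right[OF 1] by blast
  from E_trans[OF this] 2 show ?case by simp
qed

lemma vapply_front_end: "vapply [0..<length A] (s # A @ R) = A @ s # R"
proof -
  have "vapply [0..<length A] (s # A) = A @ [s]" using move_end[of "[]" A s] by simp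
  then show ?thesis using vapply_prefix[of "s # A" "[0..<length A]" R] by (simp add: valid_upt)
qed

lemma map_sub_upt: "t \<le> m \<Longrightarrow> map (\<lambda>q. q + c - t) [m..<n] = [m + c - t..<n + c - t]"
  by (induction n) (auto simp: Suc_diff_le)

lemma len2: "length S = 2 \<Longrightarrow> \<exists>a b. S = [a, b]"
  by (cases S; cases "tl S") (auto simp: numeral_2_eq_2)

lemma len1: "length S = 1 \<Longrightarrow> \<exists>a. S = [a]"
  by (cases S) auto

lemma core_detour:
  assumes "step (A @ S @ C) g = Some y" "length A = pos g" "length S = top_ar g"
  shows "E (A @ s # S @ C) (Vs [pos g..<pos g + top_ar g] @ [g] @ Vs (rev [pos g..<pos g + bot_ar g])) [shn 1 g]"
proof (cases g)
  case (Cap d p)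
  then have S: "S = []" "p = length A" using assms(2,3) by auto
  have "E (A @ s # C) [Cap d p, V (Suc p), V p] [Cap d (Suc p), V p, V p]"
    using E_cong[OF E_pfVcap[of p "A @ s # C" d], of "A @ s # C" "[]" "[V p]"] S by simp
  also have "E (A @ s # C) [Cap d (Suc p), V p, V p] [Cap d (Suc p)]"
    using E_cong[OF E_V2[of p "A @ s # d # (\<not> d) # C"], of "A @ s # C" "[Cap d (Suc p)]" "[]"] S
    by (simp add: nth_append)
  finally show ?thesis using Cap S by (simp add: numeral_2_eq_2)
next
  case (Cup p)
  then obtain a b where S: "S = [a, b]" "p = length A" using assms(2,3) len2 by fastforce
  have ab: "a \<noteq> b" using assms(1) Cup S by (auto simp: nth_append split: if_splits)
  have "E (A @ s # a # b # C) [V p, V (Suc p), Cup p] [V p, V p, Cup (Suc p)]"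
    using E_cong[OF E_sym[OF E_pfVcup[where i=p and x="A @ a # s # b # C"]], of "A @ s # a # b # C" "[V p]" "[]"] S ab
    by (simp add: nth_append)
  also have "E (A @ s # a # b # C) [V p, V p, Cup (Suc p)] [Cup (Suc p)]"
    using E_cong[OF E_V2[of p "A @ s # a # b # C"], of "A @ s # a # b # C" "[]" "[Cup (Suc p)]"] S
    by simp
  finally show ?thesis using Cup S by (simp add: numeral_2_eq_2)
next
  case (X t p)
  then obtain a b where S: "S = [a, b]" "p = length A" using assms(2,3) len2 by fastforce
  have "E (A @ s # a # b # C) [V p, V (Suc p), X t p, V (Suc p), V p] [X t (Suc p), V p, V (Suc p), V (Suc p), V p]"
    using E_cong[OF E_V4a[of p "A @ s # a # b # C" t], of "A @ s # a # b # C" "[]" "[V (Suc p), V p]"] S by simp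
  also have "E (A @ s # a # b # C) [X t (Suc p), V p, V (Suc p), V (Suc p), V p] [X t (Suc p), V p, V p]"
    using E_cong[OF E_V2[of "Suc p" "A @ b # s # a # C"], of "A @ s # a # b # C" "[X t (Suc p), V p]" "[V p]"] S
    by (simp add: nth_append)
  also have "E (A @ s # a # b # C) [X t (Suc p), V p, V p] [X t (Suc p)]"
    using E_cong[OF E_V2[of p "A @ s # b # a # C"], of "A @ s # a # b # C" "[X t (Suc p)]" "[]"] S
    by (simp add: nth_append)
  finally show ?thesis using X S by (simp add: numeral_2_eq_2)
next
  case (V p)
  then obtain a b where S: "S = [a, b]" "p = length A" using assms(2,3) len2 by fastforce
  have "E (A @ s # a # b # C) [V p, V (Suc p), V p, V (Suc p), V p] [V (Suc p), V p, V (Suc p), V (Suc p), V p]"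
    using E_cong[OF E_V3[of p "A @ s # a # b # C"], of "A @ s # a # b # C" "[]" "[V (Suc p), V p]"] S by simp
  also have "E (A @ s # a # b # C) [V (Suc p), V p, V (Suc p), V (Suc p), V p] [V (Suc p), V p, V p]"
    using E_cong[OF E_V2[of "Suc p" "A @ b # s # a # C"], of "A @ s # a # b # C" "[V (Suc p), V p]" "[V p]"] S
    by (simp add: nth_append)
  also have "E (A @ s # a # b # C) [V (Suc p), V p, V p] [V (Suc p)]"
    using E_cong[OF E_V2[of p "A @ s # b # a # C"], of "A @ s # a # b # C" "[V (Suc p)]" "[]"] S
    by (simp add: nth_append)
  finally show ?thesis using V S by (simp add: numeral_2_eq_2)
next
  case (Bar p)
  then obtain a where S: "S = [a]" "p = length A" using assms(2,3) len1 by fastforce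
  have "E (A @ s # a # C) [V p, Bar p, V p] [Bar (Suc p), V p, V p]"
    using E_cong[OF E_sym[OF E_T1b[of p "A @ s # a # C"]], of "A @ s # a # C" "[]" "[V p]"] S by simp
  also have "E (A @ s # a # C) [Bar (Suc p), V p, V p] [Bar (Suc p)]"
    using E_cong[OF E_V2[of p "A @ s # a # C"], of "A @ s # a # C" "[Bar (Suc p)]" "[]"] S by simp
  finally show ?thesis using Bar S by simp
qed

lemma upt_split: "a \<le> b \<Longrightarrow> b \<le> c \<Longrightarrow> [a..<c] = [a..<b] @ [b..<c]"
  by (metis le_add_diff_inverse upt_add_eq_append)

lemma vapply_mid: "vapply [length A..<length A + length S] (A @ s # S @ C) = A @ S @ s # C"
proof -
  have m: "map ((+) (length A)) [0..<length S] = [length A..<length A + length S]"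
    by (rule nth_equalityI) auto
  have "vapply (map ((+) (length A)) [0..<length S]) (A @ (s # S @ C)) = A @ vapply [0..<length S] (s # S @ C)"
    by (intro vapply_shift) (auto simp: valid_upt)
  then show ?thesis using m vapply_front_end[of S s C] by simp
qed

lemma detour1:
  assumes st: "step u g = Some u1"
  shows "E (s # u) [shn 1 g] (Vs [0..<length u] @ [g] @ Vs (rev [0..<length u1]))"
proof -
  define p where "p = pos g"
  define t where "t = top_ar g"
  define bo where "bo = bot_ar g"
  have pg: "p + t \<le> length u" using step_Some_pos st unfolding p_def t_def by blast
  define A where "A = take p u"
  define S where "S = take t (drop p u)"
  define C where "C = drop (p + t) u"
  have u: "u = A @ S @ C" unfolding A_def S_def C_def using pg
    by (metis append_take_drop_id add.commute drop_drop)
  have lA: "length A = p" "length S = t" using pg unfolding A_def S_def by auto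
  have sa: "step (A @ S @ C) g = (if okg g S then Some (A @ outg g S @ C) else None)"
    using step_app[of A g S C] lA unfolding p_def t_def by simp
  have ok: "okg g S" and u1: "u1 = A @ outg g S @ C" using sa st u by (auto split: if_splits)
  have lo: "length (outg g S) = bo" using length_outg lA unfolding t_def bo_def by blast
  have lu: "length u = p + t + length C" "length u1 = p + bo + length C" using u u1 lA lo by auto
  have L1: "[0..<length u] = [0..<p] @ [p..<p+t] @ [p+t..<length u]"
    using lu upt_split[of 0 p "length u"] upt_split[of p "p+t" "length u"] by simp
  have L2: "rev [0..<length u1] = rev [p+bo..<length u1] @ rev [p..<p+bo] @ rev [0..<p]"
  proof -
    have "[0..<length u1] = [0..<p] @ [p..<p+bo] @ [p+bo..<length u1]"
      using lu upt_split[of 0 p "length u1"] upt_split[of p "p+bo" "length u1"] by simp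
    then show ?thesis by simp
  qed
  have r1: "run (s # u) (Vs [0..<p]) = Some (A @ s # S @ C)"
    using run_Vs[of "s # u" "[0..<p]"] vapply_front_end[of A s "S @ C"] u lA pg by (simp add: valid_upt)
  have r2: "run (A @ s # S @ C) (Vs [p..<p+t]) = Some (A @ S @ s # C)"
    using run_Vs[of "A @ s # S @ C" "[p..<p+t]"] vapply_mid[of A S s C] lA pg by (simp add: valid_upt)
  have r12: "run (s # u) (Vs [0..<p] @ Vs [p..<p+t]) = Some (A @ S @ s # C)" using run_append_Some[OF r1, of "Vs [p..<p+t]"] r2 by simp
  have r3: "run (A @ S @ s # C) [g] = Some (A @ outg g S @ s # C)"
    using step_app[of A g S "s # C"] lA ok unfolding p_def t_def by simp
  have r123: "run (s # u) (Vs [0..<p] @ Vs [p..<p+t] @ [g]) = Some (A @ outg g S @ s # C)"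
    using run_append_Some[OF r12, of "[g]"] r3 by simp
  have rC: "run (A @ S @ s # C) (Vs [p+t..<length u]) = Some (A @ S @ C @ [s])"
    using run_Vs[of "A @ S @ s # C" "[p+t..<length u]"] move_end[of "A @ S" C s] lA lu by (simp add: valid_upt)
  have rg: "run (A @ S @ C @ [s]) [g] = Some (u1 @ [s])" using step_ext[OF st, of "[s]"] u by simp
  have "E (A @ S @ s # C) (Vs [p+t..<length u] @ [g]) (g # Vs (map (\<lambda>q. q + bot_ar g - top_ar g) [p+t..<length u]))"
    using rC rg by (intro comm_right) (auto simp: run_append p_def t_def)
  moreover have "map (\<lambda>q. q + bot_ar g - top_ar g) [p+t..<length u] = [p+bo..<length u1]"
    using map_sub_upt[of t "p + t" "bot_ar g" "length u"] lu unfolding t_def bo_def by (simp add: ac_simps)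
  ultimately have s1: "E (A @ S @ s # C) (Vs [p+t..<length u] @ [g]) (g # Vs [p+bo..<length u1])" by simp
  have E1: "E (s # u) (Vs [0..<p] @ Vs [p..<p+t] @ (Vs [p+t..<length u] @ [g]) @ (Vs (rev [p+bo..<length u1]) @ Vs (rev [p..<p+bo]) @ Vs (rev [0..<p])))
     (Vs [0..<p] @ Vs [p..<p+t] @ (g # Vs [p+bo..<length u1]) @ (Vs (rev [p+bo..<length u1]) @ Vs (rev [p..<p+bo]) @ Vs (rev [0..<p])))"
    using E_cong[OF s1 r12] by simp
  have s2: "E (A @ outg g S @ s # C) (Vs ([p+bo..<length u1] @ rev [p+bo..<length u1])) []"
    using lu lA lo u1 by (intro E_cancel) (auto simp: valid_upt)
  have E2: "E (s # u) ((Vs [0..<p] @ Vs [p..<p+t] @ [g]) @ Vs ([p+bo..<length u1] @ rev [p+bo..<length u1]) @ (Vs (rev [p..<p+bo]) @ Vs (rev [0..<p])))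
     ((Vs [0..<p] @ Vs [p..<p+t] @ [g]) @ [] @ (Vs (rev [p..<p+bo]) @ Vs (rev [0..<p])))"
    using E_cong[OF s2 r123] by blast
  have s3: "E (A @ s # S @ C) (Vs [p..<p+t] @ [g] @ Vs (rev [p..<p+bo])) [shn 1 g]"
    using core_detour[of A S C g u1 s] st u lA unfolding p_def t_def bo_def by simp
  have E3: "E (s # u) (Vs [0..<p] @ (Vs [p..<p+t] @ [g] @ Vs (rev [p..<p+bo])) @ Vs (rev [0..<p]))
     (Vs [0..<p] @ [shn 1 g] @ Vs (rev [0..<p]))"
    using E_cong[OF s3 r1] by blast
  have rs: "run (A @ s # S @ C) [shn 1 g] = Some (A @ s # outg g S @ C)"
    using step_app[of "A @ [s]" "shn 1 g" S C] lA ok unfolding p_def t_def by (simp add: shn_def)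
  have s4: "E (s # u) (Vs [0..<p] @ [shn 1 g]) (shn 1 g # Vs [0..<p])"
    using r1 rs unfolding p_def by (intro comm_left) (auto simp: run_append)
  have E4: "E (s # u) ((Vs [0..<p] @ [shn 1 g]) @ Vs (rev [0..<p])) ((shn 1 g # Vs [0..<p]) @ Vs (rev [0..<p]))"
    using E_cong_right[OF s4] by blast
  have rs': "run (s # u) [shn 1 g] = Some (s # u1)"
    using step_shn[of "[s]" 1 u g] st by simp
  have s5: "E (s # u1) (Vs ([0..<p] @ rev [0..<p])) []" using lu by (intro E_cancel) (auto simp: valid_upt)
  have E5: "E (s # u) ([shn 1 g] @ Vs ([0..<p] @ rev [0..<p]) @ []) ([shn 1 g] @ [] @ [])"
    using E_cong[OF s5 rs'] by blast
  note E1' = E1[simplified] and E2' = E2[simplified] and E3' = E3[simplified]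
    and E4' = E4[simplified] and E5' = E5[simplified]
  have F: "E (s # u) (Vs [0..<p] @ Vs [p..<p+t] @ Vs [p+t..<length u] @ g # Vs (rev [p+bo..<length u1]) @ Vs (rev [p..<p+bo]) @ Vs (rev [0..<p])) [shn 1 g]"
    using E_trans[OF E_trans[OF E_trans[OF E_trans[OF E1' E2'] E3'] E4'] E5'] by simp
  have "E (s # u) (Vs [0..<length u] @ [g] @ Vs (rev [0..<length u1])) [shn 1 g]"
    using F unfolding L1 L2 by simp
  then show ?thesis by (rule E_sym)
qed

lemma run_rt: "run (s # u) (Vs [0..<length u]) = Some (u @ [s])"
  using run_Vs[of "s # u" "[0..<length u]"] vapply_front_end[of u s "[]"] by (simp add: valid_upt)

lemma detour: "run u W = Some u' \<Longrightarrow> E (s # u) (map (shn 1) W) (Vs [0..<length u] @ W @ Vs (rev [0..<length u']))"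
proof (induction W arbitrary: u)
  case Nil
  then have "u' = u" by simp
  then show ?case using E_sym[OF E_cancel[of "s # u" "[0..<length u]"]] by (simp add: valid_upt)
next
  case (Cons g W)
  obtain u1 where u1: "step u g = Some u1" "run u1 W = Some u'" using Cons.prems by (auto split: option.splits)
  have D1: "E (s # u) [shn 1 g] (Vs [0..<length u] @ [g] @ Vs (rev [0..<length u1]))" using detour1[OF u1(1)] .
  have Ea: "E (s # u) ([shn 1 g] @ map (shn 1) W) ((Vs [0..<length u] @ [g] @ Vs (rev [0..<length u1])) @ map (shn 1) W)"
    using E_cong_right[OF D1] .
  have rs: "run (s # u) [shn 1 g] = Some (s # u1)" using step_shn[of "[s]" 1 u g] u1 by simp
  have rD: "run (s # u) (Vs [0..<length u] @ [g] @ Vs (rev [0..<length u1])) = Some (s # u1)"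
    using E_run[OF D1] rs by simp
  have Eb: "E (s # u) ((Vs [0..<length u] @ [g] @ Vs (rev [0..<length u1])) @ map (shn 1) W)
      ((Vs [0..<length u] @ [g] @ Vs (rev [0..<length u1])) @ (Vs [0..<length u1] @ W @ Vs (rev [0..<length u'])))"
    using E_cong_left[OF Cons.IH[OF u1(2)] rD] .
  have rg: "run (s # u) (Vs [0..<length u] @ [g]) = Some (u1 @ [s])"
    using run_append_Some[OF run_rt[of s u], of "[g]"] step_ext[OF u1(1), of "[s]"] by simp
  have c: "E (u1 @ [s]) (Vs (rev [0..<length u1] @ [0..<length u1])) []"
    by (intro E_cancel') (auto simp: valid_upt)
  have Ec: "E (s # u) ((Vs [0..<length u] @ [g]) @ Vs (rev [0..<length u1] @ [0..<length u1]) @ (W @ Vs (rev [0..<length u'])))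
     ((Vs [0..<length u] @ [g]) @ [] @ (W @ Vs (rev [0..<length u'])))"
    using E_cong[OF c rg] .
  show ?case using E_trans[OF E_trans[OF Ea[simplified] Eb[simplified]] Ec[simplified]] by simp
qed

definition nT :: "bool list \<Rightarrow> nat" where "nT w = length (filter id w)"
definition nF :: "bool list \<Rightarrow> nat" where "nF w = length (filter Not w)"

lemma nT_simps[simp]: "nT [] = 0" "nT (True # w) = Suc (nT w)" "nT (False # w) = nT w"
  by (auto simp: nT_def)
lemma nF_simps[simp]: "nF [] = 0" "nF (True # w) = nF w" "nF (False # w) = Suc (nF w)"
  by (auto simp: nF_def)

fun sh :: "bool list \<Rightarrow> nat list" where
  "sh [] = []"
| "sh (True # w) = map Suc (sh w)"
| "sh (False # w) = rev [0..<nT w] @ map Suc (sh w)"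

definition RT :: "bool list \<Rightarrow> bool list" where "RT w = replicate (nT w) True @ replicate (nF w) False"

lemma length_RT[simp]: "length (RT w) = length w"
  unfolding RT_def nT_def nF_def by (induction w) auto

lemma RT_simps: "RT (True # w) = True # RT w" "RT (False # w) = replicate (nT w) True @ False # replicate (nF w) False"
  by (auto simp: RT_def replicate_app_Cons_same)

lemma plus1_Suc: "((+) (Suc 0)) = Suc" by (rule ext) simp

lemma move_front: "vapply (rev [0..<length A]) (A @ y # B) = y # A @ B"
proof -
  have "vapply ([0..<length A] @ rev [0..<length A]) (y # A @ B) = y # A @ B"
    using VE_vapply[OF VE_cancel[of "length (y # A @ B)" "[0..<length A]"], of "y # A @ B"] by (simp add: valid_upt)
  then show ?thesis using vapply_front_end[of A y B] by (simp add: vapply_append)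
qed

lemma sh_run: "valid (length w) (sh w) \<and> vapply (sh w) (RT w) = w"
proof (induction w)
  case Nil then show ?case by (simp add: RT_def)
next
  case (Cons c w)
  show ?case
  proof (cases c)
    case True
    have "vapply (map ((+) (length [True])) (sh w)) ([True] @ RT w) = [True] @ vapply (sh w) (RT w)"
      using Cons by (intro vapply_shift) auto
    then show ?thesis using Cons True by (auto simp: RT_simps valid_def plus1_Suc)
  next
    case False
    have v1: "vapply (rev [0..<nT w]) (replicate (nT w) True @ False # replicate (nF w) False) = False # RT w"
      using move_front[of "replicate (nT w) True" False "replicate (nF w) False"] by (simp add: RT_def)
    have "vapply (map ((+) (length [False])) (sh w)) ([False] @ RT w) = [False] @ vapply (sh w) (RT w)"
      using Cons by (intro vapply_shift) auto
    then have v2: "vapply (map Suc (sh w)) (False # RT w) = False # w" using Cons by (simp add: plus1_Suc)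
    have "nT w \<le> length w" unfolding nT_def by simp
    then show ?thesis using Cons False v1 v2 by (auto simp: RT_simps valid_def vapply_append)
  qed
qed

lemma nT_append[simp]: "nT (u @ v) = nT u + nT v" by (simp add: nT_def)

lemma nT_take2: "Suc i < length w \<Longrightarrow> w ! i \<Longrightarrow> w ! Suc i \<Longrightarrow> Suc (Suc (nT (take i w))) \<le> nT w"
proof -
  assume a: "Suc i < length w" "w ! i" "w ! Suc i"
  then obtain A p q B where w: "w = A @ p # q # B" "length A = i" using split2 by blast
  then have "p" "q" using a by (auto simp: nth_append)
  then show ?thesis using w by (simp add: nT_def)
qed

lemma rev_X: "Suc (Suc j) \<le> a \<Longrightarrow> a < length x \<Longrightarrow> E x (Vs (rev [0..<a]) @ [X t (Suc j)]) (X t j # Vs (rev [0..<a]))"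
proof -
  assume h: "Suc (Suc j) \<le> a" "a < length x"
  have ra: "rev [0..<a] = rev [Suc (Suc j)..<a] @ [Suc j, j] @ rev [0..<j]"
  proof -
    have "[0..<a] = [0..<j] @ [j, Suc j] @ [Suc (Suc j)..<a]"
      using h upt_split[of 0 j a] upt_split[of j "Suc (Suc j)" a] by (simp add: upt_conv_Cons)
    then show ?thesis by simp
  qed
  define x2 where "x2 = vapply (rev [Suc (Suc j)..<a]) x"
  define x3 where "x3 = vapply [Suc j, j] x2"
  have r2: "run x (Vs (rev [Suc (Suc j)..<a])) = Some x2" unfolding x2_def using h by (intro run_Vs) (auto simp: valid_def)
  have l2: "length x2 = length x" unfolding x2_def using h by (intro length_vapply) (auto simp: valid_def)
  have r3: "run x2 (Vs [Suc j, j]) = Some x3" unfolding x3_def using h l2 by (intro run_Vs) auto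
  have l3: "length x3 = length x" unfolding x3_def using h l2 by (intro length_vapply[THEN trans]) auto
  have r23: "run x (Vs (rev [Suc (Suc j)..<a]) @ Vs [Suc j, j]) = Some x3" using run_append_Some[OF r2] r3 by simp
  have S1: "E x3 (Vs (rev [0..<j]) @ [X t (Suc j)]) (X t (Suc j) # Vs (rev [0..<j]))"
  proof (intro comm_left)
    have "run x3 (Vs (rev [0..<j])) = Some (vapply (rev [0..<j]) x3)" using h l3 by (intro run_Vs) (auto simp: valid_def)
    moreover have "length (vapply (rev [0..<j]) x3) = length x" using h l3 by (intro length_vapply[THEN trans]) (auto simp: valid_def)
    ultimately show "run x3 (Vs (rev [0..<j]) @ [X t (Suc j)]) \<noteq> None" using h by (simp add: run_append)
  qed auto
  have S2: "E x2 [V (Suc j), V j, X t (Suc j)] [X t j, V (Suc j), V j]" using h l2 by (intro E_V4b) auto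
  have S3: "E x (Vs (rev [Suc (Suc j)..<a]) @ [X t j]) (X t j # Vs (map (\<lambda>q. q + bot_ar (X t j) - top_ar (X t j)) (rev [Suc (Suc j)..<a])))"
  proof (intro comm_right)
    show "run x (Vs (rev [Suc (Suc j)..<a]) @ [X t j]) \<noteq> None" using r2 l2 h by (simp add: run_append)
  qed auto
  have E1: "E x (Vs (rev [Suc (Suc j)..<a]) @ Vs [Suc j, j] @ (Vs (rev [0..<j]) @ [X t (Suc j)]))
      (Vs (rev [Suc (Suc j)..<a]) @ Vs [Suc j, j] @ (X t (Suc j) # Vs (rev [0..<j])))"
    using E_cong_left[OF S1 r23] by simp
  have E2: "E x (Vs (rev [Suc (Suc j)..<a]) @ [V (Suc j), V j, X t (Suc j)] @ Vs (rev [0..<j]))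
      (Vs (rev [Suc (Suc j)..<a]) @ [X t j, V (Suc j), V j] @ Vs (rev [0..<j]))"
    using E_cong[OF S2 r2] by blast
  have E3: "E x ((Vs (rev [Suc (Suc j)..<a]) @ [X t j]) @ ([V (Suc j), V j] @ Vs (rev [0..<j])))
      ((X t j # Vs (rev [Suc (Suc j)..<a])) @ ([V (Suc j), V j] @ Vs (rev [0..<j])))"
    using E_cong_right[OF S3] by simp
  show ?thesis using E_trans[OF E_trans[OF E1[simplified] E2[simplified]] E3[simplified]] ra by simp
qed

lemma map_shn_Vs: "map (shn n) (Vs u) = Vs (map (\<lambda>i. i + n) u)" by (simp add: Vs_def)

lemma sh_X: "Suc i < length w \<Longrightarrow> w ! i \<Longrightarrow> w ! Suc i \<Longrightarrow>
  E (RT w) (Vs (sh w) @ [X t i]) (X t (nT (take i w)) # Vs (sh w))"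
proof (induction w arbitrary: i)
  case Nil then show ?case by simp
next
  case (Cons c w)
  have rr: "run (RT (c # w)) (Vs (sh (c # w))) = Some (c # w)" using sh_run[of "c # w"] run_Vs by simp
  show ?case
  proof (cases c)
    case True
    show ?thesis
    proof (cases i)
      case 0
      then obtain w' where w': "w = True # w'" using Cons.prems by (cases w) auto
      have "E (RT (c # w)) (Vs (sh (c # w)) @ [X t 0]) (X t 0 # Vs (map (\<lambda>q. q + bot_ar (X t 0) - top_ar (X t 0)) (sh (c # w))))"
      proof (intro comm_right)
        show "run (RT (c # w)) (Vs (sh (c # w)) @ [X t 0]) \<noteq> None" using rr w' by (simp add: run_append)
        show "\<forall>q\<in>set (sh (c # w)). pos (X t 0) + top_ar (X t 0) \<le> q" using True w' by auto
      qed
      then show ?thesis using 0 by simp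
    next
      case (Suc i')
      have IH: "E (RT w) (Vs (sh w) @ [X t i']) (X t (nT (take i' w)) # Vs (sh w))"
        using Cons.prems Suc by (intro Cons.IH) auto
      from E_shn[OF IH, of "[True]" 1] show ?thesis using True Suc
        by (simp add: RT_simps map_shn_Vs)
    qed
  next
    case False
    then obtain i' where i: "i = Suc i'" using Cons.prems by (cases i) auto
    have IH: "E (RT w) (Vs (sh w) @ [X t i']) (X t (nT (take i' w)) # Vs (sh w))"
      using Cons.prems i by (intro Cons.IH) auto
    have IH2: "E (False # RT w) (Vs (map Suc (sh w)) @ [X t (Suc i')]) (X t (Suc (nT (take i' w))) # Vs (map Suc (sh w)))"
      using E_shn[OF IH, of "[False]" 1] by (simp add: map_shn_Vs)
    have r0: "run (RT (False # w)) (Vs (rev [0..<nT w])) = Some (False # RT w)"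
      using run_Vs[of "RT (False # w)" "rev [0..<nT w]"] move_front[of "replicate (nT w) True" False "replicate (nF w) False"]
      by (simp add: RT_simps valid_def RT_def)
    have E1: "E (RT (False # w)) (Vs (rev [0..<nT w]) @ (Vs (map Suc (sh w)) @ [X t (Suc i')]))
       (Vs (rev [0..<nT w]) @ (X t (Suc (nT (take i' w))) # Vs (map Suc (sh w))))"
      using E_cong_left[OF IH2 r0] .
    have b: "Suc (Suc (nT (take i' w))) \<le> nT w" using Cons.prems i by (intro nT_take2) auto
    have c: "nT w < length (RT (False # w))" unfolding nT_def by (simp add: less_Suc_eq_le)
    have E2: "E (RT (False # w)) ((Vs (rev [0..<nT w]) @ [X t (Suc (nT (take i' w)))]) @ Vs (map Suc (sh w)))
       ((X t (nT (take i' w)) # Vs (rev [0..<nT w])) @ Vs (map Suc (sh w)))"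
      using E_cong_right[OF rev_X[OF b c]] .
    show ?thesis using E_trans[OF E1[simplified] E2[simplified]] False i by simp
  qed
qed

lemma comm_gen:
  "(\<forall>h\<in>set H. pos g + top_ar g \<le> pos h) \<Longrightarrow> top_ar g = bot_ar g \<Longrightarrow> run x (H @ [g]) \<noteq> None \<Longrightarrow>
   E x (H @ [g]) (g # H)"
proof (induction H arbitrary: x)
  case Nil then show ?case by simp
next
  case (Cons h H)
  obtain x1 where x1: "step x h = Some x1" using Cons.prems by (auto split: option.splits)
  have r: "run x [h] = Some x1" using x1 by simp
  have "E x1 (H @ [g]) (g # H)" using Cons x1 by (intro Cons.IH) auto
  then have 1: "E x ([h] @ H @ [g]) ([h] @ g # H)" using E_cong_left[OF _ r] by blast
  have rr: "run x [h, g] \<noteq> None" using E_run[OF 1] Cons.prems by (auto simp: run_append split: option.splits)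
  have "E x [h, g] [g, setpos h (pos h + bot_ar g - top_ar g)]" using Cons rr by (intro E_interchange') auto
  then have "E x [h, g] [g, h]" using Cons by simp
  then have 2: "E x ([h, g] @ H) ([g, h] @ H)" using E_cong_right by blast
  show ?case using E_trans[OF 1[simplified] 2[simplified]] by simp
qed

definition caps :: "nat \<Rightarrow> nat \<Rightarrow> gen list" where "caps a b = map (Cap True) [a..<b]"
definition cups :: "nat \<Rightarrow> nat \<Rightarrow> gen list" where "cups a b = map Cup (rev [a..<b])"
definition NN :: "nat \<Rightarrow> nat \<Rightarrow> bgen list \<Rightarrow> gen list" where
  "NN n k \<beta> = caps 0 n @ map bgen_to_gen \<beta> @ cups k n"

lemma NN_closure: "NN n 0 \<beta> = braid_closure n \<beta>"
  by (simp add: NN_def braid_closure_def caps_def cups_def)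

lemma RR_Suc: "RR (Suc m) = replicate m True @ True # False # replicate m False"
  by (simp add: RR_def replicate_append_same[symmetric])

lemma run_cap_RR: "run (RR m) [Cap True m] = Some (RR (Suc m))"
  by (simp add: RR_def RR_Suc replicate_append_same[symmetric])

lemma run_cup_RR: "run (RR (Suc m)) [Cup m] = Some (RR m)"
proof -
  have "step (replicate m True @ [True, False] @ replicate m False) (Cup m) = Some (replicate m True @ [] @ replicate m False)"
    using step_app[of "replicate m True" "Cup m" "[True, False]" "replicate m False"] by simp
  then show ?thesis unfolding RR_Suc by (simp add: RR_def del: step.simps)
qed

lemma run_caps: "c \<le> m \<Longrightarrow> run (RR c) (caps c m) = Some (RR m)"
proof (induction m)
  case 0 then show ?case by (simp add: caps_def)
next
  case (Suc m)
  show ?case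
  proof (cases "c = Suc m")
    case True then show ?thesis by (simp add: caps_def)
  next
    case False
    then have "caps c (Suc m) = caps c m @ [Cap True m]" "c \<le> m" using Suc by (auto simp: caps_def)
    then show ?thesis using Suc run_append_Some[of "RR c" "caps c m" "RR m" "[Cap True m]"] run_cap_RR by simp
  qed
qed

lemma run_cups: "k \<le> m \<Longrightarrow> run (RR m) (cups k m) = Some (RR k)"
proof (induction m)
  case 0 then show ?case by (simp add: cups_def)
next
  case (Suc m)
  show ?case
  proof (cases "k = Suc m")
    case True then show ?thesis by (simp add: cups_def)
  next
    case False
    then have "cups k (Suc m) = [Cup m] @ cups k m" "k \<le> m" using Suc by (auto simp: cups_def)
    then show ?thesis using Suc run_append_Some[OF run_cup_RR[of m], of "cups k m"] by simp
  qed
qed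

lemma RR_nth: "i < m \<Longrightarrow> RR m ! i = True" "m \<le> i \<Longrightarrow> i < 2 * m \<Longrightarrow> RR m ! i = False"
  by (auto simp: RR_def nth_append)

lemma step_braid: "bgen_ok n g \<Longrightarrow> step (RR n) (bgen_to_gen g) = Some (RR n)"
proof (cases g)
  case (BX t p)
  assume a: "bgen_ok n g"
  then have p: "Suc p < n" using BX by simp
  then obtain A a b B where x: "RR n = A @ a # b # B" "length A = p" using split2[of p "RR n"] by auto
  have "a = True" "b = True" using RR_nth(1)[of p n] RR_nth(1)[of "Suc p" n] p x by (auto simp: nth_append)
  then show ?thesis using BX x by (simp add: nth_append)
next
  case (BV p)
  assume a: "bgen_ok n g"
  then have p: "Suc p < n" using BV by simp
  then obtain A a b B where x: "RR n = A @ a # b # B" "length A = p" using split2[of p "RR n"] by auto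
  have "a = True" "b = True" using RR_nth(1)[of p n] RR_nth(1)[of "Suc p" n] p x by (auto simp: nth_append)
  then show ?thesis using BV x by (simp add: nth_append)
next
  case (BB p)
  assume a: "bgen_ok n g"
  then show ?thesis using BB by simp
qed

lemma run_braid: "twisted_braid n \<beta> \<Longrightarrow> run (RR n) (map bgen_to_gen \<beta>) = Some (RR n)"
  by (induction \<beta>) (auto simp: twisted_braid_def step_braid simp del: step.simps)

lemma run_NN: "k \<le> n \<Longrightarrow> twisted_braid n \<beta> \<Longrightarrow> run [] (NN n k \<beta>) = Some (RR k)"
proof -
  assume a: "k \<le> n" "twisted_braid n \<beta>"
  have "run [] (caps 0 n) = Some (RR n)" using run_caps[of 0 n] by (simp add: RR_def)
  then show ?thesis unfolding NN_def using a run_braid run_cups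
    by (simp add: run_append_Some)
qed

lemma L1:
  assumes "twisted_braid n \<beta>" "k \<le> n" "bgen_ok k g"
  shows "E [] (NN n k \<beta> @ [bgen_to_gen g]) (NN n k (\<beta> @ [g]))"
proof -
  have r0: "run [] (caps 0 n @ map bgen_to_gen \<beta>) = Some (RR n)"
    using run_caps[of 0 n] run_braid[OF assms(1)] by (simp add: RR_def run_append_Some)
  have g: "pos (bgen_to_gen g) + top_ar (bgen_to_gen g) \<le> k" "top_ar (bgen_to_gen g) = bot_ar (bgen_to_gen g)"
    using assms(3) by (cases g; auto)+
  have okn: "bgen_ok n g" using assms(2,3) by (cases g) auto
  have rr: "run (RR n) (cups k n @ [bgen_to_gen g]) \<noteq> None"
  proof -
    have "run (RR k) [bgen_to_gen g] = Some (RR k)" using step_braid[OF assms(3)] by simp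
    then show ?thesis using run_append_Some[OF run_cups[OF assms(2)]] by simp
  qed
  have "E (RR n) (cups k n @ [bgen_to_gen g]) (bgen_to_gen g # cups k n)"
    using g rr by (intro comm_gen) (auto simp: cups_def)
  from E_cong_left[OF this r0] show ?thesis unfolding NN_def by simp
qed

lemma comm_gen2:
  "(\<forall>h\<in>set H. pos h + top_ar h \<le> pos g \<and> top_ar h = bot_ar h) \<Longrightarrow> run x (H @ [g]) \<noteq> None \<Longrightarrow>
   E x (H @ [g]) (g # H)"
proof (induction H arbitrary: x)
  case Nil then show ?case by simp
next
  case (Cons h H)
  obtain x1 where x1: "step x h = Some x1" using Cons.prems by (auto split: option.splits)
  have r: "run x [h] = Some x1" using x1 by simp
  have "E x1 (H @ [g]) (g # H)" using Cons x1 by (intro Cons.IH) auto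
  then have 1: "E x ([h] @ H @ [g]) ([h] @ g # H)" using E_cong_left[OF _ r] by blast
  have rr: "run x [h, g] \<noteq> None" using E_run[OF 1] Cons.prems by (auto simp: run_append split: option.splits)
  have "E x [h, setpos g (pos g + bot_ar h - top_ar h)] [g, h]" using Cons rr by (intro E_interchange2) auto
  then have "E x [h, g] [g, h]" using Cons by simp
  then have 2: "E x ([h, g] @ H) ([g, h] @ H)" using E_cong_right by blast
  show ?case using E_trans[OF 1[simplified] 2[simplified]] by simp
qed

lemma length_RR'[simp]: "length (RR k) = 2 * k" by (simp add: RR_def)

lemma P_cups: "k \<le> m \<Longrightarrow> k \<le> q \<Longrightarrow> Suc q < 2*k \<Longrightarrow> E (RR m) (cups k m @ [V q]) (V (q + 2*(m-k)) # cups k m)"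
proof (induction m)
  case 0 then show ?case by (simp add: cups_def)
next
  case (Suc m)
  show ?case
  proof (cases "k = Suc m")
    case True then show ?thesis by (simp add: cups_def)
  next
    case False
    then have km: "k \<le> m" using Suc by simp
    have cs: "cups k (Suc m) = Cup m # cups k m" using km by (simp add: cups_def)
    have IH: "E (RR m) (cups k m @ [V q]) (V (q + 2*(m-k)) # cups k m)" using Suc km by auto
    have 1: "E (RR (Suc m)) ([Cup m] @ (cups k m @ [V q])) ([Cup m] @ (V (q + 2*(m-k)) # cups k m))"
      using E_cong_left[OF IH run_cup_RR] .
    have rr: "run (RR (Suc m)) [Cup m, V (q + 2*(m-k))] \<noteq> None"
      using run_append_Some[OF run_cup_RR[of m], of "[V (q + 2*(m-k))]"] Suc km by (simp add: step_V_swp del: step.simps)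
    have "E (RR (Suc m)) [Cup m, setpos (V (q + 2*(m-k) + 2)) (pos (V (q + 2*(m-k) + 2)) + bot_ar (Cup m) - top_ar (Cup m))] [V (q + 2*(m-k) + 2), Cup m]"
      using rr Suc km by (intro E_interchange2) auto
    then have "E (RR (Suc m)) [Cup m, V (q + 2*(m-k))] [V (q + 2*(Suc m-k)), Cup m]"
      using km by (simp add: Suc_diff_le)
    then have 2: "E (RR (Suc m)) ([Cup m, V (q + 2*(m-k))] @ cups k m) ([V (q + 2*(Suc m-k)), Cup m] @ cups k m)"
      using E_cong_right by blast
    show ?thesis using E_trans[OF 1[simplified] 2[simplified]] cs by simp
  qed
qed

lemma P_caps_a: "c + 2 \<le> m \<Longrightarrow> E (RR (c+2)) (caps (c+2) m @ [V (2*m - 2 - c)]) (V (c+2) # caps (c+2) m)"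
proof (induction m)
  case 0 then show ?case by simp
next
  case (Suc m)
  show ?case
  proof (cases "c + 2 = Suc m")
    case True
    then have "2 * Suc m - 2 - c = c + 2" by arith
    then show ?thesis using True by (simp add: caps_def)
  next
    case False
    then have cm: "c + 2 \<le> m" using Suc by simp
    have cs: "caps (c+2) (Suc m) = caps (c+2) m @ [Cap True m]" using cm by (simp add: caps_def)
    have rc: "run (RR (c+2)) (caps (c+2) m) = Some (RR m)" using run_caps cm by blast
    have rr: "run (RR m) [Cap True m, V (2*m - c)] \<noteq> None"
      using run_append_Some[OF run_cap_RR[of m], of "[V (2*m - c)]"] cm by (simp add: step_V_swp del: step.simps)
    have "E (RR m) [Cap True m, setpos (V (2*m - c - 2)) (pos (V (2*m - c - 2)) + bot_ar (Cap True m) - top_ar (Cap True m))] [V (2*m - c - 2), Cap True m]"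
      using rr cm by (intro E_interchange2) (auto simp: numeral_2_eq_2)
    moreover have "2*m - c - 2 + 2 = 2 * Suc m - 2 - c" using cm by simp
    ultimately have "E (RR m) [Cap True m, V (2 * Suc m - 2 - c)] [V (2*m - 2 - c), Cap True m]" by simp
    from E_cong_left[OF this rc] have 1: "E (RR (c+2)) (caps (c+2) m @ [Cap True m, V (2 * Suc m - 2 - c)]) (caps (c+2) m @ [V (2*m - 2 - c), Cap True m])" .
    have 2: "E (RR (c+2)) ((caps (c+2) m @ [V (2*m - 2 - c)]) @ [Cap True m]) ((V (c+2) # caps (c+2) m) @ [Cap True m])"
      using E_cong_right[OF Suc.IH[OF cm]] .
    show ?thesis using E_trans[OF 1[simplified] 2[simplified]] cs by simp
  qed
qed

lemma P_caps_b: "E (RR c) [Cap True c, Cap True (Suc c), V (Suc (Suc c))] [Cap True c, Cap True (Suc c), V c]"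
proof -
  have r: "run (RR c) [Cap True c] = Some (RR (Suc c))" by (rule run_cap_RR)
  have "E (RR c) [Cap True c, Cap True (Suc c), V (Suc (Suc c))] [Cap True c, Cap True (Suc (Suc c)), V (Suc c)]"
    using E_cong_left[OF E_pfVcap[of "Suc c" "RR (Suc c)" True] r] by simp
  also have "E (RR c) [Cap True c, Cap True (Suc (Suc c)), V (Suc c)] [Cap True c, Cap True c, V (Suc c)]"
  proof -
    have "E (RR c) [Cap True c, Cap True c] [Cap True c, setpos (Cap True c) (pos (Cap True c) + bot_ar (Cap True c) - top_ar (Cap True c))]"
      by (intro E_interchange') (auto simp: RR_def)
    then have "E (RR c) [Cap True c, Cap True c] [Cap True c, Cap True (Suc (Suc c))]" by (simp add: numeral_2_eq_2)
    from E_cong_right[OF E_sym[OF this], of "[V (Suc c)]"] show ?thesis by simp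
  qed
  also have "E (RR c) [Cap True c, Cap True c, V (Suc c)] [Cap True c, Cap True (Suc c), V c]"
    using E_cong_left[OF E_pfVcap[of c "RR (Suc c)" True] r] by simp
  finally show ?thesis .
qed

lemma P_caps: "Suc c < n \<Longrightarrow> E [] (caps 0 n @ [V (2*n - 2 - c)]) (caps 0 n @ [V c])"
proof -
  assume h: "Suc c < n"
  have cs: "caps 0 n = caps 0 c @ [Cap True c, Cap True (Suc c)] @ caps (c+2) n"
    using h upt_split[of 0 c n] upt_split[of c "c+2" n] by (simp add: caps_def upt_conv_Cons)
  have r0: "run [] (caps 0 c) = Some (RR c)" using run_caps[of 0 c] by (simp add: RR_def)
  have r2: "run [] (caps 0 c @ [Cap True c, Cap True (Suc c)]) = Some (RR (c+2))"
    using run_caps[of 0 "c+2"] h by (simp add: RR_def caps_def)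
  have pa: "E (RR (c+2)) (caps (c+2) n @ [V (2*n - 2 - c)]) (V (c+2) # caps (c+2) n)" using P_caps_a[of c n] h by simp
  have E1: "E [] ((caps 0 c @ [Cap True c, Cap True (Suc c)]) @ (caps (c+2) n @ [V (2*n - 2 - c)]) @ [])
     ((caps 0 c @ [Cap True c, Cap True (Suc c)]) @ (V (c+2) # caps (c+2) n) @ [])"
    using E_cong[OF pa r2] .
  have E2: "E [] (caps 0 c @ [Cap True c, Cap True (Suc c), V (Suc (Suc c))] @ caps (c+2) n)
     (caps 0 c @ [Cap True c, Cap True (Suc c), V c] @ caps (c+2) n)"
    using E_cong[OF P_caps_b r0] .
  have rr: "run (RR (c+2)) (caps (c+2) n @ [V c]) \<noteq> None"
    using run_append_Some[OF run_caps[of "c+2" n], of "[V c]"] h by (simp add: step_V_swp del: step.simps)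
  have "E (RR (c+2)) (caps (c+2) n @ [V c]) (V c # caps (c+2) n)"
    using rr by (intro comm_gen) (auto simp: caps_def)
  have E3: "E [] ((caps 0 c @ [Cap True c, Cap True (Suc c)]) @ (V c # caps (c+2) n) @ [])
     ((caps 0 c @ [Cap True c, Cap True (Suc c)]) @ (caps (c+2) n @ [V c]) @ [])"
    using E_cong[OF E_sym[OF \<open>E (RR (c+2)) (caps (c+2) n @ [V c]) (V c # caps (c+2) n)\<close>] r2] .
  show ?thesis using E_trans[OF E_trans[OF E1[simplified] E2[simplified]] E3[simplified]] cs by simp
qed

lemma run_cb: "twisted_braid n \<beta> \<Longrightarrow> run [] (caps 0 n @ map bgen_to_gen \<beta>) = Some (RR n)"
  using run_caps[of 0 n] run_braid by (simp add: RR_def run_append_Some)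

lemma L2:
  assumes "twisted_braid n \<beta>" "k \<le> n" "k \<le> q" "Suc q < 2*k"
  shows "E [] (NN n k \<beta> @ [V q]) (NN n k (BV (2*k - 2 - q) # \<beta>))"
proof -
  define P where "P = q + 2*(n-k)"
  define c where "c = 2*k - 2 - q"
  have cn: "Suc c < n" "2*n - 2 - c = P" "n \<le> P" "Suc P < 2*n" using assms unfolding c_def P_def by auto
  have r0: "run [] (caps 0 n @ map bgen_to_gen \<beta>) = Some (RR n)" using run_cb assms by blast
  have rc: "run [] (caps 0 n) = Some (RR n)" using run_caps[of 0 n] by (simp add: RR_def)
  have S1: "E (RR n) (cups k n @ [V q]) (V P # cups k n)" using P_cups[of k n q] assms unfolding P_def by simp
  have E1: "E [] ((caps 0 n @ map bgen_to_gen \<beta>) @ (cups k n @ [V q])) ((caps 0 n @ map bgen_to_gen \<beta>) @ (V P # cups k n))"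
    using E_cong_left[OF S1 r0] .
  have S2: "E (RR n) (map bgen_to_gen \<beta> @ [V P]) (V P # map bgen_to_gen \<beta>)"
  proof (intro comm_gen2)
    show "\<forall>h\<in>set (map bgen_to_gen \<beta>). pos h + top_ar h \<le> pos (V P) \<and> top_ar h = bot_ar h"
    proof
      fix h assume "h \<in> set (map bgen_to_gen \<beta>)"
      then obtain g where g: "g \<in> set \<beta>" "h = bgen_to_gen g" by auto
      then have "bgen_ok n g" using assms(1) by (auto simp: twisted_braid_def)
      then show "pos h + top_ar h \<le> pos (V P) \<and> top_ar h = bot_ar h" using g cn by (cases g) auto
    qed
    show "run (RR n) (map bgen_to_gen \<beta> @ [V P]) \<noteq> None"
      using run_append_Some[OF run_braid[OF assms(1)], of "[V P]"] cn by (simp add: step_V_swp del: step.simps)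
  qed
  have E2: "E [] (caps 0 n @ (map bgen_to_gen \<beta> @ [V P]) @ cups k n) (caps 0 n @ (V P # map bgen_to_gen \<beta>) @ cups k n)"
    using E_cong[OF S2 rc] .
  have S3: "E [] (caps 0 n @ [V P]) (caps 0 n @ [V c])" using P_caps[OF cn(1)] cn(2) by simp
  have E3: "E [] ((caps 0 n @ [V P]) @ (map bgen_to_gen \<beta> @ cups k n)) ((caps 0 n @ [V c]) @ (map bgen_to_gen \<beta> @ cups k n))"
    using E_cong_right[OF S3] .
  show ?thesis using E_trans[OF E_trans[OF E1[simplified] E2[simplified]] E3[simplified]] unfolding NN_def c_def by simp
qed

lemma absorb_T: "twisted_braid n \<beta> \<Longrightarrow> k \<le> n \<Longrightarrow> valid k u \<Longrightarrow>
  \<exists>\<beta>'. twisted_braid n \<beta>' \<and> E [] (NN n k \<beta> @ Vs u) (NN n k \<beta>')"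
proof (induction u arbitrary: \<beta>)
  case Nil then show ?case by auto
next
  case (Cons i u)
  have 1: "E [] (NN n k \<beta> @ [V i]) (NN n k (\<beta> @ [BV i]))" using L1[of n \<beta> k "BV i"] Cons.prems by simp
  have tb: "twisted_braid n (\<beta> @ [BV i])" using Cons.prems by (auto simp: twisted_braid_def)
  obtain \<beta>' where b: "twisted_braid n \<beta>'" "E [] (NN n k (\<beta> @ [BV i]) @ Vs u) (NN n k \<beta>')"
    using Cons.IH[OF tb] Cons.prems by auto
  have "E [] ((NN n k \<beta> @ [V i]) @ Vs u) (NN n k (\<beta> @ [BV i]) @ Vs u)" using E_cong_right[OF 1] .
  from E_trans[OF this b(2)] show ?case using b(1) by auto
qed

lemma absorb_F: "twisted_braid n \<beta> \<Longrightarrow> k \<le> n \<Longrightarrow> valid k u \<Longrightarrow>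
  \<exists>\<beta>'. twisted_braid n \<beta>' \<and> E [] (NN n k \<beta> @ Vs (map ((+) k) u)) (NN n k \<beta>')"
proof (induction u arbitrary: \<beta>)
  case Nil then show ?case by auto
next
  case (Cons i u)
  have 1: "E [] (NN n k \<beta> @ [V (k + i)]) (NN n k (BV (2*k - 2 - (k + i)) # \<beta>))" using L2[of n \<beta> k "k + i"] Cons.prems by simp
  have tb: "twisted_braid n (BV (2*k - 2 - (k + i)) # \<beta>)" using Cons.prems by (auto simp: twisted_braid_def)
  obtain \<beta>' where b: "twisted_braid n \<beta>'" "E [] (NN n k (BV (2*k - 2 - (k + i)) # \<beta>) @ Vs (map ((+) k) u)) (NN n k \<beta>')"
    using Cons.IH[OF tb] Cons.prems by auto
  have "E [] ((NN n k \<beta> @ [V (k + i)]) @ Vs (map ((+) k) u)) (NN n k (BV (2*k - 2 - (k + i)) # \<beta>) @ Vs (map ((+) k) u))" using E_cong_right[OF 1] .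
  from E_trans[OF this b(2)] show ?case using b(1) by auto
qed

lemma absorb: "twisted_braid n \<beta> \<Longrightarrow> k \<le> n \<Longrightarrow> valid (2*k) \<rho> \<Longrightarrow> vapply \<rho> (RR k) = RR k \<Longrightarrow>
  \<exists>\<beta>'. twisted_braid n \<beta>' \<and> E [] (NN n k \<beta> @ Vs \<rho>) (NN n k \<beta>')"
proof -
  assume a: "twisted_braid n \<beta>" "k \<le> n" "valid (2*k) \<rho>" "vapply \<rho> (RR k) = RR k"
  obtain u1 u2 where u: "valid k u1" "valid k u2" "VE (2*k) \<rho> (u1 @ map ((+) k) u2)" using op_decomp[OF a(3,4)] by blast
  have "E (RR k) (Vs \<rho>) (Vs (u1 @ map ((+) k) u2))" using VE_E[OF u(3) a(3)] by simp
  from E_cong_left[OF this run_NN[OF a(2) a(1)]] have 1: "E [] (NN n k \<beta> @ Vs \<rho>) (NN n k \<beta> @ Vs (u1 @ map ((+) k) u2))" .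
  obtain \<beta>1 where b1: "twisted_braid n \<beta>1" "E [] (NN n k \<beta> @ Vs u1) (NN n k \<beta>1)" using absorb_T a u by blast
  obtain \<beta>2 where b2: "twisted_braid n \<beta>2" "E [] (NN n k \<beta>1 @ Vs (map ((+) k) u2)) (NN n k \<beta>2)" using absorb_F b1 a u by blast
  have "E [] ((NN n k \<beta> @ Vs u1) @ Vs (map ((+) k) u2)) (NN n k \<beta>1 @ Vs (map ((+) k) u2))" using E_cong_right[OF b1(2)] .
  from E_trans[OF this b2(2)] have "E [] (NN n k \<beta> @ Vs (u1 @ map ((+) k) u2)) (NN n k \<beta>2)" by simp
  from E_trans[OF 1 this] show ?thesis using b2(1) by auto
qed

fun shb :: "bgen \<Rightarrow> bgen" where
  "shb (BX t i) = BX t (Suc i)" | "shb (BV i) = BV (Suc i)" | "shb (BB i) = BB (Suc i)"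

lemma shb_gen: "bgen_to_gen (shb g) = shn 1 (bgen_to_gen g)" by (cases g) auto

lemma bgen_ok_shb: "bgen_ok n g \<Longrightarrow> bgen_ok (Suc n) (shb g)" by (cases g) auto

lemma NN_shift: "Cap True 0 # map (shn 1) (NN n k \<beta>) = NN (Suc n) (Suc k) (map shb \<beta>)"
proof -
  have 1: "Cap True 0 # map (shn 1) (caps 0 n) = caps 0 (Suc n)"
    by (simp add: caps_def upt_conv_Cons map_Suc_upt[symmetric] del: upt_Suc)
  have 2: "map (shn 1) (map bgen_to_gen \<beta>) = map bgen_to_gen (map shb \<beta>)"
    by (simp add: shb_gen)
  have 3: "map (shn 1) (cups k n) = cups (Suc k) (Suc n)"
  proof -
    have a: "map (shn 1) (cups k n) = map Cup (map Suc (rev [k..<n]))" by (simp add: cups_def)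
    have b: "map Suc (rev [k..<n]) = rev [Suc k..<Suc n]" by (simp only: rev_map[symmetric] map_Suc_upt)
    show ?thesis using a b by (simp add: cups_def del: upt_Suc)
  qed
  have X: "Cap True 0 # map (shn 1) (NN n k \<beta>) = (Cap True 0 # map (shn 1) (caps 0 n)) @ map (shn 1) (map bgen_to_gen \<beta>) @ map (shn 1) (cups k n)"
    by (simp only: NN_def map_append append_Cons)
  have "Cap True 0 # map (shn 1) (NN n k \<beta>) = caps 0 (Suc n) @ map bgen_to_gen (map shb \<beta>) @ cups (Suc k) (Suc n)"
    by (simp only: X 1 2 3 append_Cons[symmetric])
  then show ?thesis by (simp only: NN_def)
qed

lemma twisted_braid_shb: "twisted_braid n \<beta> \<Longrightarrow> twisted_braid (Suc n) (map shb \<beta>)"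
  unfolding twisted_braid_def by (auto intro: bgen_ok_shb)

definition Inv :: "gen list \<Rightarrow> bool list \<Rightarrow> nat \<Rightarrow> bool" where
  "Inv P w n \<longleftrightarrow> run [] P = Some w \<and>
     (\<exists>k \<beta> u. k \<le> n \<and> twisted_braid n \<beta> \<and> valid (2*k) u \<and> E [] P (NN n k \<beta> @ Vs u))"

lemma run_NN_Vs: "k \<le> n \<Longrightarrow> twisted_braid n \<beta> \<Longrightarrow> valid (2*k) u \<Longrightarrow> run [] (NN n k \<beta> @ Vs u) = Some (vapply u (RR k))"
  using run_append_Some[OF run_NN, of k n \<beta> "Vs u"] run_Vs[of "RR k" u] by simp

lemma Inv_state: "run [] P = Some w \<Longrightarrow> k \<le> n \<Longrightarrow> twisted_braid n \<beta> \<Longrightarrow> valid (2*k) u \<Longrightarrow> E [] P (NN n k \<beta> @ Vs u)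
  \<Longrightarrow> vapply u (RR k) = w"
  using E_run run_NN_Vs by fastforce

lemma Inv_trans: "E [] P P' \<Longrightarrow> Inv P' w n \<Longrightarrow> Inv P w n"
  unfolding Inv_def using E_run E_trans by metis

lemma step_V:
  assumes "Inv P w n" "Suc i < length w"
  shows "Inv (P @ [V i]) (swp i w) n"
proof -
  obtain k \<beta> u where d: "k \<le> n" "twisted_braid n \<beta>" "valid (2*k) u" "E [] P (NN n k \<beta> @ Vs u)" "run [] P = Some w"
    using assms unfolding Inv_def by blast
  have w: "vapply u (RR k) = w" using Inv_state d by blast
  have lw: "length w = 2*k" using w d by (metis length_RR' length_vapply)
  have "E [] (P @ [V i]) (NN n k \<beta> @ Vs (u @ [i]))" using E_cong_right[OF d(4), of "[V i]"] by simp
  moreover have "run [] (P @ [V i]) = Some (swp i w)" using run_append_Some[OF d(5)] assms(2) by (simp add: step_V_swp del: step.simps)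
  moreover have "valid (2*k) (u @ [i])" using d lw assms by simp
  ultimately show ?thesis unfolding Inv_def using d by blast
qed

lemma key_cap:
  assumes "k \<le> n" "twisted_braid n \<beta>"
  shows "E [] (NN n k \<beta> @ [Cap False (2*k)]) (NN (Suc n) (Suc k) (map shb \<beta>) @ Vs [0..<Suc (2*k)])"
proof -
  have rN: "run [] (NN n k \<beta>) = Some (RR k)" using run_NN assms by blast
  have rNF: "run [False] (NN n k \<beta>) = Some (RR k @ [False])" using run_ext[OF rN, of "[False]"] by simp
  have D: "E [True, False] (map (shn 1) (NN n k \<beta>)) (Vs [0..<1] @ NN n k \<beta> @ Vs (rev [0..<length (RR k @ [False])]))"
    using detour[OF rNF, of True] by simp
  have r0: "run [] [Cap True 0] = Some [True, False]" by simp
  have E1: "E [] (Cap True 0 # map (shn 1) (NN n k \<beta>)) ([Cap True 0, V 0] @ NN n k \<beta> @ Vs (rev [0..<Suc (2*k)]))"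
    using E_cong_left[OF D r0] by simp
  have tw: "E [] [Cap False 0] [Cap True 0, V 0]" using E_twcap[of 0 "[]" True] by simp
  have E2: "E [] ([Cap True 0, V 0] @ (NN n k \<beta> @ Vs (rev [0..<Suc (2*k)]))) ([Cap False 0] @ (NN n k \<beta> @ Vs (rev [0..<Suc (2*k)])))"
    using E_cong_right[OF E_sym[OF tw]] .
  have ce: "E [] (Cap False 0 # NN n k \<beta>) (NN n k \<beta> @ [Cap False (2*k)])"
    using cap_end[OF rN, of "[]" False] by simp
  have E3: "E [] ((Cap False 0 # NN n k \<beta>) @ Vs (rev [0..<Suc (2*k)])) ((NN n k \<beta> @ [Cap False (2*k)]) @ Vs (rev [0..<Suc (2*k)]))"
    using E_cong_right[OF ce] .
  have F: "E [] (Cap True 0 # map (shn 1) (NN n k \<beta>)) (NN n k \<beta> @ [Cap False (2*k)] @ Vs (rev [0..<Suc (2*k)]))"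
    using E_trans[OF E_trans[OF E1[simplified] E2[simplified]] E3[simplified]] by simp
  have rNC: "run [] (NN n k \<beta> @ [Cap False (2*k)]) = Some (RR k @ [False, True])"
    using run_append_Some[OF rN, of "[Cap False (2*k)]"] by (simp add: RR_def)
  have can: "E (RR k @ [False, True]) (Vs (rev [0..<Suc (2*k)] @ [0..<Suc (2*k)])) []"
    by (intro E_cancel') (auto simp: valid_upt)
  have G: "E [] ((NN n k \<beta> @ [Cap False (2*k)]) @ Vs (rev [0..<Suc (2*k)] @ [0..<Suc (2*k)]) @ []) ((NN n k \<beta> @ [Cap False (2*k)]) @ [] @ [])"
    using E_cong[OF can rNC] .
  have H: "E [] ((Cap True 0 # map (shn 1) (NN n k \<beta>)) @ Vs [0..<Suc (2*k)]) ((NN n k \<beta> @ [Cap False (2*k)] @ Vs (rev [0..<Suc (2*k)])) @ Vs [0..<Suc (2*k)])"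
    using E_cong_right[OF F] .
  have X: "E [] ((Cap True 0 # map (shn 1) (NN n k \<beta>)) @ Vs [0..<Suc (2*k)]) (NN n k \<beta> @ [Cap False (2*k)])"
    using E_trans[OF H[simplified] G[simplified]] by simp
  show ?thesis using E_sym[OF X] unfolding NN_shift .
qed

lemma cap_norm2: "j \<le> length x \<Longrightarrow> k \<le> length x \<Longrightarrow> \<exists>\<gamma>. valid (length x + 2) \<gamma> \<and> E x [Cap d j] (Cap False k # Vs \<gamma>)"
proof -
  assume a: "j \<le> length x" "k \<le> length x"
  obtain \<gamma> where g: "valid (length x + 2) \<gamma>" "E x [Cap d j] (Cap True k # Vs \<gamma>)" using cap_norm a by blast
  have tw: "E x [Cap True k] [Cap False k, V k]" using E_twcap[of k x False] a by simp
  have "E x ([Cap True k] @ Vs \<gamma>) ([Cap False k, V k] @ Vs \<gamma>)" using E_cong_right[OF tw] .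
  from E_trans[OF g(2) this[simplified]] have "E x [Cap d j] (Cap False k # Vs (k # \<gamma>))" by simp
  moreover have "valid (length x + 2) (k # \<gamma>)" using g a by simp
  ultimately show ?thesis by blast
qed

lemma step_Cap:
  assumes "Inv P w n" "i \<le> length w"
  shows "Inv (P @ [Cap d i]) (take i w @ [d, \<not> d] @ drop i w) (Suc n)"
proof -
  obtain k \<beta> u where d: "k \<le> n" "twisted_braid n \<beta>" "valid (2*k) u" "E [] P (NN n k \<beta> @ Vs u)" "run [] P = Some w"
    using assms unfolding Inv_def by blast
  have w: "vapply u (RR k) = w" using Inv_state d by blast
  have lw: "length w = 2*k" using w d by (metis length_RR' length_vapply)
  have rN: "run [] (NN n k \<beta>) = Some (RR k)" using run_NN d by blast
  have E1: "E [] (P @ [Cap d i]) (NN n k \<beta> @ Vs u @ [Cap d i])" using E_cong_right[OF d(4), of "[Cap d i]"] by simp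
  obtain j u1 where p: "j \<le> 2*k" "valid (2*k + 2) u1" "E (RR k) (Vs u @ [Cap d i]) (Cap d j # Vs u1)"
    using push_cap[of "RR k" u i d] d lw assms by auto
  have E2: "E [] (NN n k \<beta> @ Vs u @ [Cap d i]) (NN n k \<beta> @ Cap d j # Vs u1)" using E_cong_left[OF p(3) rN] by simp
  obtain \<gamma> where g: "valid (2*k + 2) \<gamma>" "E (RR k) [Cap d j] (Cap False (2*k) # Vs \<gamma>)"
    using cap_norm2[of j "RR k" "2*k" d] p by auto
  have E3: "E [] (NN n k \<beta> @ [Cap d j] @ Vs u1) (NN n k \<beta> @ (Cap False (2*k) # Vs \<gamma>) @ Vs u1)" using E_cong[OF g(2) rN] .
  have E4: "E [] ((NN n k \<beta> @ [Cap False (2*k)]) @ Vs \<gamma> @ Vs u1) ((NN (Suc n) (Suc k) (map shb \<beta>) @ Vs [0..<Suc (2*k)]) @ Vs \<gamma> @ Vs u1)"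
    using E_cong_right[OF key_cap[OF d(1,2)]] .
  have F: "E [] (P @ [Cap d i]) (NN (Suc n) (Suc k) (map shb \<beta>) @ Vs ([0..<Suc (2*k)] @ \<gamma> @ u1))"
    using E_trans[OF E_trans[OF E_trans[OF E1[simplified] E2[simplified]] E3[simplified]] E4[simplified]] by simp
  have v: "valid (2 * Suc k) ([0..<Suc (2*k)] @ \<gamma> @ u1)" using g p by (auto simp: valid_upt)
  have r: "run [] (P @ [Cap d i]) = Some (take i w @ [d, \<not> d] @ drop i w)" using run_append_Some[OF d(5)] assms by simp
  show ?thesis unfolding Inv_def using F v r d twisted_braid_shb by fastforce
qed

lemma nT_swp: "Suc i < length x \<Longrightarrow> nT (swp i x) = nT x"
proof -
  assume "Suc i < length x"
  then obtain A a b B where "x = A @ a # b # B" "length A = i" using split2 by blast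
  then show ?thesis by (cases a; cases b) (auto simp: swp_app)
qed

lemma nT_vapply: "valid (length x) u \<Longrightarrow> nT (vapply u x) = nT x"
  by (induction u arbitrary: x) (auto simp: nT_swp)

lemma nT_RR: "nT (RR k) = k" by (simp add: RR_def nT_def)

lemma nT_nF: "nT x + nF x = length x" unfolding nT_def nF_def by (induction x) auto

lemma RT_RR: "nT w = k \<Longrightarrow> length w = 2*k \<Longrightarrow> RT w = RR k"
  using nT_nF[of w] by (simp add: RT_def RR_def)

lemma cup_state: "run a [Cup j] = Some y \<Longrightarrow> run b [Cup j] = Some y \<Longrightarrow> a ! j = b ! j \<Longrightarrow> a = b"
proof -
  assume h: "run a [Cup j] = Some y" "run b [Cup j] = Some y" "a ! j = b ! j"
  obtain A p q B where a: "a = A @ p # q # B" "length A = j" "p \<noteq> q" "y = A @ B" using h(1) run_Cup1 by metis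
  obtain A' p' q' B' where b: "b = A' @ p' # q' # B'" "length A' = j" "p' \<noteq> q'" "y = A' @ B'" using h(2) run_Cup1 by metis
  have "A = A'" "B = B'" using a b by (metis append_eq_append_conv)+
  moreover have "p = p'" using h(3) a b by (simp add: nth_append)
  ultimately show ?thesis using a b by (cases p; cases q; cases q') auto
qed

lemma vapply_rev_cancel: "valid (length x) u \<Longrightarrow> vapply (u @ rev u) x = x"
  using VE_vapply[OF VE_cancel[of "length x" u], of x] by simp

lemma cup_to: "run x [Cup i] = Some y \<Longrightarrow> Suc j < length x \<Longrightarrow>
  \<exists>\<gamma>. valid (length x) \<gamma> \<and> vapply \<gamma> x ! j \<and> run (vapply \<gamma> x) [Cup j] = Some y \<and> E x [Cup i] (Vs \<gamma> @ [Cup j])"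
proof -
  assume h: "run x [Cup i] = Some y" "Suc j < length x"
  obtain \<gamma> where g: "valid (length x) \<gamma>" "E x [Cup i] (Vs \<gamma> @ [Cup j])" using cup_move[of x i j] h by auto
  have rg: "run x (Vs \<gamma>) = Some (vapply \<gamma> x)" using run_Vs g by blast
  have r2: "run (vapply \<gamma> x) [Cup j] = Some y" using E_run[OF g(2)] h run_append_Some[OF rg, of "[Cup j]"] by simp
  have l2: "length (vapply \<gamma> x) = length x" using g by simp
  show ?thesis
  proof (cases "vapply \<gamma> x ! j")
    case True then show ?thesis using g r2 by blast
  next
    case False
    define x2 where "x2 = vapply \<gamma> x"
    have tw: "E x2 [Cup j] [V j, Cup j]" using E_twcup r2 unfolding x2_def by simp
    have rs: "run x2 [V j] = Some (swp j x2)" using h l2 unfolding x2_def by (simp add: step_V_swp del: step.simps)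
    have r3: "run (swp j x2) [Cup j] = Some y" using E_run[OF tw] r2 run_append_Some[OF rs, of "[Cup j]"] unfolding x2_def by simp
    have "x2 ! j \<noteq> x2 ! Suc j" using r2 unfolding x2_def by (auto split: if_splits)
    then have t: "swp j x2 ! j" using False h l2 unfolding x2_def by (simp add: swp_def nth_append)
    have E2: "E x (Vs \<gamma> @ [Cup j]) (Vs \<gamma> @ [V j, Cup j])" using E_cong_left[OF tw rg[folded x2_def]] .
    have "vapply (\<gamma> @ [j]) x = swp j x2" unfolding x2_def by (simp add: vapply_append)
    then show ?thesis using E_trans[OF g(2) E2] g h t r3 by (intro exI[of _ "\<gamma> @ [j]"]) auto
  qed
qed

lemma NN_cup: "Suc m \<le> n \<Longrightarrow> NN n (Suc m) \<beta> @ [Cup m] = NN n m \<beta>"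
  by (simp add: NN_def cups_def upt_conv_Cons)

lemma step_Cup:
  assumes "Inv P w n" "run w [Cup i] = Some w'"
  shows "Inv (P @ [Cup i]) w' n"
proof -
  obtain k \<beta> u where d: "k \<le> n" "twisted_braid n \<beta>" "valid (2*k) u" "E [] P (NN n k \<beta> @ Vs u)" "run [] P = Some w"
    using assms unfolding Inv_def by blast
  have w: "vapply u (RR k) = w" using Inv_state d by blast
  have lw: "length w = 2*k" using w d by (metis length_RR' length_vapply)
  have "Suc i < length w" using assms(2) by (auto split: if_splits)
  then obtain m where km: "k = Suc m" using lw by (cases k) auto
  have mlen: "Suc m < length w" using lw km by simp
  have rN: "run [] (NN n k \<beta>) = Some (RR k)" using run_NN d by blast
  have ru: "run (RR k) (Vs u) = Some w" using run_Vs[of "RR k" u] d w by simp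
  obtain \<gamma> where g: "valid (2*k) \<gamma>" "vapply \<gamma> w ! m" "run (vapply \<gamma> w) [Cup m] = Some w'" "E w [Cup i] (Vs \<gamma> @ [Cup m])"
    using cup_to[OF assms(2) mlen] lw by auto
  define u3 where "u3 = u @ \<gamma>"
  define w3 where "w3 = vapply u3 (RR k)"
  have w3: "w3 = vapply \<gamma> w" unfolding w3_def u3_def using w by (simp add: vapply_append)
  have v3: "valid (2*k) u3" unfolding u3_def using d g by simp
  have S2: "E (RR k) (Vs u @ [Cup i]) (Vs u3 @ [Cup m])" using E_cong_left[OF g(4) ru] unfolding u3_def by simp
  have nTw: "nT w = k" using w nT_vapply[of "RR k" u] d by (simp add: nT_RR)
  obtain A p q B where wd: "w = A @ p # q # B" "length A = i" "p \<noteq> q" "w' = A @ B" using assms(2) run_Cup1 by metis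
  have nTw': "nT w' = m" using nTw wd km by (cases p; cases q) auto
  have lw': "length w' = 2*m" using wd lw km by simp
  have RTw': "RT w' = RR m" using RT_RR nTw' lw' by blast
  define u4 where "u4 = sh w'"
  have u4: "valid (2*m) u4" "vapply u4 (RR m) = w'" using sh_run[of w'] RTw' lw' unfolding u4_def by auto
  have rc: "run (RR k) [Cup m] = Some (RR m)" using run_cup_RR km by simp
  obtain c' u5 where p5: "valid (2*k) u5" "E (RR k) (Cup m # Vs u4) (Vs u5 @ [Cup c'])"
    using pull_cup[OF rc, of u4] u4 by auto
  have r4: "run (RR k) (Cup m # Vs u4) = Some w'" using run_append_Some[OF rc, of "Vs u4"] run_Vs[of "RR m" u4] u4 by simp
  have r5: "run (RR k) (Vs u5) = Some (vapply u5 (RR k))" using run_Vs p5 by simp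
  have rc5: "run (vapply u5 (RR k)) [Cup c'] = Some w'" using E_run[OF p5(2)] r4 run_append_Some[OF r5, of "[Cup c']"] by simp
  have l5: "Suc m < length (vapply u5 (RR k))" using p5 km by simp
  have l5': "length (vapply u5 (RR k)) = 2*k" using p5 by simp
  from cup_to[OF rc5 l5] obtain \<gamma>' where g': "valid (length (vapply u5 (RR k))) \<gamma>'" "vapply \<gamma>' (vapply u5 (RR k)) ! m" "run (vapply \<gamma>' (vapply u5 (RR k))) [Cup m] = Some w'"
      "E (vapply u5 (RR k)) [Cup c'] (Vs \<gamma>' @ [Cup m])"
    by blast
  define u6 where "u6 = u5 @ \<gamma>'"
  have v6: "valid (2*k) u6" unfolding u6_def using p5 g' l5' by simp
  have S5: "E (RR k) (Cup m # Vs u4) (Vs u6 @ [Cup m])"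
    using E_trans[OF p5(2) E_cong_left[OF g'(4) r5]] unfolding u6_def by simp
  have w6: "vapply u6 (RR k) = w3"
  proof (rule cup_state)
    show "run (vapply u6 (RR k)) [Cup m] = Some w'" using g'(3) unfolding u6_def by (simp add: vapply_append)
    show "run w3 [Cup m] = Some w'" using w3 g by simp
    show "vapply u6 (RR k) ! m = w3 ! m" using g'(2) g(2) w3 unfolding u6_def by (simp add: vapply_append)
  qed
  define \<rho> where "\<rho> = u3 @ rev u6"
  have vr: "valid (2*k) \<rho>" unfolding \<rho>_def using v3 v6 by simp
  have rr: "vapply \<rho> (RR k) = RR k"
    unfolding \<rho>_def using vapply_rev_cancel[of "RR k" u6] v6 w6 w3_def by (simp add: vapply_append)
  obtain \<beta>' where b: "twisted_braid n \<beta>'" "E [] (NN n k \<beta> @ Vs \<rho>) (NN n k \<beta>')" using absorb[OF d(2) d(1) vr rr] by blast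
  have E1: "E [] (P @ [Cup i]) (NN n k \<beta> @ Vs u @ [Cup i])" using E_cong_right[OF d(4), of "[Cup i]"] by simp
  have E2: "E [] (NN n k \<beta> @ Vs u @ [Cup i]) (NN n k \<beta> @ Vs u3 @ [Cup m])" using E_cong_left[OF S2 rN] .
  have rw3: "run [] (NN n k \<beta> @ Vs u3) = Some w3" using run_append_Some[OF rN] run_Vs[of "RR k" u3] v3 unfolding w3_def by simp
  have can: "E w3 [] (Vs (rev u6 @ u6))" using E_sym[OF E_cancel'[of w3 u6]] v6 w6 by (metis length_RR' length_vapply)
  have E3: "E [] ((NN n k \<beta> @ Vs u3) @ [] @ [Cup m]) ((NN n k \<beta> @ Vs u3) @ Vs (rev u6 @ u6) @ [Cup m])"
    using E_cong[OF can rw3] .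
  have E4: "E [] ((NN n k \<beta> @ Vs \<rho>) @ Vs u6 @ [Cup m]) (NN n k \<beta>' @ Vs u6 @ [Cup m])" using E_cong_right[OF b(2)] .
  have rN': "run [] (NN n k \<beta>') = Some (RR k)" using run_NN d b by blast
  have E5: "E [] (NN n k \<beta>' @ (Vs u6 @ [Cup m])) (NN n k \<beta>' @ (Cup m # Vs u4))" using E_cong_left[OF E_sym[OF S5] rN'] .
  have F: "E [] (P @ [Cup i]) (NN n k \<beta>' @ Cup m # Vs u4)"
    using E_trans[OF E_trans[OF E_trans[OF E_trans[OF E1 E2] E3[simplified]] E4[unfolded \<rho>_def, simplified]] E5] by simp
  have NNc: "NN n k \<beta>' @ Cup m # Vs u4 = NN n m \<beta>' @ Vs u4" using NN_cup[of m n \<beta>'] d km by simp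
  have r: "run [] (P @ [Cup i]) = Some w'" using run_append_Some[OF d(5)] assms by simp
  have F': "E [] (P @ [Cup i]) (NN n m \<beta>' @ Vs u4)" using F unfolding NNc .
  have mn: "m \<le> n" using d km by simp
  show ?thesis unfolding Inv_def using r mn b(1) u4(1) F' by blast
qed

lemma swp_nth: "Suc p < length x \<Longrightarrow> q < length x \<Longrightarrow>
  swp p x ! q = (if q = p then x ! Suc p else if q = Suc p then x ! p else x ! q)"
proof -
  assume a: "Suc p < length x" "q < length x"
  then obtain A c d B where x: "x = A @ c # d # B" "length A = p" using split2 by blast
  show ?thesis using a x by (auto simp: swp_app nth_append nth_Cons' numeral_2_eq_2)
qed

lemma push_bar_V2: "Suc p < length x \<Longrightarrow> j' < length x \<Longrightarrow>
  \<exists>j. j < length x \<and> x ! j = swp p x ! j' \<and> E x [V p, Bar j'] [Bar j, V p]"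
proof -
  assume a: "Suc p < length x" "j' < length x"
  consider "j' = p" | "j' = Suc p" | "j' < p" | "Suc (Suc p) \<le> j'" by linarith
  then show ?thesis
  proof cases
    case 1 then show ?thesis using E_sym[OF E_T1b[of p x]] a swp_nth[of p x j'] by (intro exI[of _ "Suc p"]) auto
  next
    case 2 then show ?thesis using E_sym[OF E_T1a[of p x]] a swp_nth[of p x j'] by (intro exI[of _ p]) auto
  next
    case 3
    have "E x [V p, Bar j'] [Bar j', setpos (V p) (pos (V p) + bot_ar (Bar j') - top_ar (Bar j'))]"
      using 3 a by (intro E_interchange') (auto simp: swp_def)
    then show ?thesis using a 3 swp_nth[of p x j'] by (intro exI[of _ j']) auto
  next
    case 4
    have "E x [V p, setpos (Bar j') (pos (Bar j') + bot_ar (V p) - top_ar (V p))] [Bar j', V p]"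
      using 4 a by (intro E_interchange2) (auto simp: swp_def)
    then show ?thesis using a 4 swp_nth[of p x j'] by (intro exI[of _ j']) auto
  qed
qed

lemma push_bar2: "valid (length x) u \<Longrightarrow> i < length x \<Longrightarrow>
  \<exists>j. j < length x \<and> x ! j = vapply u x ! i \<and> E x (Vs u @ [Bar i]) (Bar j # Vs u)"
proof (induction u arbitrary: x)
  case Nil then show ?case by auto
next
  case (Cons p u)
  have q: "Suc p < length x" using Cons by simp
  have r: "run x [V p] = Some (swp p x)" using q by (simp add: step_V_swp del: step.simps)
  have ls: "length (swp p x) = length x" using q by simp
  obtain j' where j': "j' < length x" "swp p x ! j' = vapply u (swp p x) ! i" "E (swp p x) (Vs u @ [Bar i]) (Bar j' # Vs u)"
    using Cons.IH[of "swp p x"] Cons.prems q ls by auto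
  have 1: "E x (V p # Vs u @ [Bar i]) (V p # Bar j' # Vs u)" using E_cong_left[OF j'(3) r] by simp
  obtain j where j: "j < length x" "x ! j = swp p x ! j'" "E x [V p, Bar j'] [Bar j, V p]" using push_bar_V2 q j' by blast
  have 2: "E x ([V p, Bar j'] @ Vs u) ([Bar j, V p] @ Vs u)" using E_cong_right[OF j(3)] by simp
  show ?case using E_trans[OF 1] 2 j j' by auto
qed

lemma step_TBar:
  assumes "Inv P w n" "i < length w" "w ! i"
  shows "Inv (P @ [Bar i]) w n"
proof -
  obtain k \<beta> u where d: "k \<le> n" "twisted_braid n \<beta>" "valid (2*k) u" "E [] P (NN n k \<beta> @ Vs u)" "run [] P = Some w"
    using assms unfolding Inv_def by blast
  have w: "vapply u (RR k) = w" using Inv_state d by blast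
  have lw: "length w = 2*k" using w d by (metis length_RR' length_vapply)
  have rN: "run [] (NN n k \<beta>) = Some (RR k)" using run_NN d by blast
  obtain j where j: "j < 2*k" "RR k ! j = w ! i" "E (RR k) (Vs u @ [Bar i]) (Bar j # Vs u)"
    using push_bar2[of "RR k" u i] d w lw assms by auto
  have jk: "j < k" using j assms RR_nth(2)[of k j] by (cases "j < k") auto
  have E1: "E [] (P @ [Bar i]) (NN n k \<beta> @ Vs u @ [Bar i])" using E_cong_right[OF d(4), of "[Bar i]"] by simp
  have E2: "E [] (NN n k \<beta> @ Vs u @ [Bar i]) (NN n k \<beta> @ Bar j # Vs u)" using E_cong_left[OF j(3) rN] .
  have E3: "E [] ((NN n k \<beta> @ [Bar j]) @ Vs u) (NN n k (\<beta> @ [BB j]) @ Vs u)"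
    using E_cong_right[OF L1[of n \<beta> k "BB j"]] d jk by simp
  have F: "E [] (P @ [Bar i]) (NN n k (\<beta> @ [BB j]) @ Vs u)" using E_trans[OF E_trans[OF E1 E2] E3[simplified]] by simp
  have tb: "twisted_braid n (\<beta> @ [BB j])" using d jk by (auto simp: twisted_braid_def)
  have r: "run [] (P @ [Bar i]) = Some w" using run_append_Some[OF d(5)] assms by simp
  show ?thesis unfolding Inv_def using r d(1,3) tb F by blast
qed

lemma swap_same: "Suc i < length w \<Longrightarrow> w ! i = w ! Suc i \<Longrightarrow> take i w @ [w ! Suc i, w ! i] @ drop (Suc (Suc i)) w = w"
proof -
  assume a: "Suc i < length w" "w ! i = w ! Suc i"
  then obtain A p q B where "w = A @ p # q # B" "length A = i" using split2 by blast
  then show ?thesis using a by (simp add: nth_append)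
qed

lemma step_TT:
  assumes "Inv P w n" "Suc i < length w" "w ! i" "w ! Suc i"
  shows "Inv (P @ [X t i]) w n"
proof -
  obtain k \<beta> u where d: "k \<le> n" "twisted_braid n \<beta>" "valid (2*k) u" "E [] P (NN n k \<beta> @ Vs u)" "run [] P = Some w"
    using assms unfolding Inv_def by blast
  have w: "vapply u (RR k) = w" using Inv_state d by blast
  have lw: "length w = 2*k" using w d by (metis length_RR' length_vapply)
  have rN: "run [] (NN n k \<beta>) = Some (RR k)" using run_NN d by blast
  have nTw: "nT w = k" using w nT_vapply[of "RR k" u] d by (simp add: nT_RR)
  have RTw: "RT w = RR k" using RT_RR nTw lw by blast
  have sr: "valid (2*k) (sh w)" "vapply (sh w) (RR k) = w" using sh_run[of w] RTw lw by auto
  define \<rho> where "\<rho> = u @ rev (sh w)"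
  have vr: "valid (2*k) \<rho>" unfolding \<rho>_def using d sr by simp
  have rr: "vapply \<rho> (RR k) = RR k"
    unfolding \<rho>_def using vapply_rev_cancel[of "RR k" "sh w"] sr w by (simp add: vapply_append)
  obtain \<beta>1 where b: "twisted_braid n \<beta>1" "E [] (NN n k \<beta> @ Vs \<rho>) (NN n k \<beta>1)" using absorb[OF d(2) d(1) vr rr] by blast
  have E1: "E [] (P @ [X t i]) (NN n k \<beta> @ Vs u @ [X t i])" using E_cong_right[OF d(4), of "[X t i]"] by simp
  have rw: "run [] (NN n k \<beta> @ Vs u) = Some w" using run_append_Some[OF rN] run_Vs[of "RR k" u] d w by simp
  have can: "E w [] (Vs (rev (sh w) @ sh w))" using E_sym[OF E_cancel'[of w "sh w"]] sr lw by simp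
  have E2: "E [] ((NN n k \<beta> @ Vs u) @ [] @ [X t i]) ((NN n k \<beta> @ Vs u) @ Vs (rev (sh w) @ sh w) @ [X t i])"
    using E_cong[OF can rw] .
  have E3: "E [] ((NN n k \<beta> @ Vs \<rho>) @ Vs (sh w) @ [X t i]) (NN n k \<beta>1 @ Vs (sh w) @ [X t i])" using E_cong_right[OF b(2)] .
  have rN1: "run [] (NN n k \<beta>1) = Some (RR k)" using run_NN d b by blast
  have sx: "E (RR k) (Vs (sh w) @ [X t i]) (X t (nT (take i w)) # Vs (sh w))" using sh_X[of i w t] assms RTw by simp
  have E4: "E [] (NN n k \<beta>1 @ (Vs (sh w) @ [X t i])) (NN n k \<beta>1 @ (X t (nT (take i w)) # Vs (sh w)))" using E_cong_left[OF sx rN1] .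
  have jk: "Suc (nT (take i w)) < k" using nT_take2[of i w] assms nTw by simp
  have E5: "E [] ((NN n k \<beta>1 @ [X t (nT (take i w))]) @ Vs (sh w)) (NN n k (\<beta>1 @ [BX t (nT (take i w))]) @ Vs (sh w))"
    using E_cong_right[OF L1[of n \<beta>1 k "BX t (nT (take i w))"]] b d jk by simp
  have F: "E [] (P @ [X t i]) (NN n k (\<beta>1 @ [BX t (nT (take i w))]) @ Vs (sh w))"
    using E_trans[OF E_trans[OF E_trans[OF E_trans[OF E1 E2[simplified]] E3[unfolded \<rho>_def, simplified]] E4[simplified]] E5[simplified]] by simp
  have tb: "twisted_braid n (\<beta>1 @ [BX t (nT (take i w))])" using b d jk by (auto simp: twisted_braid_def)
  have r: "run [] (P @ [X t i]) = Some w" using run_append_Some[OF d(5)] assms swap_same[of i w] by simp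
  show ?thesis unfolding Inv_def using r d(1) sr(1) tb F by blast
qed

lemma rotTF: "Suc i < length x \<Longrightarrow> \<not> x ! Suc i \<Longrightarrow> E x [X t i] [Cap False i, X (\<not> t) (Suc i), Cup (Suc (Suc i))]"
proof -
  assume h: "Suc i < length x" "\<not> x ! Suc i"
  obtain A a b B where x: "x = A @ a # b # B" "length A = i" using split2 h by blast
  have b: "b = False" using h x by (simp add: nth_append)
  have "E x [X t i] [Cap False (Suc i), Cup (Suc (Suc i)), X t i]"
    using E_cong[OF E_sym[OF E_zig2[of "Suc i" x False]], of x "[]" "[X t i]"] h by simp
  also have "E x [Cap False (Suc i), Cup (Suc (Suc i)), X t i] [Cap False (Suc i), X t i, Cup (Suc (Suc i))]"
  proof -
    have "E (A @ a # False # True # b # B) [Cup (Suc (Suc i)), X t i] [X t i, setpos (Cup (Suc (Suc i))) (pos (Cup (Suc (Suc i))) + bot_ar (X t i) - top_ar (X t i))]"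
      using x b by (intro E_interchange') (auto simp: nth_append)
    then have "E (A @ a # False # True # b # B) [Cup (Suc (Suc i)), X t i] [X t i, Cup (Suc (Suc i))]" by simp
    from E_cong[OF this, of x "[Cap False (Suc i)]" "[]"] show ?thesis using x b by (simp add: nth_append)
  qed
  also have "E x [Cap False (Suc i), X t i, Cup (Suc (Suc i))] [Cap False i, X (\<not> t) (Suc i), Cup (Suc (Suc i))]"
    using E_cong[OF E_sym[OF E_pfXcap[of i x False "\<not> t"]], of x "[]" "[Cup (Suc (Suc i))]"] h by simp
  finally show ?thesis .
qed

lemma rotFT: "Suc i < length x \<Longrightarrow> \<not> x ! i \<Longrightarrow> E x [X t i] [Cap True (Suc (Suc i)), X (\<not> t) (Suc i), Cup i]"
proof -
  assume h: "Suc i < length x" "\<not> x ! i"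
  obtain A a b B where x: "x = A @ a # b # B" "length A = i" using split2 h by blast
  have a: "a = False" using h x by (simp add: nth_append)
  have "E x [X t i] [Cap True (Suc i), Cup i, X t i]"
    using E_cong[OF E_sym[OF E_zig1[of i x True]], of x "[]" "[X t i]"] h by simp
  also have "E x [Cap True (Suc i), Cup i, X t i] [Cap True (Suc i), X t (Suc (Suc i)), Cup i]"
  proof -
    have "E (A @ a # True # False # b # B) [Cup i, setpos (X t (Suc (Suc i))) (pos (X t (Suc (Suc i))) + bot_ar (Cup i) - top_ar (Cup i))] [X t (Suc (Suc i)), Cup i]"
      using x a by (intro E_interchange2) (auto simp: nth_append)
    then have "E (A @ a # True # False # b # B) [Cup i, X t i] [X t (Suc (Suc i)), Cup i]" by simp
    from E_cong[OF this, of x "[Cap True (Suc i)]" "[]"] show ?thesis using x a by (simp add: nth_append)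
  qed
  also have "E x [Cap True (Suc i), X t (Suc (Suc i)), Cup i] [Cap True (Suc (Suc i)), X (\<not> t) (Suc i), Cup i]"
    using E_cong[OF E_pfXcap[of "Suc i" x True t], of x "[]" "[Cup i]"] h by simp
  finally show ?thesis .
qed

lemma rotBar: "i < length x \<Longrightarrow> \<not> x ! i \<Longrightarrow> E x [Bar i] [Cap True (Suc i), Bar (Suc i), Cup i]"
proof -
  assume h: "i < length x" "\<not> x ! i"
  obtain A a B where x: "x = A @ a # B" "length A = i" using split1 h by blast
  have a: "a = False" using h x by (simp add: nth_append)
  have "E x [Bar i] [Cap True (Suc i), Cup i, Bar i]"
    using E_cong[OF E_sym[OF E_zig1[of i x True]], of x "[]" "[Bar i]"] h by simp
  also have "E x [Cap True (Suc i), Cup i, Bar i] [Cap True (Suc i), Bar (Suc (Suc i)), Cup i]"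
  proof -
    have "E (A @ a # True # False # B) [Cup i, setpos (Bar (Suc (Suc i))) (pos (Bar (Suc (Suc i))) + bot_ar (Cup i) - top_ar (Cup i))] [Bar (Suc (Suc i)), Cup i]"
      using x a by (intro E_interchange2) (auto simp: nth_append)
    then have "E (A @ a # True # False # B) [Cup i, Bar i] [Bar (Suc (Suc i)), Cup i]" by simp
    from E_cong[OF this, of x "[Cap True (Suc i)]" "[]"] show ?thesis using x a by (simp add: nth_append)
  qed
  also have "E x [Cap True (Suc i), Bar (Suc (Suc i)), Cup i] [Cap True (Suc i), Bar (Suc i), Cup i]"
    using E_cong[OF E_sym[OF E_barcap[of "Suc i" x True]], of x "[]" "[Cup i]"] h by simp
  finally show ?thesis .
qed

lemma Inv_step_trans: "Inv P w n \<Longrightarrow> E w [g] G \<Longrightarrow> Inv (P @ G) w' n' \<Longrightarrow> Inv (P @ [g]) w' n'"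
proof -
  assume a: "Inv P w n" "E w [g] G" "Inv (P @ G) w' n'"
  have "run [] P = Some w" using a unfolding Inv_def by blast
  from E_cong_left[OF a(2) this] show ?thesis using Inv_trans a(3) by blast
qed

lemma step_TF:
  assumes "Inv P w n" "Suc i < length w" "w ! i" "\<not> w ! Suc i"
  shows "\<exists>n'\<ge>n. Inv (P @ [X t i]) (swp i w) n'"
proof -
  obtain A a b B where x: "w = A @ a # b # B" "length A = i" using split2 assms by blast
  have ab: "a = True" "b = False" using assms x by (auto simp: nth_append)
  have I1: "Inv (P @ [Cap False i]) (A @ False # True # a # b # B) (Suc n)"
    using step_Cap[OF assms(1), of i False] x by simp
  have I2: "Inv ((P @ [Cap False i]) @ [X (\<not> t) (Suc i)]) (A @ False # True # a # b # B) (Suc n)"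
    using step_TT[OF I1, of "Suc i"] x ab by (simp add: nth_append)
  have I3: "Inv ((P @ [Cap False i, X (\<not> t) (Suc i)]) @ [Cup (Suc (Suc i))]) (A @ False # True # B) (Suc n)"
    using step_Cup[OF I2[simplified], of "Suc (Suc i)"] x ab by (simp add: nth_append)
  have "Inv (P @ [X t i]) (A @ False # True # B) (Suc n)"
    using Inv_step_trans[OF assms(1) rotTF[of i w t] I3[simplified]] assms by simp
  moreover have "swp i w = A @ False # True # B" using x ab by (simp add: swp_app)
  ultimately show ?thesis by (intro exI[of _ "Suc n"]) auto
qed

lemma step_FT:
  assumes "Inv P w n" "Suc i < length w" "\<not> w ! i" "w ! Suc i"
  shows "\<exists>n'\<ge>n. Inv (P @ [X t i]) (swp i w) n'"
proof -
  obtain A a b B where x: "w = A @ a # b # B" "length A = i" using split2 assms by blast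
  have ab: "a = False" "b = True" using assms x by (auto simp: nth_append)
  have I1: "Inv (P @ [Cap True (Suc (Suc i))]) (A @ a # b # True # False # B) (Suc n)"
    using step_Cap[OF assms(1), of "Suc (Suc i)" True] x by (simp add: take_Cons' drop_Cons')
  have I2: "Inv ((P @ [Cap True (Suc (Suc i))]) @ [X (\<not> t) (Suc i)]) (A @ a # b # True # False # B) (Suc n)"
    using step_TT[OF I1, of "Suc i"] x ab by (simp add: nth_append)
  have I3: "Inv ((P @ [Cap True (Suc (Suc i)), X (\<not> t) (Suc i)]) @ [Cup i]) (A @ True # False # B) (Suc n)"
    using step_Cup[OF I2[simplified], of i] x ab by (simp add: nth_append)
  have "Inv (P @ [X t i]) (A @ True # False # B) (Suc n)"
    using Inv_step_trans[OF assms(1) rotFT[of i w t] I3[simplified]] assms by simp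
  moreover have "swp i w = A @ True # False # B" using x ab by (simp add: swp_app)
  ultimately show ?thesis by (intro exI[of _ "Suc n"]) auto
qed

lemma step_FF:
  assumes "Inv P w n" "Suc i < length w" "\<not> w ! i" "\<not> w ! Suc i"
  shows "\<exists>n'\<ge>n. Inv (P @ [X t i]) (swp i w) n'"
proof -
  obtain A a b B where x: "w = A @ a # b # B" "length A = i" using split2 assms by blast
  have ab: "a = False" "b = False" using assms x by (auto simp: nth_append)
  have I1: "Inv (P @ [Cap False i]) (A @ False # True # a # b # B) (Suc n)"
    using step_Cap[OF assms(1), of i False] x by simp
  obtain n2 where I2: "n2 \<ge> Suc n" "Inv ((P @ [Cap False i]) @ [X (\<not> t) (Suc i)]) (swp (Suc i) (A @ False # True # a # b # B)) n2"
    using step_TF[OF I1, of "Suc i" "\<not> t"] x ab by (auto simp: nth_append)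
  have sw: "swp (Suc i) (A @ False # True # a # b # B) = A @ False # a # True # b # B"
    using swp_app[of "A @ [False]" "Suc i"] x by simp
  have I3: "Inv ((P @ [Cap False i, X (\<not> t) (Suc i)]) @ [Cup (Suc (Suc i))]) (A @ False # a # B) n2"
    using step_Cup[OF I2(2)[unfolded sw, simplified], of "Suc (Suc i)"] x ab by (simp add: nth_append)
  have "Inv (P @ [X t i]) (A @ False # a # B) n2"
    using Inv_step_trans[OF assms(1) rotTF[of i w t] I3[simplified]] assms by simp
  moreover have "swp i w = A @ False # a # B" using x ab by (simp add: swp_app)
  ultimately show ?thesis using I2(1) by (intro exI[of _ n2]) auto
qed

lemma step_FBar:
  assumes "Inv P w n" "i < length w" "\<not> w ! i"
  shows "Inv (P @ [Bar i]) w (Suc n)"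
proof -
  obtain A a B where x: "w = A @ a # B" "length A = i" using split1 assms by blast
  have a: "a = False" using assms x by (auto simp: nth_append)
  have I1: "Inv (P @ [Cap True (Suc i)]) (A @ a # True # False # B) (Suc n)"
    using step_Cap[OF assms(1), of "Suc i" True] x by (simp add: take_Cons' drop_Cons')
  have I2: "Inv ((P @ [Cap True (Suc i)]) @ [Bar (Suc i)]) (A @ a # True # False # B) (Suc n)"
    using step_TBar[OF I1, of "Suc i"] x by (simp add: nth_append)
  have I3: "Inv ((P @ [Cap True (Suc i), Bar (Suc i)]) @ [Cup i]) (A @ False # B) (Suc n)"
    using step_Cup[OF I2[simplified], of i] x a by (simp add: nth_append)
  show ?thesis using Inv_step_trans[OF assms(1) rotBar[of i w] I3[simplified]] assms x a by simp
qed

lemma step_gen: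
  assumes "Inv P w n" "step w g = Some w'"
  shows "\<exists>n'\<ge>n. Inv (P @ [g]) w' n'"
proof (cases g)
  case (Cap d i)
  then have "i \<le> length w" "w' = take i w @ [d, \<not> d] @ drop i w" using assms(2) by (auto split: if_splits)
  then show ?thesis using step_Cap[OF assms(1), of i d] Cap by (intro exI[of _ "Suc n"]) auto
next
  case (Cup i)
  then show ?thesis using step_Cup[OF assms(1), of i w'] assms(2) by auto
next
  case (V i)
  then have "Suc i < length w" "w' = swp i w" using assms(2) by (auto simp: swp_def split: if_splits)
  then show ?thesis using step_V[OF assms(1)] V by auto
next
  case (X t i)
  then have h: "Suc i < length w" "w' = swp i w" using assms(2) by (auto simp: swp_def split: if_splits)
  consider "w ! i" "w ! Suc i" | "w ! i" "\<not> w ! Suc i" | "\<not> w ! i" "w ! Suc i" | "\<not> w ! i" "\<not> w ! Suc i" by blast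
  then show ?thesis
  proof cases
    case 1
    have "swp i w = w" using swap_same[of i w] h 1 by (simp add: swp_def)
    then show ?thesis using step_TT[OF assms(1) h(1) 1, of t] X h by auto
  next
    case 2 then show ?thesis using step_TF[OF assms(1) h(1) 2, of t] X h by auto
  next
    case 3 then show ?thesis using step_FT[OF assms(1) h(1) 3, of t] X h by auto
  next
    case 4 then show ?thesis using step_FF[OF assms(1) h(1) 4, of t] X h by auto
  qed
next
  case (Bar i)
  then have h: "i < length w" "w' = w" using assms(2) by (auto split: if_splits)
  show ?thesis
  proof (cases "w ! i")
    case True then show ?thesis using step_TBar[OF assms(1) h(1) True] Bar h by auto
  next
    case False then show ?thesis using step_FBar[OF assms(1) h(1) False] Bar h by (intro exI[of _ "Suc n"]) auto
  qed
qed

lemma Inv_init: "Inv [] [] 0"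
  unfolding Inv_def
  by (intro conjI exI[of _ 0] exI[of _ "[]"]) (auto simp: NN_def caps_def cups_def twisted_braid_def)

lemma main_inv: "run [] P = Some w \<Longrightarrow> P \<noteq> [] \<Longrightarrow> \<exists>n\<ge>1. Inv P w n"
proof (induction P arbitrary: w rule: rev_induct)
  case Nil then show ?case by simp
next
  case (snoc g P)
  show ?case
  proof (cases "P = []")
    case True
    then have st: "step [] g = Some w" using snoc.prems by (auto split: option.splits)
    then obtain d where g: "g = Cap d 0" by (cases g) (auto split: if_splits)
    have "w = [d, \<not> d]" using st g by simp
    then have "Inv ([] @ [Cap d 0]) w (Suc 0)" using step_Cap[OF Inv_init, of 0 d] by simp
    then show ?thesis using True g by (intro exI[of _ "Suc 0"]) auto
  next
    case False
    obtain w0 where w0: "run [] P = Some w0" "step w0 g = Some w"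
      using snoc.prems by (auto simp: run_append split: option.splits)
    obtain n where n: "n \<ge> 1" "Inv P w0 n" using snoc.IH[OF w0(1) False] by blast
    obtain n' where n': "n' \<ge> n" "Inv (P @ [g]) w n'" using step_gen[OF n(2) w0(2)] by blast
    show ?thesis using n n' by (intro exI[of _ n']) auto
  qed
qed

theorem theorem2:
  assumes "twisted_link_diagram D" and "D \<noteq> []"
  shows "\<exists>n \<ge> 1. \<exists>\<beta>. twisted_braid n \<beta> \<and> twisted_equiv (braid_closure n \<beta>) D"
proof -
  have rD: "run [] D = Some []" using assms(1) unfolding twisted_link_diagram_def .
  obtain n where n: "n \<ge> 1" "Inv D [] n" using main_inv[OF rD assms(2)] by blast
  obtain k \<beta> u where d: "k \<le> n" "twisted_braid n \<beta>" "valid (2*k) u" "E [] D (NN n k \<beta> @ Vs u)"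
    using n(2) unfolding Inv_def by blast
  have "vapply u (RR k) = []" using Inv_state[OF rD d(1,2,3,4)] .
  then have "length (RR k) = 0" using d(3) by (metis length_RR' length_vapply list.size(3))
  then have k: "k = 0" by simp
  have u: "u = []" using d(3) k by (cases u) auto
  have "E [] D (braid_closure n \<beta>)" using d(4) k u NN_closure by simp
  then have E: "E [] (braid_closure n \<beta>) D" by (rule E_sym)
  have "run [] (braid_closure n \<beta>) = Some []" using E_run[OF E] rD by simp
  then have "twisted_equiv (braid_closure n \<beta>) D" using E_to_twisted[OF E] by simp
  then show ?thesis using n d(2) by blast
qed

end
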